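(* The inclusion functor $\mathcal{C}(nusOp)\to\mathcal{C}(nucOp)$ (equivalently, its opposite $\mathcal{C}(nusOp)^{op}\to\mathcal{C}(nucOp)^{op}$) is an equivalence of categories.
   Context: A graph with half-edges is finite sets $V$, $H$, an involution $inv$ on $H$ and $t:H\to V$; fixed points of $inv$ are leaves, two-element orbits are edges. An operadic graph additionally has a total order on leaves (indexed $0,1,\dots$), for each vertex $v$ a total order on $t^{-1}(v)$ (indexed $0,1,\dots$), and a total order on $V$ (indexed $1,\dots,n$); considered up to isomorphism preserving all data. A cyclic operadic tree is an operadic graph whose underlying graph is a tree and which has at least one leaf. A rooted operadic tree is a cyclic operadic tree such that at every vertex the $0$-th half-edge lies on the path to the $0$-th leaf. The category $\mathcal{C}(nucOp)^{op}$ has as objects cyclic operadic trees with at least one vertex. If $p$ has vertices $v_1<\dots<v_n$, a morphism $p\to q$ consists of cyclic operadic trees $q_1,\dots,q_n$ with at least one vertex, $q_l$ having as many leaves as $v_l$ has half-edges, and a bijection $\bigsqcup_l V(q_l)\to V(q)$ order preserving on each $V(q_l)$, such that $q$ is obtained by substituting $q_l$ into $v_l$: the $i$-th leaf of $q_l$ is identified with the $i$-th half-edge of $v_l$; edges of $p$ between the $i$-th half-edge of $v_j$ and the $k$-th half-edge of $v_l$ become edges of $q$ between the $i$-th leaf of $q_j$ and the $k$-th leaf of $q_l$; if the $i$-th half-edge of $v_j$ is the $k$-th leaf of $p$ then the $i$-th leaf of $q_j$ is the $k$-th leaf of $q$; half-edge orders come from the $q_l$ and the vertex order of $q$ is transported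 along the bijection. Composition is iterated substitution. $\mathcal{C}(nucOp)$ is the opposite category. $\mathcal{C}(nusOp)$ is the subcategory of $\mathcal{C}(nucOp)$ whose objects are rooted operadic trees with at least one vertex and whose morphisms are those in which all inserted trees $q_l$ are rooted. *)

theory Defs
  imports Main
begin

text \<open>Since an operadic graph carries total orders on its vertices, on the half-edges
at each vertex, and on its leaves, an isomorphism class has a unique canonical
representative: vertices are 0,...,n-1 (vertex v here is the (v+1)-th vertex of the
paper), the half-edges at v are (v,0),...,(v,d-1), and each half-edge records its
other end: either the leaf label k (it is the k-th leaf), or the half-edge (w,j) it is
glued to. Hence equality of representations is isomorphism of operadic graphs.\<close>

datatype hend = Lf nat | Ed nat nat

type_synonym og = "hend list list"

definition half_edges :: "og \<Rightarrow> (nat \<times> nat) set" where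
  "half_edges G = {(v, i). v < length G \<and> i < length (G ! v)}"

definition hend_at :: "og \<Rightarrow> nat \<times> nat \<Rightarrow> hend" where
  "hend_at G h = G ! fst h ! snd h"

definition leaf_halfedges :: "og \<Rightarrow> (nat \<times> nat) set" where
  "leaf_halfedges G = {h \<in> half_edges G. \<exists>k. hend_at G h = Lf k}"

definition edge_halfedges :: "og \<Rightarrow> (nat \<times> nat) set" where
  "edge_halfedges G = {h \<in> half_edges G. \<exists>w j. hend_at G h = Ed w j}"

definition num_leaves :: "og \<Rightarrow> nat" where
  "num_leaves G = card (leaf_halfedges G)"

definition num_edges :: "og \<Rightarrow> nat" where
  "num_edges G = card (edge_halfedges G) div 2"

definition wf_og :: "og \<Rightarrow> bool" where
  "wf_og G \<longleftrightarrow>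
     (\<forall>h \<in> half_edges G. \<forall>w j. hend_at G h = Ed w j \<longrightarrow>
         (w, j) \<in> half_edges G \<and> (w, j) \<noteq> h \<and> hend_at G (w, j) = Ed (fst h) (snd h))
   \<and> (\<forall>h \<in> half_edges G. \<forall>h' \<in> half_edges G. \<forall>k.
         hend_at G h = Lf k \<and> hend_at G h' = Lf k \<longrightarrow> h = h')
   \<and> {k. \<exists>h \<in> half_edges G. hend_at G h = Lf k} = {..<num_leaves G}"

definition adj :: "og \<Rightarrow> nat \<Rightarrow> nat \<Rightarrow> bool" where
  "adj G v w \<longleftrightarrow> (\<exists>i j. (v, i) \<in> half_edges G \<and> hend_at G (v, i) = Ed w j)"

definition og_connected :: "og \<Rightarrow> bool" where
  "og_connected G \<longleftrightarrow>
     (\<forall>v < length G. \<forall>w < length G. (v, w) \<in> {(a, b). adj G a b}\<^sup>*)"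

text \<open>Underlying graph is a tree: connected with (number of edges) = (number of
vertices) - 1 (for nonempty vertex set this is the usual tree condition, loops and
multiple edges counting as cycles).\<close>
definition is_tree :: "og \<Rightarrow> bool" where
  "is_tree G \<longleftrightarrow> wf_og G \<and> og_connected G \<and> num_edges G + 1 = length G"

definition cyc_tree :: "og \<Rightarrow> bool" where
  "cyc_tree G \<longleftrightarrow> is_tree G \<and> num_leaves G \<ge> 1"

definition leaf_at :: "og \<Rightarrow> nat \<Rightarrow> nat \<times> nat" where
  "leaf_at G k = (THE h. h \<in> half_edges G \<and> hend_at G h = Lf k)"

text \<open>Rooted: at every vertex v, the 0-th half-edge lies on the path from v to the
0-th leaf, i.e. either it is the 0-th leaf itself, or it is glued to a half-edge at a
vertex w from which the vertex carrying the 0-th leaf is reachable without passing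
through v.\<close>
definition rooted :: "og \<Rightarrow> bool" where
  "rooted G \<longleftrightarrow> cyc_tree G \<and>
     (\<forall>v < length G. G ! v \<noteq> [] \<and>
        (G ! v ! 0 = Lf 0 \<or>
         (\<exists>w j. G ! v ! 0 = Ed w j \<and>
             (w, fst (leaf_at G 0)) \<in> {(a, b). a \<noteq> v \<and> b \<noteq> v \<and> adj G a b}\<^sup>*)))"

text \<open>A vertex assignment sigma (list over the vertices of q) sends each vertex of q to
the vertex l of p into which it was substituted; the bijection of the paper is
order preserving on each V(q_l), so vertex x of q is the (rank sigma x)-th vertex of
q_(sigma!x), and the r-th vertex of q_l is vertex (pos sigma l r) of q.\<close>

definition rank :: "nat list \<Rightarrow> nat \<Rightarrow> nat" where
  "rank \<sigma> x = length (filter (\<lambda>y. \<sigma> ! y = \<sigma> ! x) [0..<x])"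

definition pos :: "nat list \<Rightarrow> nat \<Rightarrow> nat \<Rightarrow> nat" where
  "pos \<sigma> l r = filter (\<lambda>y. \<sigma> ! y = l) [0..<length \<sigma>] ! r"

definition tr_hend :: "og \<Rightarrow> og list \<Rightarrow> nat list \<Rightarrow> nat \<Rightarrow> hend \<Rightarrow> hend" where
  "tr_hend p qs \<sigma> l e =
     (case e of
        Ed w j \<Rightarrow> Ed (pos \<sigma> l w) j
      | Lf i \<Rightarrow>
          (case p ! l ! i of
             Lf k \<Rightarrow> Lf k
           | Ed l' i' \<Rightarrow> Ed (pos \<sigma> l' (fst (leaf_at (qs ! l') i'))) (snd (leaf_at (qs ! l') i'))))"

definition subst :: "og \<Rightarrow> og list \<Rightarrow> nat list \<Rightarrow> og" where
  "subst p qs \<sigma> =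
     map (\<lambda>x. map (tr_hend p qs \<sigma> (\<sigma> ! x)) (qs ! (\<sigma> ! x) ! rank \<sigma> x)) [0..<length \<sigma>]"

text \<open>A morphism is a tuple (source, inserted trees, vertex assignment, target).\<close>
type_synonym opmor = "og \<times> og list \<times> nat list \<times> og"

definition valid_subst :: "og \<Rightarrow> og list \<Rightarrow> nat list \<Rightarrow> og \<Rightarrow> bool" where
  "valid_subst p qs \<sigma> q \<longleftrightarrow>
     length qs = length p
   \<and> (\<forall>l < length p. cyc_tree (qs ! l) \<and> qs ! l \<noteq> [] \<and> num_leaves (qs ! l) = length (p ! l))
   \<and> set \<sigma> \<subseteq> {..<length p}
   \<and> (\<forall>l < length p. length (filter (\<lambda>y. y = l) \<sigma>) = length (qs ! l))
   \<and> subst p qs \<sigma> = q"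

definition corolla :: "nat \<Rightarrow> og" where
  "corolla d = [map Lf [0..<d]]"

definition op_ident :: "og \<Rightarrow> opmor" where
  "op_ident p = (p, map (\<lambda>row. corolla (length row)) p, [0..<length p], p)"

text \<open>Composition g o f of f : p -> q and g : q -> s (iterated substitution).\<close>
fun op_comp :: "opmor \<Rightarrow> opmor \<Rightarrow> opmor" where
  "op_comp (q', rs, \<tau>, s) (p, qs, \<sigma>, q) =
     (p,
      map (\<lambda>l. subst (qs ! l)
                 (map (\<lambda>r. rs ! pos \<sigma> l r) [0..<length (qs ! l)])
                 (map (rank \<sigma>) (filter (\<lambda>y. \<sigma> ! y = l) \<tau>)))
          [0..<length p],
      map (\<lambda>y. \<sigma> ! y) \<tau>,
      s)"

record ('o, 'm) cat =
  Ob :: "'o set"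
  Hom :: "'o \<Rightarrow> 'o \<Rightarrow> 'm set"
  comp :: "'m \<Rightarrow> 'm \<Rightarrow> 'm"
  ident :: "'o \<Rightarrow> 'm"

definition nucOp_op :: "(og, opmor) cat" where
  "nucOp_op = \<lparr> Ob = {p. cyc_tree p \<and> p \<noteq> []},
     Hom = (\<lambda>p q. {(p', qs, \<sigma>, q'). p' = p \<and> q' = q \<and> valid_subst p qs \<sigma> q}),
     comp = op_comp, ident = op_ident \<rparr>"

definition nusOp_op :: "(og, opmor) cat" where
  "nusOp_op = \<lparr> Ob = {p. rooted p \<and> p \<noteq> []},
     Hom = (\<lambda>p q. {(p', qs, \<sigma>, q'). p' = p \<and> q' = q \<and> valid_subst p qs \<sigma> q
                      \<and> (\<forall>l < length p. rooted (qs ! l))}),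
     comp = op_comp, ident = op_ident \<rparr>"

definition is_functor ::
  "('a, 'f) cat \<Rightarrow> ('b, 'g) cat \<Rightarrow> ('a \<Rightarrow> 'b) \<Rightarrow> ('f \<Rightarrow> 'g) \<Rightarrow> bool" where
  "is_functor C D Fo Fm \<longleftrightarrow>
     (\<forall>a \<in> Ob C. Fo a \<in> Ob D)
   \<and> (\<forall>a \<in> Ob C. \<forall>b \<in> Ob C. \<forall>f \<in> Hom C a b. Fm f \<in> Hom D (Fo a) (Fo b))
   \<and> (\<forall>a \<in> Ob C. Fm (ident C a) = ident D (Fo a))
   \<and> (\<forall>a \<in> Ob C. \<forall>b \<in> Ob C. \<forall>c \<in> Ob C. \<forall>f \<in> Hom C a b. \<forall>g \<in> Hom C b c.
        Fm (comp C g f) = comp D (Fm g) (Fm f))"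

definition is_iso :: "('a, 'f) cat \<Rightarrow> 'a \<Rightarrow> 'a \<Rightarrow> 'f \<Rightarrow> bool" where
  "is_iso C a b f \<longleftrightarrow> f \<in> Hom C a b \<and>
     (\<exists>g \<in> Hom C b a. comp C g f = ident C a \<and> comp C f g = ident C b)"

definition nat_iso ::
  "('a, 'f) cat \<Rightarrow> ('b, 'g) cat \<Rightarrow> ('a \<Rightarrow> 'b) \<Rightarrow> ('f \<Rightarrow> 'g) \<Rightarrow> ('a \<Rightarrow> 'b) \<Rightarrow> ('f \<Rightarrow> 'g)
     \<Rightarrow> ('a \<Rightarrow> 'g) \<Rightarrow> bool" where
  "nat_iso C D Fo Fm Go Gm \<eta> \<longleftrightarrow>
     (\<forall>a \<in> Ob C. is_iso D (Fo a) (Go a) (\<eta> a))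
   \<and> (\<forall>a \<in> Ob C. \<forall>b \<in> Ob C. \<forall>f \<in> Hom C a b. comp D (\<eta> b) (Fm f) = comp D (Gm f) (\<eta> a))"

definition cat_equivalence ::
  "('a, 'f) cat \<Rightarrow> ('b, 'g) cat \<Rightarrow> ('a \<Rightarrow> 'b) \<Rightarrow> ('f \<Rightarrow> 'g) \<Rightarrow> bool" where
  "cat_equivalence C D Fo Fm \<longleftrightarrow> is_functor C D Fo Fm \<and>
     (\<exists>Go Gm \<eta> \<epsilon>. is_functor D C Go Gm
        \<and> nat_iso C C id id (Go \<circ> Fo) (Gm \<circ> Fm) \<eta>
        \<and> nat_iso D D (Fo \<circ> Go) (Fm \<circ> Gm) id id \<epsilon>)"

end

theory Submission
  imports Defs
begin

lemma he_mem[simp]: "((v, i) \<in> half_edges G) \<longleftrightarrow> v < length G \<and> i < length (G ! v)"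
  by (simp add: half_edges_def)

lemma hend_at_simp[simp]: "hend_at G (v, i) = G ! v ! i"
  by (simp add: hend_at_def)

lemma half_edges_Sigma: "half_edges G = Sigma {..<length G} (\<lambda>v. {..<length (G ! v)})"
  by (auto simp: half_edges_def)

lemma finite_half_edges[simp]: "finite (half_edges G)"
  by (simp add: half_edges_Sigma)

lemma wf_partner:
  assumes "wf_og G" "v < length G" "i < length (G ! v)" "G ! v ! i = Ed w j"
  shows "w < length G \<and> j < length (G ! w) \<and> (w, j) \<noteq> (v, i) \<and> G ! w ! j = Ed v i"
proof -
  have "\<forall>h \<in> half_edges G. \<forall>w j. hend_at G h = Ed w j \<longrightarrow>
         (w, j) \<in> half_edges G \<and> (w, j) \<noteq> h \<and> hend_at G (w, j) = Ed (fst h) (snd h)"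
    using assms(1) unfolding wf_og_def by blast
  moreover have "(v, i) \<in> half_edges G" using assms(2,3) by simp
  ultimately have "\<forall>w' j'. hend_at G (v, i) = Ed w' j' \<longrightarrow>
         (w', j') \<in> half_edges G \<and> (w', j') \<noteq> (v, i) \<and> hend_at G (w', j') = Ed (fst (v, i)) (snd (v, i))"
    by (rule bspec)
  then have "(w, j) \<in> half_edges G \<and> (w, j) \<noteq> (v, i) \<and> hend_at G (w, j) = Ed v i"
    using assms(4) by simp
  then show ?thesis by simp
qed

lemma wf_leaf_unique:
  assumes "wf_og G" "v < length G" "i < length (G ! v)" "G ! v ! i = Lf k"
    "v' < length G" "i' < length (G ! v')" "G ! v' ! i' = Lf k"
  shows "v' = v \<and> i' = i"
proof -
  have "\<forall>h \<in> half_edges G. \<forall>h' \<in> half_edges G. \<forall>k.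
         hend_at G h = Lf k \<and> hend_at G h' = Lf k \<longrightarrow> h = h'"
    using assms(1) unfolding wf_og_def by blast
  moreover have "(v, i) \<in> half_edges G" "(v', i') \<in> half_edges G"
    "hend_at G (v, i) = Lf k" "hend_at G (v', i') = Lf k" using assms(2-7) by simp_all
  ultimately have "(v, i) = (v', i')" by blast
  then show ?thesis by simp
qed

lemma wf_leaf_lt:
  assumes "wf_og G" "v < length G" "i < length (G ! v)" "G ! v ! i = Lf k"
  shows "k < num_leaves G"
proof -
  have "k \<in> {k. \<exists>h \<in> half_edges G. hend_at G h = Lf k}" using assms
    by (intro CollectI bexI[of _ "(v, i)"]) simp_all
  then show ?thesis using assms(1) unfolding wf_og_def by auto
qed

lemma wf_leaf_exists:
  assumes "wf_og G" "k < num_leaves G"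
  shows "\<exists>v i. v < length G \<and> i < length (G ! v) \<and> G ! v ! i = Lf k"
proof -
  have "k \<in> {k. \<exists>h \<in> half_edges G. hend_at G h = Lf k}" using assms unfolding wf_og_def by auto
  then show ?thesis by (auto simp: half_edges_def hend_at_def)
qed

lemma leaf_at_eq:
  assumes "wf_og G" "v < length G" "i < length (G ! v)" "G ! v ! i = Lf k"
  shows "leaf_at G k = (v, i)"
  unfolding leaf_at_def
proof (rule the_equality)
  show "(v, i) \<in> half_edges G \<and> hend_at G (v, i) = Lf k" using assms by simp
next
  fix h assume "h \<in> half_edges G \<and> hend_at G h = Lf k"
  then show "h = (v, i)" using wf_leaf_unique[OF assms] by (cases h) auto
qed

lemma leaf_at_props:
  assumes "wf_og G" "k < num_leaves G"
  shows "fst (leaf_at G k) < length G \<and> snd (leaf_at G k) < length (G ! fst (leaf_at G k))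
      \<and> G ! fst (leaf_at G k) ! snd (leaf_at G k) = Lf k"
proof -
  obtain v i where "v < length G" "i < length (G ! v)" "G ! v ! i = Lf k"
    using wf_leaf_exists[OF assms] by blast
  with leaf_at_eq[OF assms(1) this] show ?thesis by simp
qed

lemma adj_iff: "adj G a b \<longleftrightarrow> (\<exists>i j. a < length G \<and> i < length (G ! a) \<and> G ! a ! i = Ed b j)"
  by (auto simp: adj_def)

lemma adj_sym: assumes "wf_og G" "adj G a b" shows "adj G b a"
proof -
  obtain i j where "a < length G" "i < length (G ! a)" "G ! a ! i = Ed b j"
    using assms(2) unfolding adj_iff by blast
  from wf_partner[OF assms(1) this] show ?thesis unfolding adj_iff by blast
qed

lemma adj_lt: assumes "wf_og G" "adj G a b" shows "a < length G \<and> b < length G"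
proof -
  obtain i j where "a < length G" "i < length (G ! a)" "G ! a ! i = Ed b j"
    using assms(2) unfolding adj_iff by blast
  from wf_partner[OF assms(1) this] show ?thesis using \<open>a < length G\<close> by blast
qed

definition av :: "og \<Rightarrow> nat \<Rightarrow> (nat \<times> nat) set" where
  "av G v = {(a, b). a \<noteq> v \<and> b \<noteq> v \<and> adj G a b}"

lemma av_sym: "wf_og G \<Longrightarrow> sym (av G v)"
  unfolding sym_def av_def using adj_sym by blast

lemma av_rtrancl_sym: "wf_og G \<Longrightarrow> (a, b) \<in> (av G v)\<^sup>* \<Longrightarrow> (b, a) \<in> (av G v)\<^sup>*"
  by (meson av_sym sym_rtrancl symD)

lemma av_from_v: "(v, b) \<in> (av G v)\<^sup>* \<Longrightarrow> b = v"
  by (erule converse_rtranclE) (auto simp: av_def)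

lemma av_ne: "(a, b) \<in> (av G v)\<^sup>* \<Longrightarrow> a \<noteq> v \<Longrightarrow> b \<noteq> v"
  by (erule rtranclE) (auto simp: av_def)

lemma av_ne': "(a, b) \<in> (av G v)\<^sup>* \<Longrightarrow> b \<noteq> v \<Longrightarrow> a \<noteq> v"
  by (erule converse_rtranclE) (auto simp: av_def)

lemma rooted_alt: "rooted G \<longleftrightarrow> cyc_tree G \<and>
     (\<forall>v < length G. G ! v \<noteq> [] \<and>
        (G ! v ! 0 = Lf 0 \<or>
         (\<exists>w j. G ! v ! 0 = Ed w j \<and> (w, fst (leaf_at G 0)) \<in> (av G v)\<^sup>*)))"
  unfolding rooted_def av_def by simp

definition adjS :: "og \<Rightarrow> (nat \<times> nat) set \<Rightarrow> (nat \<times> nat) set" where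
  "adjS G S = {(a, b). \<exists>i j. (a, i) \<in> S \<and> G ! a ! i = Ed b j}"

lemma count_lemma:
  assumes wf: "wf_og G" and S: "S \<subseteq> half_edges G"
    and cl: "\<And>a i w j. (a, i) \<in> S \<Longrightarrow> G ! a ! i = Ed w j \<Longrightarrow> (w, j) \<in> S"
    and n: "length G > 0" and conn: "\<And>v. v < length G \<Longrightarrow> (v, 0) \<in> (adjS G S)\<^sup>*"
  shows "2 * (length G - 1) \<le> card S"
proof -
  let ?R = "adjS G S"
  let ?n = "length G"
  define d where "d v = (LEAST k. (v, 0) \<in> ?R ^^ k)" for v
  have dk: "(v, 0) \<in> ?R ^^ (d v)" if "v < ?n" for v
  proof -
    have "\<exists>k. (v, 0) \<in> ?R ^^ k" using conn[OF that] by (simp add: rtrancl_power)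
    then show ?thesis unfolding d_def by (rule LeastI_ex)
  qed
  have dle: "d v \<le> k" if "(v, 0) \<in> ?R ^^ k" for v k
    unfolding d_def using that by (rule Least_le)
  define V' where "V' = {1..<?n}"
  have step: "\<exists>x. (v, fst x) \<in> S \<and> G ! v ! fst x = Ed (fst (snd x)) (snd (snd x)) \<and> d (fst (snd x)) < d v"
    if "v \<in> V'" for v
  proof -
    have v: "v < ?n" "v \<noteq> 0" using that by (auto simp: V'_def)
    have "d v \<noteq> 0"
    proof
      assume "d v = 0"
      then show False using dk[OF v(1)] v(2) by simp
    qed
    then obtain k where k: "d v = Suc k" by (cases "d v") auto
    then have "(v, 0) \<in> ?R ^^ Suc k" using dk[OF v(1)] by simp
    from relpow_Suc_D2[OF this] obtain y where "(v, y) \<in> ?R" "(y, 0) \<in> ?R ^^ k" by blast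
    then obtain i j where "(v, i) \<in> S" "G ! v ! i = Ed y j" "d y \<le> k"
      using dle unfolding adjS_def by blast
    then show ?thesis using k by (intro exI[of _ "(i, y, j)"]) auto
  qed
  have "\<forall>v\<in>V'. \<exists>x. (v, fst x) \<in> S \<and> G ! v ! fst x = Ed (fst (snd x)) (snd (snd x)) \<and> d (fst (snd x)) < d v"
    by (intro ballI step)
  from bchoice[OF this] obtain X where X: "\<forall>v\<in>V'. (v, fst (X v)) \<in> S \<and> G ! v ! fst (X v) = Ed (fst (snd (X v))) (snd (snd (X v)))
       \<and> d (fst (snd (X v))) < d v"
    by blast
  define f where "f v = (v, fst (X v))" for v
  define g where "g v = (fst (snd (X v)), snd (snd (X v)))" for v
  have part: "G ! fst (g v) ! snd (g v) = Ed v (fst (X v))" "fst (g v) < ?n" if "v \<in> V'" for v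
  proof -
    have x1: "(v, fst (X v)) \<in> S" and x2: "G ! v ! fst (X v) = Ed (fst (snd (X v))) (snd (snd (X v)))"
      using X that by blast+
    have "(v, fst (X v)) \<in> half_edges G" using x1 S by blast
    then have "v < ?n" "fst (X v) < length (G ! v)" by simp_all
    from wf_partner[OF wf this x2] show "G ! fst (g v) ! snd (g v) = Ed v (fst (X v))" "fst (g v) < ?n"
      by (simp_all add: g_def)
  qed
  have injf: "inj_on f V'" unfolding f_def by (rule inj_onI) auto
  have injg: "inj_on g V'"
  proof (rule inj_onI)
    fix v v' assume "v \<in> V'" "v' \<in> V'" "g v = g v'"
    then have "G ! fst (g v) ! snd (g v) = G ! fst (g v') ! snd (g v')" by simp
    then have "Ed v (fst (X v)) = Ed v' (fst (X v'))"
      using part(1)[OF \<open>v \<in> V'\<close>] part(1)[OF \<open>v' \<in> V'\<close>] by simp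
    then show "v = v'" by simp
  qed
  have disj: "f ` V' \<inter> g ` V' = {}"
  proof (rule ccontr)
    assume "f ` V' \<inter> g ` V' \<noteq> {}"
    then obtain v v' where vv: "v \<in> V'" "v' \<in> V'" "f v = g v'" by blast
    then have e0: "(v, fst (X v)) = g v'" by (simp add: f_def)
    have e1: "v = fst (g v')" "fst (X v) = snd (g v')" using arg_cong[OF e0, of fst] arg_cong[OF e0, of snd] by simp_all
    have "G ! v ! fst (X v) = Ed v' (fst (X v'))" using part(1)[OF vv(2)] e1 by simp
    moreover have "G ! v ! fst (X v) = Ed (fst (snd (X v))) (snd (snd (X v)))" "d (fst (snd (X v))) < d v"
      using X vv(1) by blast+
    ultimately have "d v' < d v" by simp
    moreover have "d (fst (snd (X v'))) < d v'" using X vv(2) by blast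
    then have "d v < d v'" using e1(1) by (simp add: g_def)
    ultimately show False by simp
  qed
  have sub: "f ` V' \<union> g ` V' \<subseteq> S"
  proof -
    have "f ` V' \<subseteq> S"
    proof
      fix h assume "h \<in> f ` V'"
      then obtain v where v: "v \<in> V'" "h = f v" by blast
      have "(v, fst (X v)) \<in> S" using X v(1) by blast
      then show "h \<in> S" using v(2) by (simp add: f_def)
    qed
    moreover have "g ` V' \<subseteq> S"
    proof
      fix h assume "h \<in> g ` V'"
      then obtain v where v: "v \<in> V'" "h = g v" by blast
      have x1: "(v, fst (X v)) \<in> S" and x2: "G ! v ! fst (X v) = Ed (fst (snd (X v))) (snd (snd (X v)))"
        using X v(1) by blast+
      from cl[OF x1 x2] show "h \<in> S" using v(2) by (simp add: g_def)
    qed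
    ultimately show ?thesis by blast
  qed
  have fin: "finite S" using S by (rule finite_subset) simp
  have "card (f ` V' \<union> g ` V') = card (f ` V') + card (g ` V')"
    using disj by (intro card_Un_disjoint) (auto simp: V'_def)
  also have "\<dots> = card V' + card V'" using card_image[OF injf] card_image[OF injg] by simp
  also have "\<dots> = 2 * (?n - 1)" by (simp add: V'_def)
  finally show ?thesis using card_mono[OF fin sub] by simp
qed


lemma eh_mem: "(a, c) \<in> edge_halfedges G \<longleftrightarrow> a < length G \<and> c < length (G ! a) \<and> (\<exists>w j. G ! a ! c = Ed w j)"
  by (simp add: edge_halfedges_def)

lemma finite_eh: "finite (edge_halfedges G)"
  by (rule finite_subset[of _ "half_edges G"]) (auto simp: edge_halfedges_def)

lemma tree_no_cycle:
  assumes T: "is_tree G" and v: "v < length G" "i < length (G ! v)" "i' < length (G ! v)" "i \<noteq> i'"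
    and e: "G ! v ! i = Ed w j" "G ! v ! i' = Ed w' j'" and p: "(w, w') \<in> (av G v)\<^sup>*"
  shows False
proof -
  have wf: "wf_og G" and conn: "og_connected G" and ne: "num_edges G + 1 = length G"
    using T unfolding is_tree_def by blast+
  let ?n = "length G"
  define S where "S = edge_halfedges G - {(v, i), (w, j)}"
  have pw: "w < ?n" "j < length (G ! w)" "(w, j) \<noteq> (v, i)" "G ! w ! j = Ed v i"
    using wf_partner[OF wf v(1,2) e(1)] by blast+
  have pw': "w' < ?n" "j' < length (G ! w')" "(w', j') \<noteq> (v, i')" "G ! w' ! j' = Ed v i'"
    using wf_partner[OF wf v(1,3) e(2)] by blast+
  have S_sub: "S \<subseteq> half_edges G" unfolding S_def edge_halfedges_def by blast
  have cl: "(b, e) \<in> S" if ac: "(a, c) \<in> S" and g: "G ! a ! c = Ed b e" for a c b e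
  proof -
    have ac': "a < ?n" "c < length (G ! a)" using ac S_sub by auto
    have pb: "b < ?n" "e < length (G ! b)" "(b, e) \<noteq> (a, c)" "G ! b ! e = Ed a c"
      using wf_partner[OF wf ac' g] by blast+
    have "(b, e) \<noteq> (v, i)"
    proof
      assume "(b, e) = (v, i)"
      then have "Ed w j = Ed a c" using pb(4) e(1) by simp
      then have "(a, c) = (w, j)" by simp
      then show False using ac unfolding S_def by simp
    qed
    moreover have "(b, e) \<noteq> (w, j)"
    proof
      assume "(b, e) = (w, j)"
      then have "Ed v i = Ed a c" using pb(4) pw(4) by simp
      then have "(a, c) = (v, i)" by simp
      then show False using ac unfolding S_def by simp
    qed
    moreover have "(b, e) \<in> edge_halfedges G" using pb g by (simp add: eh_mem)
    ultimately show ?thesis unfolding S_def by simp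
  qed
  have avS: "(a, b) \<in> adjS G S" if ab: "(a, b) \<in> av G v" for a b
  proof -
    have ab': "a \<noteq> v" "b \<noteq> v" "adj G a b" using ab unfolding av_def by simp_all
    then obtain c e where ce: "a < ?n" "c < length (G ! a)" "G ! a ! c = Ed b e" unfolding adj_iff by blast
    have "(a, c) \<noteq> (w, j)"
    proof
      assume "(a, c) = (w, j)"
      then have "Ed b e = Ed v i" using ce(3) pw(4) by simp
      then show False using ab'(2) by simp
    qed
    moreover have "(a, c) \<noteq> (v, i)" using ab'(1) by simp
    moreover have "(a, c) \<in> edge_halfedges G" using ce by (simp add: eh_mem)
    ultimately have "(a, c) \<in> S" unfolding S_def by simp
    then show ?thesis using ce(3) unfolding adjS_def by blast
  qed
  have avS': "(av G v)\<^sup>* \<subseteq> (adjS G S)\<^sup>*"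
    by (rule rtrancl_mono) (use avS in auto)
  have adjsub: "(a, b) \<in> (adjS G S)\<^sup>*" if ab: "adj G a b" for a b
  proof -
    obtain c e where ce: "a < ?n" "c < length (G ! a)" "G ! a ! c = Ed b e" using ab unfolding adj_iff by blast
    have eh: "(a, c) \<in> edge_halfedges G" using ce by (simp add: eh_mem)
    show ?thesis
    proof (cases "(a, c) = (v, i)")
      case True
      then have ab2: "a = v" "b = w" using ce(3) e(1) by simp_all
      show ?thesis
      proof (cases "w = v")
        case True then show ?thesis using ab2 by simp
      next
        case False
        have "(v, i') \<in> S" unfolding S_def using v False e(2) by (simp add: eh_mem)
        then have "(v, w') \<in> adjS G S" using e(2) unfolding adjS_def by blast
        moreover have "(w', w) \<in> (adjS G S)\<^sup>*" using avS' av_rtrancl_sym[OF wf p] by blast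
        ultimately show ?thesis using ab2 by simp
      qed
    next
      case ne1: False
      show ?thesis
      proof (cases "(a, c) = (w, j)")
        case True
        then have ab2: "a = w" "b = v" using ce(3) pw(4) by simp_all
        show ?thesis
        proof (cases "w = v")
          case True then show ?thesis using ab2 by simp
        next
          case False
          have "w' \<noteq> v" using av_ne[OF p False] .
          have "(w', j') \<noteq> (w, j)"
          proof
            assume "(w', j') = (w, j)"
            then have "Ed v i' = Ed v i" using pw'(4) pw(4) by simp
            then show False using v(4) by simp
          qed
          then have "(w', j') \<in> S" unfolding S_def using pw' \<open>w' \<noteq> v\<close> by (simp add: eh_mem)
          then have "(w', v) \<in> adjS G S" using pw'(4) unfolding adjS_def by blast
          moreover have "(w, w') \<in> (adjS G S)\<^sup>*" using avS' p by blast
          ultimately show ?thesis using ab2 by simp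
        qed
      next
        case False
        then have "(a, c) \<in> S" using ne1 eh unfolding S_def by simp
        then show ?thesis using ce(3) unfolding adjS_def by blast
      qed
    qed
  qed
  have n0: "?n > 0" using v(1) by (cases "?n") auto
  have connS: "(u, 0) \<in> (adjS G S)\<^sup>*" if "u < ?n" for u
  proof -
    have "(u, 0) \<in> {(a, b). adj G a b}\<^sup>*" using conn that n0 unfolding og_connected_def by blast
    moreover have "{(a, b). adj G a b} \<subseteq> (adjS G S)\<^sup>*" using adjsub by blast
    ultimately show ?thesis using rtrancl_subset_rtrancl by blast
  qed
  have c1: "2 * (?n - 1) \<le> card S"
    by (rule count_lemma[OF wf S_sub cl n0 connS])
  have two: "{(v, i), (w, j)} \<subseteq> edge_halfedges G" using v e pw by (simp add: eh_mem)
  have cs: "card S = card (edge_halfedges G) - card {(v, i), (w, j)}"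
    unfolding S_def by (rule card_Diff_subset) (use two finite_eh finite_subset in blast)+
  have c2: "card {(v, i), (w, j)} = 2" using pw(3) by (subst card_insert_disjoint) auto
  have c3: "card {(v, i), (w, j)} \<le> card (edge_halfedges G)"
    using card_mono[OF finite_eh two] .
  have c4: "card (edge_halfedges G) div 2 + 1 = ?n" using ne unfolding num_edges_def .
  show False using c1 cs c2 c3 c4 by linarith
qed

lemma no_loop:
  assumes T: "is_tree G" and v: "v < length G" "i < length (G ! v)" and e: "G ! v ! i = Ed w j"
  shows "w \<noteq> v"
proof
  assume wv: "w = v"
  have wf: "wf_og G" using T unfolding is_tree_def by blast
  have pw: "j < length (G ! v)" "(v, j) \<noteq> (v, i)" "G ! v ! j = Ed v i"
    using wf_partner[OF wf v e] wv by blast+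
  show False
    by (rule tree_no_cycle[OF T v(1,2) pw(1) _ e[unfolded wv] pw(3)]) (use pw(2) in auto)
qed


definition leads :: "og \<Rightarrow> nat \<Rightarrow> nat \<Rightarrow> nat \<Rightarrow> bool" where
  "leads G k v i \<longleftrightarrow> i < length (G ! v) \<and> (G ! v ! i = Lf k \<or>
      (\<exists>w j. G ! v ! i = Ed w j \<and> (w, fst (leaf_at G k)) \<in> (av G v)\<^sup>*))"

definition dir :: "og \<Rightarrow> nat \<Rightarrow> nat \<Rightarrow> nat" where
  "dir G k v = (if \<exists>i. leads G k v i then LEAST i. leads G k v i else 0)"

lemma leads_unique:
  assumes T: "is_tree G" and v: "v < length G" and k: "k < num_leaves G"
    and l1: "leads G k v i" and l2: "leads G k v i'"
  shows "i = i'"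
proof -
  have wf: "wf_og G" using T unfolding is_tree_def by blast
  obtain t s where ts: "leaf_at G k = (t, s)" by (cases "leaf_at G k")
  have tsp: "t < length G" "s < length (G ! t)" "G ! t ! s = Lf k"
    using leaf_at_props[OF wf k] ts by simp_all
  have i: "i < length (G ! v)" and i': "i' < length (G ! v)" using l1 l2 unfolding leads_def by blast+
  have mixed: False if a: "G ! v ! a = Lf k" "a < length (G ! v)" and b: "G ! v ! b = Ed w j" "b < length (G ! v)"
    and p: "(w, t) \<in> (av G v)\<^sup>*" for a b w j
  proof -
    have "leaf_at G k = (v, a)" by (rule leaf_at_eq[OF wf v a(2) a(1)])
    then have "t = v" using ts by simp
    have "w = v"
    proof (rule ccontr)
      assume "w \<noteq> v"
      from av_ne[OF p this] \<open>t = v\<close> show False by simp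
    qed
    then show False using no_loop[OF T v b(2) b(1)] by simp
  qed
  show ?thesis
  proof (cases "G ! v ! i = Lf k")
    case A: True
    show ?thesis
    proof (cases "G ! v ! i' = Lf k")
      case True
      from wf_leaf_unique[OF wf v i A v i' True] show ?thesis by simp
    next
      case False
      then obtain w' j' where "G ! v ! i' = Ed w' j'" "(w', fst (leaf_at G k)) \<in> (av G v)\<^sup>*"
        using l2 unfolding leads_def by blast
      then show ?thesis using mixed[OF A i _ i'] ts by simp
    qed
  next
    case B: False
    then obtain w j where wj: "G ! v ! i = Ed w j" "(w, t) \<in> (av G v)\<^sup>*"
      using l1 ts unfolding leads_def by auto
    show ?thesis
    proof (cases "G ! v ! i' = Lf k")
      case True
      then show ?thesis using mixed[OF True i' wj(1) i wj(2)] by simp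
    next
      case False
      then obtain w' j' where wj': "G ! v ! i' = Ed w' j'" "(w', t) \<in> (av G v)\<^sup>*"
        using l2 ts unfolding leads_def by auto
      have "(w, w') \<in> (av G v)\<^sup>*" using wj(2) av_rtrancl_sym[OF wf wj'(2)] by simp
      then show ?thesis using tree_no_cycle[OF T v i i' _ wj(1) wj'(1)] by blast
    qed
  qed
qed

lemma path_split:
  assumes "(a, t) \<in> {(a, b). adj G a b}\<^sup>*" "t \<noteq> v"
  shows "(a, t) \<in> (av G v)\<^sup>* \<or> (\<exists>w. adj G v w \<and> (w, t) \<in> (av G v)\<^sup>*)"
  using assms(1)
proof (induction rule: converse_rtrancl_induct)
  case base
  then show ?case by simp
next
  case (step a b)
  then have ab: "adj G a b" by simp
  from step.IH show ?case
  proof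
    assume bt: "(b, t) \<in> (av G v)\<^sup>*"
    have bv: "b \<noteq> v" using av_ne'[OF bt assms(2)] .
    show ?thesis
    proof (cases "a = v")
      case True then show ?thesis using ab bt by blast
    next
      case False
      then have "(a, b) \<in> av G v" using ab bv unfolding av_def by simp
      then show ?thesis using bt by (meson converse_rtrancl_into_rtrancl)
    qed
  qed simp
qed

lemma leads_exists:
  assumes T: "is_tree G" and v: "v < length G" and k: "k < num_leaves G"
  shows "\<exists>i. leads G k v i"
proof -
  have wf: "wf_og G" and conn: "og_connected G" using T unfolding is_tree_def by blast+
  obtain t s where ts: "leaf_at G k = (t, s)" by (cases "leaf_at G k")
  have tsp: "t < length G" "s < length (G ! t)" "G ! t ! s = Lf k"
    using leaf_at_props[OF wf k] ts by simp_all
  show ?thesis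
  proof (cases "t = v")
    case True
    then show ?thesis using tsp unfolding leads_def by blast
  next
    case False
    have "(v, t) \<in> {(a, b). adj G a b}\<^sup>*" using conn v tsp(1) unfolding og_connected_def by blast
    from path_split[OF this] False have "\<exists>w. adj G v w \<and> (w, t) \<in> (av G v)\<^sup>*"
      using av_from_v by blast
    then obtain w i j where "i < length (G ! v)" "G ! v ! i = Ed w j" "(w, t) \<in> (av G v)\<^sup>*"
      unfolding adj_iff by blast
    then show ?thesis using ts unfolding leads_def by auto
  qed
qed

lemma dir_leads:
  assumes "is_tree G" "v < length G" "k < num_leaves G"
  shows "leads G k v (dir G k v)"
  using leads_exists[OF assms] unfolding dir_def by (simp add: LeastI_ex)

lemma dir_eq:
  assumes "is_tree G" "v < length G" "k < num_leaves G" "leads G k v i"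
  shows "dir G k v = i"
  using leads_unique[OF assms(1-3) dir_leads[OF assms(1-3)] assms(4)] .

lemma dir_lt:
  assumes "is_tree G" "v < length G" "k < num_leaves G"
  shows "dir G k v < length (G ! v)"
  using dir_leads[OF assms] unfolding leads_def by blast

lemma rank_struct:
  assumes "x < length \<sigma>"
  shows "filter (\<lambda>y. \<sigma> ! y = \<sigma> ! x) [0..<length \<sigma>] =
         filter (\<lambda>y. \<sigma> ! y = \<sigma> ! x) [0..<x] @ x # filter (\<lambda>y. \<sigma> ! y = \<sigma> ! x) [Suc x..<length \<sigma>]"
proof -
  have "[0..<length \<sigma>] = [0..<x] @ x # [Suc x..<length \<sigma>]"
  proof -
    have "[0..<x + (length \<sigma> - x)] = [0..<x] @ [x..<x + (length \<sigma> - x)]"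
      by (rule upt_add_eq_append) simp
    then have "[0..<length \<sigma>] = [0..<x] @ [x..<length \<sigma>]" using assms by simp
    then show ?thesis using upt_conv_Cons[OF assms] by simp
  qed
  then show ?thesis by simp
qed

lemma pos_rank:
  assumes "x < length \<sigma>"
  shows "pos \<sigma> (\<sigma> ! x) (rank \<sigma> x) = x"
  unfolding pos_def rank_def rank_struct[OF assms] by (simp add: nth_append)

lemma rank_lt:
  assumes "x < length \<sigma>"
  shows "rank \<sigma> x < length (filter (\<lambda>y. \<sigma> ! y = \<sigma> ! x) [0..<length \<sigma>])"
  unfolding rank_def rank_struct[OF assms] by simp

lemma count_eq: "length (filter (\<lambda>y. \<sigma> ! y = l) [0..<length \<sigma>]) = length (filter (\<lambda>y. y = l) \<sigma>)"
proof -
  have "filter (\<lambda>y. y = l) \<sigma> = filter (\<lambda>y. y = l) (map (\<lambda>y. \<sigma> ! y) [0..<length \<sigma>])"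
    by (simp add: map_nth)
  also have "\<dots> = map (\<lambda>y. \<sigma> ! y) (filter (\<lambda>y. \<sigma> ! y = l) [0..<length \<sigma>])"
    by (simp add: filter_map o_def)
  finally show ?thesis by simp
qed

lemma pos_props:
  assumes "r < length (filter (\<lambda>y. \<sigma> ! y = l) [0..<length \<sigma>])"
  shows "pos \<sigma> l r < length \<sigma> \<and> \<sigma> ! (pos \<sigma> l r) = l \<and> rank \<sigma> (pos \<sigma> l r) = r"
proof -
  let ?L = "filter (\<lambda>y. \<sigma> ! y = l) [0..<length \<sigma>]"
  have xin: "?L ! r \<in> set ?L" using assms by (rule nth_mem)
  then have "?L ! r \<in> {y \<in> set [0..<length \<sigma>]. \<sigma> ! y = l}" by (simp only: set_filter)
  then have x: "?L ! r < length \<sigma>" "\<sigma> ! (?L ! r) = l" by simp_all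
  define x where "x = ?L ! r"
  have "?L ! (rank \<sigma> x) = x" using pos_rank[of x \<sigma>] x unfolding pos_def x_def by simp
  moreover have "rank \<sigma> x < length ?L" using rank_lt[of x \<sigma>] x unfolding x_def by simp
  moreover have "distinct ?L" by simp
  ultimately have "rank \<sigma> x = r" using assms unfolding x_def by (simp add: nth_eq_iff_index_eq)
  then show ?thesis using x unfolding pos_def x_def by simp
qed

lemma rank_map:
  "map (rank \<sigma>) (filter (\<lambda>y. \<sigma> ! y = l) [0..<length \<sigma>]) = [0..<length (filter (\<lambda>y. \<sigma> ! y = l) [0..<length \<sigma>])]"
proof (rule nth_equalityI)
  fix r assume "r < length (map (rank \<sigma>) (filter (\<lambda>y. \<sigma> ! y = l) [0..<length \<sigma>]))"
  then have r: "r < length (filter (\<lambda>y. \<sigma> ! y = l) [0..<length \<sigma>])" by simp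
  then show "map (rank \<sigma>) (filter (\<lambda>y. \<sigma> ! y = l) [0..<length \<sigma>]) ! r = [0..<length (filter (\<lambda>y. \<sigma> ! y = l) [0..<length \<sigma>])] ! r"
    using pos_props[OF r] unfolding pos_def by simp
qed simp

lemma rank_inj:
  assumes "x < length \<sigma>" "x' < length \<sigma>" "\<sigma> ! x = \<sigma> ! x'" "rank \<sigma> x = rank \<sigma> x'"
  shows "x = x'"
proof -
  have "x = pos \<sigma> (\<sigma> ! x) (rank \<sigma> x)" using pos_rank[OF assms(1)] by simp
  also have "\<dots> = pos \<sigma> (\<sigma> ! x') (rank \<sigma> x')" using assms(3,4) by simp
  also have "\<dots> = x'" using pos_rank[OF assms(2)] .
  finally show ?thesis .
qed

lemma rank_upt: "y < n \<Longrightarrow> rank [0..<n] y = 0"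
  unfolding rank_def by (auto simp: filter_empty_conv)

lemma pos_upt: assumes "l < n" shows "pos [0..<n] l 0 = l"
proof -
  have e: "[0..<n] = [0..<l] @ l # [Suc l..<n]"
  proof -
    have "[0..<l + (n - l)] = [0..<l] @ [l..<l + (n - l)]"
      by (rule upt_add_eq_append) simp
    then have "[0..<n] = [0..<l] @ [l..<n]" using assms by simp
    then show ?thesis using upt_conv_Cons[OF assms] by simp
  qed
  have "filter (\<lambda>y. [0..<n] ! y = l) [0..<length [0..<n]] = filter (\<lambda>y. y = l) [0..<n]"
    by (rule filter_cong) auto
  also have "\<dots> = [l]" by (subst e) (auto simp: filter_empty_conv)
  finally show ?thesis unfolding pos_def by simp
qed

lemma rank_rep: "x < c \<Longrightarrow> rank (replicate c 0) x = x"
  unfolding rank_def by (simp add: filter_True)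

lemma pos_rep: "r < c \<Longrightarrow> pos (replicate c 0) 0 r = r"
  unfolding pos_def by (simp add: filter_True)


section \<open>Port permutations\<close>

definition fw :: "nat \<Rightarrow> nat \<Rightarrow> nat" where
  "fw \<rho> i = (if i = 0 then \<rho> else if i \<le> \<rho> then i - 1 else i)"

definition bw :: "nat \<Rightarrow> nat \<Rightarrow> nat" where
  "bw \<rho> j = (if j = \<rho> then 0 else if j < \<rho> then j + 1 else j)"

lemma bw_fw[simp]: "bw \<rho> (fw \<rho> i) = i"
  unfolding fw_def bw_def by auto

lemma fw_bw[simp]: "fw \<rho> (bw \<rho> j) = j"
  unfolding fw_def bw_def by auto

lemma fw_lt: "\<rho> < d \<Longrightarrow> i < d \<Longrightarrow> fw \<rho> i < d"
  unfolding fw_def by auto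

lemma bw_lt: "\<rho> < d \<Longrightarrow> i < d \<Longrightarrow> bw \<rho> i < d"
  unfolding bw_def by auto

lemma bw_eq0: "bw \<rho> j = 0 \<longleftrightarrow> j = \<rho>"
  unfolding bw_def by auto

lemma fw_0[simp]: "fw 0 i = i" and bw_0[simp]: "bw 0 i = i"
  unfolding fw_def bw_def by auto

definition renE :: "(nat \<Rightarrow> nat \<Rightarrow> nat) \<Rightarrow> hend \<Rightarrow> hend" where
  "renE g e = (case e of Lf m \<Rightarrow> Lf m | Ed w j \<Rightarrow> Ed w (g w j))"

lemma renE_simps[simp]: "renE g (Lf m) = Lf m" "renE g (Ed w j) = Ed w (g w j)"
  by (simp_all add: renE_def)

definition PG :: "(nat \<Rightarrow> nat \<Rightarrow> nat) \<Rightarrow> (nat \<Rightarrow> nat \<Rightarrow> nat) \<Rightarrow> og \<Rightarrow> og" where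
  "PG f g G = map (\<lambda>v. map (\<lambda>i. renE g (G ! v ! f v i)) [0..<length (G ! v)]) [0..<length G]"

definition isperm :: "(nat \<Rightarrow> nat \<Rightarrow> nat) \<Rightarrow> (nat \<Rightarrow> nat \<Rightarrow> nat) \<Rightarrow> og \<Rightarrow> bool" where
  "isperm f g G \<longleftrightarrow> (\<forall>v < length G. \<forall>i < length (G ! v).
      f v i < length (G ! v) \<and> g v i < length (G ! v) \<and> f v (g v i) = i \<and> g v (f v i) = i)"

lemma isperm_D:
  assumes "isperm f g G" "v < length G" "i < length (G ! v)"
  shows "f v i < length (G ! v)" "g v i < length (G ! v)" "f v (g v i) = i" "g v (f v i) = i"
  using assms unfolding isperm_def by blast+

lemma PG_len[simp]: "length (PG f g G) = length G"
  by (simp add: PG_def)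

lemma PG_len2[simp]: "v < length G \<Longrightarrow> length (PG f g G ! v) = length (G ! v)"
  by (simp add: PG_def)

lemma PG_nth: "v < length G \<Longrightarrow> i < length (G ! v) \<Longrightarrow> PG f g G ! v ! i = renE g (G ! v ! f v i)"
  by (simp add: PG_def)

lemma half_edges_PG[simp]: "half_edges (PG f g G) = half_edges G"
  by (auto simp: half_edges_def)

lemma PG_Lf:
  assumes "v < length G" "i < length (G ! v)"
  shows "PG f g G ! v ! i = Lf k \<longleftrightarrow> G ! v ! f v i = Lf k"
  using assms by (cases "G ! v ! f v i") (simp_all add: PG_nth)

lemma PG_Ed:
  assumes "v < length G" "i < length (G ! v)"
  shows "PG f g G ! v ! i = Ed w j' \<longleftrightarrow> (\<exists>j. G ! v ! f v i = Ed w j \<and> j' = g w j)"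
  using assms by (cases "G ! v ! f v i") (auto simp: PG_nth)

lemma adj_PG:
  assumes P: "isperm f g G"
  shows "adj (PG f g G) a b \<longleftrightarrow> adj G a b"
proof
  assume "adj (PG f g G) a b"
  then obtain i j where "a < length G" "i < length (G ! a)" "PG f g G ! a ! i = Ed b j"
    unfolding adj_iff by auto
  then show "adj G a b" unfolding adj_iff using isperm_D[OF P] PG_Ed by metis
next
  assume "adj G a b"
  then obtain i j where a: "a < length G" "i < length (G ! a)" "G ! a ! i = Ed b j"
    unfolding adj_iff by auto
  have "g a i < length (G ! a)" "f a (g a i) = i" using isperm_D[OF P a(1,2)] by simp_all
  then have "PG f g G ! a ! g a i = Ed b (g b j)" using a by (simp add: PG_nth)
  then show "adj (PG f g G) a b" unfolding adj_iff using a \<open>g a i < length (G ! a)\<close> by auto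
qed

lemma av_PG: "isperm f g G \<Longrightarrow> av (PG f g G) v = av G v"
  unfolding av_def using adj_PG by blast

lemma labels_PG:
  assumes P: "isperm f g G"
  shows "{k. \<exists>h \<in> half_edges (PG f g G). hend_at (PG f g G) h = Lf k} = {k. \<exists>h \<in> half_edges G. hend_at G h = Lf k}"
proof (intro set_eqI iffI; simp only: mem_Collect_eq)
  fix k assume "\<exists>h \<in> half_edges (PG f g G). hend_at (PG f g G) h = Lf k"
  then obtain v i where h: "v < length G" "i < length (G ! v)" "PG f g G ! v ! i = Lf k" by auto
  then have "G ! v ! f v i = Lf k" by (simp add: PG_Lf)
  then show "\<exists>h \<in> half_edges G. hend_at G h = Lf k" using isperm_D[OF P h(1,2)] h(1)
    by (intro bexI[of _ "(v, f v i)"]) simp_all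
next
  fix k assume "\<exists>h \<in> half_edges G. hend_at G h = Lf k"
  then obtain v i where h: "v < length G" "i < length (G ! v)" "G ! v ! i = Lf k" by auto
  have "g v i < length (G ! v)" "f v (g v i) = i" using isperm_D[OF P h(1,2)] by simp_all
  then have "PG f g G ! v ! g v i = Lf k" using h by (simp add: PG_Lf)
  then show "\<exists>h \<in> half_edges (PG f g G). hend_at (PG f g G) h = Lf k"
    using \<open>g v i < length (G ! v)\<close> h(1) by (intro bexI[of _ "(v, g v i)"]) simp_all
qed

definition phi :: "(nat \<Rightarrow> nat \<Rightarrow> nat) \<Rightarrow> nat \<times> nat \<Rightarrow> nat \<times> nat" where
  "phi g h = (fst h, g (fst h) (snd h))"

lemma phi_inj: assumes P: "isperm f g G" shows "inj_on (phi g) (half_edges G)"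
proof (rule inj_onI)
  fix h h' assume h: "h \<in> half_edges G" "h' \<in> half_edges G" "phi g h = phi g h'"
  obtain v i where hv: "h = (v, i)" by (cases h)
  obtain v' i' where hv': "h' = (v', i')" by (cases h')
  have e: "v = v'" "g v i = g v i'" using h(3) unfolding hv hv' phi_def by auto
  have "i = f v (g v i)" using isperm_D[OF P, of v i] h(1) hv by simp
  also have "\<dots> = f v (g v i')" using e(2) by simp
  also have "\<dots> = i'" using isperm_D[OF P, of v' i'] h(2) hv' e(1) by simp
  finally show "h = h'" using hv hv' e by simp
qed

lemma phi_img:
  assumes P: "isperm f g G" and A: "\<And>v i. v < length G \<Longrightarrow> i < length (G ! v) \<Longrightarrow> Q (PG f g G ! v ! g v i) = Q' (G ! v ! i)"
  shows "phi g ` {h \<in> half_edges G. Q' (hend_at G h)} = {h \<in> half_edges (PG f g G). Q (hend_at (PG f g G) h)}"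
proof (intro set_eqI iffI)
  fix h assume "h \<in> phi g ` {h \<in> half_edges G. Q' (hend_at G h)}"
  then obtain v i where vi: "v < length G" "i < length (G ! v)" "Q' (G ! v ! i)" "h = (v, g v i)"
    unfolding phi_def by auto
  then show "h \<in> {h \<in> half_edges (PG f g G). Q (hend_at (PG f g G) h)}"
    using A[OF vi(1,2)] isperm_D[OF P vi(1,2)] by simp
next
  fix h assume "h \<in> {h \<in> half_edges (PG f g G). Q (hend_at (PG f g G) h)}"
  then obtain v i where vi: "v < length G" "i < length (G ! v)" "Q (PG f g G ! v ! i)" "h = (v, i)"
    by (cases h) auto
  have fi: "f v i < length (G ! v)" "g v (f v i) = i" using isperm_D[OF P vi(1,2)] by simp_all
  have "Q' (G ! v ! f v i)" using A[OF vi(1) fi(1)] vi(3) fi(2) by simp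
  then have "(v, f v i) \<in> {h \<in> half_edges G. Q' (hend_at G h)}" using vi fi by simp
  moreover have "h = phi g (v, f v i)" using vi fi unfolding phi_def by simp
  ultimately show "h \<in> phi g ` {h \<in> half_edges G. Q' (hend_at G h)}" by blast
qed

lemma isLf_PG:
  assumes P: "isperm f g G" "v < length G" "i < length (G ! v)"
  shows "(\<exists>k. PG f g G ! v ! g v i = Lf k) = (\<exists>k. G ! v ! i = Lf k)"
proof -
  have "PG f g G ! v ! g v i = renE g (G ! v ! f v (g v i))"
    using PG_nth[OF P(2) isperm_D(2)[OF P]] .
  then have "PG f g G ! v ! g v i = renE g (G ! v ! i)" using isperm_D(3)[OF P] by simp
  then show ?thesis by (cases "G ! v ! i") simp_all
qed

lemma isEd_PG:
  assumes P: "isperm f g G" "v < length G" "i < length (G ! v)"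
  shows "(\<exists>w j. PG f g G ! v ! g v i = Ed w j) = (\<exists>w j. G ! v ! i = Ed w j)"
proof -
  have "PG f g G ! v ! g v i = renE g (G ! v ! f v (g v i))"
    using PG_nth[OF P(2) isperm_D(2)[OF P]] .
  then have "PG f g G ! v ! g v i = renE g (G ! v ! i)" using isperm_D(3)[OF P] by simp
  then show ?thesis by (cases "G ! v ! i") simp_all
qed

lemma num_leaves_PG:
  assumes P: "isperm f g G"
  shows "num_leaves (PG f g G) = num_leaves G"
proof -
  have "leaf_halfedges (PG f g G) = phi g ` leaf_halfedges G"
    unfolding leaf_halfedges_def
    by (rule phi_img[OF P, symmetric]) (rule isLf_PG[OF P])
  moreover have "inj_on (phi g) (leaf_halfedges G)"
    by (rule inj_on_subset[OF phi_inj[OF P]]) (auto simp: leaf_halfedges_def)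
  ultimately show ?thesis unfolding num_leaves_def using card_image[of "phi g" "leaf_halfedges G"] by simp
qed

lemma num_edges_PG:
  assumes P: "isperm f g G"
  shows "num_edges (PG f g G) = num_edges G"
proof -
  have "edge_halfedges (PG f g G) = phi g ` edge_halfedges G"
    unfolding edge_halfedges_def
    by (rule phi_img[OF P, symmetric]) (rule isEd_PG[OF P])
  moreover have "inj_on (phi g) (edge_halfedges G)"
    by (rule inj_on_subset[OF phi_inj[OF P]]) (auto simp: edge_halfedges_def)
  ultimately show ?thesis unfolding num_edges_def using card_image[of "phi g" "edge_halfedges G"] by simp
qed


lemma wf_PG:
  assumes P: "isperm f g G" and wf: "wf_og G"
  shows "wf_og (PG f g G)"
proof -
  let ?H = "PG f g G"
  have c1: "(w, j') \<in> half_edges ?H \<and> (w, j') \<noteq> (v, i) \<and> hend_at ?H (w, j') = Ed v i"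
    if vi: "v < length G" "i < length (G ! v)" and e: "?H ! v ! i = Ed w j'" for v i w j'
  proof -
    have "\<exists>j. G ! v ! f v i = Ed w j \<and> j' = g w j" using e PG_Ed[OF vi, of f g w j'] by simp
    then obtain j where j: "G ! v ! f v i = Ed w j" "j' = g w j" by blast
    have fi: "f v i < length (G ! v)" "g v (f v i) = i" using isperm_D[OF P vi] by simp_all
    have pw: "w < length G" "j < length (G ! w)" "(w, j) \<noteq> (v, f v i)" "G ! w ! j = Ed v (f v i)"
      using wf_partner[OF wf vi(1) fi(1) j(1)] by blast+
    have gj: "g w j < length (G ! w)" "f w (g w j) = j" using isperm_D[OF P pw(1,2)] by simp_all
    have "?H ! w ! g w j = Ed v i" using PG_nth[OF pw(1) gj(1)] gj(2) pw(4) fi(2) by simp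
    moreover have "(w, g w j) \<noteq> (v, i)"
    proof
      assume "(w, g w j) = (v, i)"
      then have "w = v" "g w j = i" by auto
      then have "j = f v (g v j)" using gj(2) by simp
      then have "j = f v i" using \<open>g w j = i\<close> \<open>w = v\<close> by simp
      then show False using pw(3) \<open>w = v\<close> by simp
    qed
    ultimately show ?thesis using j(2) pw(1) gj(1) by simp
  qed
  have c2: "(v, i) = (v', i')"
    if vi: "v < length G" "i < length (G ! v)" "?H ! v ! i = Lf k"
      and vi': "v' < length G" "i' < length (G ! v')" "?H ! v' ! i' = Lf k" for v i v' i' k
  proof -
    have a: "G ! v ! f v i = Lf k" "G ! v' ! f v' i' = Lf k"
      using PG_Lf[OF vi(1,2), of f g k] PG_Lf[OF vi'(1,2), of f g k] vi(3) vi'(3) by simp_all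
    have fi: "f v i < length (G ! v)" "g v (f v i) = i" using isperm_D[OF P vi(1,2)] by simp_all
    have fi': "f v' i' < length (G ! v')" "g v' (f v' i') = i'" using isperm_D[OF P vi'(1,2)] by simp_all
    have "v' = v \<and> f v' i' = f v i" using wf_leaf_unique[OF wf vi(1) fi(1) a(1) vi'(1) fi'(1) a(2)] .
    then have vv: "v' = v" and ff: "f v' i' = f v i" by auto
    have "i = g v (f v i)" using fi(2) by simp
    also have "\<dots> = g v' (f v' i')" using vv ff by simp
    also have "\<dots> = i'" using fi'(2) .
    finally show ?thesis using vv by simp
  qed
  have c3: "{k. \<exists>h \<in> half_edges ?H. hend_at ?H h = Lf k} = {..<num_leaves ?H}"
    unfolding labels_PG[OF P] num_leaves_PG[OF P] using wf unfolding wf_og_def by (elim conjE)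
  have d1: "\<forall>h \<in> half_edges ?H. \<forall>w j. hend_at ?H h = Ed w j \<longrightarrow>
         (w, j) \<in> half_edges ?H \<and> (w, j) \<noteq> h \<and> hend_at ?H (w, j) = Ed (fst h) (snd h)"
  proof (intro ballI allI impI)
    fix h w j assume "h \<in> half_edges ?H" "hend_at ?H h = Ed w j"
    moreover obtain v i where "h = (v, i)" by (cases h)
    ultimately have "v < length G" "i < length (G ! v)" "?H ! v ! i = Ed w j" by simp_all
    from c1[OF this] show "(w, j) \<in> half_edges ?H \<and> (w, j) \<noteq> h \<and> hend_at ?H (w, j) = Ed (fst h) (snd h)"
      using \<open>h = (v, i)\<close> by simp
  qed
  have d2: "\<forall>h \<in> half_edges ?H. \<forall>h' \<in> half_edges ?H. \<forall>k.
         hend_at ?H h = Lf k \<and> hend_at ?H h' = Lf k \<longrightarrow> h = h'"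
  proof (intro ballI allI impI)
    fix h h' k assume "h \<in> half_edges ?H" "h' \<in> half_edges ?H" "hend_at ?H h = Lf k \<and> hend_at ?H h' = Lf k"
    moreover obtain v i where hv: "h = (v, i)" by (cases h)
    moreover obtain v' i' where hv': "h' = (v', i')" by (cases h')
    ultimately have "v < length G" "i < length (G ! v)" "?H ! v ! i = Lf k"
      "v' < length G" "i' < length (G ! v')" "?H ! v' ! i' = Lf k" by simp_all
    from c2[OF this] show "h = h'" using hv hv' by simp
  qed
  show ?thesis unfolding wf_og_def using d1 d2 c3 by (intro conjI)
qed

lemma conn_PG: assumes "isperm f g G" shows "og_connected (PG f g G) = og_connected G"
proof -
  have "{(x, y). adj (PG f g G) x y} = {(x, y). adj G x y}" using adj_PG[OF assms] by simp
  then show ?thesis unfolding og_connected_def by simp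
qed

lemma tree_PG: assumes P: "isperm f g G" and T: "is_tree G" shows "is_tree (PG f g G)"
proof -
  have "wf_og G" "og_connected G" "num_edges G + 1 = length G" using T unfolding is_tree_def by blast+
  then show ?thesis unfolding is_tree_def using wf_PG[OF P] conn_PG[OF P] num_edges_PG[OF P] by simp
qed

lemma cyc_tree_PG: assumes P: "isperm f g G" and T: "cyc_tree G" shows "cyc_tree (PG f g G)"
proof -
  have "is_tree G" "num_leaves G \<ge> 1" using T unfolding cyc_tree_def by blast+
  then show ?thesis unfolding cyc_tree_def using tree_PG[OF P] num_leaves_PG[OF P] by simp
qed

lemma leaf_at_PG:
  assumes P: "isperm f g G" and wf: "wf_og G" and k: "k < num_leaves G"
  shows "leaf_at (PG f g G) k = (fst (leaf_at G k), g (fst (leaf_at G k)) (snd (leaf_at G k)))"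
proof -
  obtain v i where vi: "leaf_at G k = (v, i)" by (cases "leaf_at G k")
  have p: "v < length G" "i < length (G ! v)" "G ! v ! i = Lf k" using leaf_at_props[OF wf k] vi by simp_all
  have gi: "g v i < length (G ! v)" "f v (g v i) = i" using isperm_D[OF P p(1,2)] by simp_all
  have "PG f g G ! v ! g v i = Lf k" using PG_nth[OF p(1) gi(1)] gi(2) p(3) by simp
  then have "leaf_at (PG f g G) k = (v, g v i)"
    using leaf_at_eq[OF wf_PG[OF P wf], of v "g v i" k] p(1) gi(1) by simp
  then show ?thesis using vi by simp
qed

lemma isperm_swap: "isperm f g G \<Longrightarrow> isperm g f (PG f g G)"
  unfolding isperm_def by simp

lemma PG_PG:
  assumes P: "isperm f g G" and wf: "wf_og G"
  shows "PG g f (PG f g G) = G"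
proof (rule nth_equalityI)
  fix v assume v: "v < length (PG g f (PG f g G))"
  then have v': "v < length G" by simp
  show "PG g f (PG f g G) ! v = G ! v"
  proof (rule nth_equalityI)
    fix i assume "i < length (PG g f (PG f g G) ! v)"
    then have i: "i < length (G ! v)" using v' by simp
    have gi: "g v i < length (G ! v)" "f v (g v i) = i" using isperm_D[OF P v' i] by simp_all
    have "PG g f (PG f g G) ! v ! i = renE f (PG f g G ! v ! g v i)"
      using PG_nth[of v "PG f g G" i g f] v' i by simp
    also have "\<dots> = renE f (renE g (G ! v ! i))" using PG_nth[OF v' gi(1)] gi(2) by simp
    also have "\<dots> = G ! v ! i"
    proof (cases "G ! v ! i")
      case (Ed w j)
      have pw: "w < length G" "j < length (G ! w)" using wf_partner[OF wf v' i Ed] by blast+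
      show ?thesis using Ed isperm_D(3)[OF P pw] by simp
    qed simp
    finally show "PG g f (PG f g G) ! v ! i = G ! v ! i" .
  qed (use v' in simp)
qed simp

lemma subst_len[simp]: "length (subst p qs \<sigma>) = length \<sigma>"
  by (simp add: subst_def)

lemma subst_nth:
  "x < length \<sigma> \<Longrightarrow> subst p qs \<sigma> ! x = map (tr_hend p qs \<sigma> (\<sigma> ! x)) (qs ! (\<sigma> ! x) ! rank \<sigma> x)"
  by (simp add: subst_def)

lemma tr_hend_Ed[simp]: "tr_hend p qs \<sigma> l (Ed w j) = Ed (pos \<sigma> l w) j"
  by (simp add: tr_hend_def)

lemma tr_hend_Lf: "tr_hend p qs \<sigma> l (Lf i) = (case p ! l ! i of Lf k \<Rightarrow> Lf k
   | Ed l' i' \<Rightarrow> Ed (pos \<sigma> l' (fst (leaf_at (qs ! l') i'))) (snd (leaf_at (qs ! l') i')))"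
  by (simp add: tr_hend_def)

lemma tr_hend_Lf_Lf: "p ! l ! i = Lf k \<Longrightarrow> tr_hend p qs \<sigma> l (Lf i) = Lf k"
  by (simp add: tr_hend_Lf)

lemma tr_hend_Lf_Ed: "p ! l ! i = Ed l' i' \<Longrightarrow>
   tr_hend p qs \<sigma> l (Lf i) = Ed (pos \<sigma> l' (fst (leaf_at (qs ! l') i'))) (snd (leaf_at (qs ! l') i'))"
  by (simp add: tr_hend_Lf)

section \<open>Leaf relabelling\<close>

definition relE :: "(nat \<Rightarrow> nat) \<Rightarrow> hend \<Rightarrow> hend" where
  "relE s e = (case e of Lf m \<Rightarrow> Lf (s m) | Ed w j \<Rightarrow> Ed w j)"

lemma relE_simps[simp]: "relE s (Lf m) = Lf (s m)" "relE s (Ed w j) = Ed w j"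
  by (simp_all add: relE_def)

definition relabelF :: "(nat \<Rightarrow> nat) \<Rightarrow> og \<Rightarrow> og" where
  "relabelF s G = map (map (relE s)) G"

lemma relabelF_len[simp]: "length (relabelF s G) = length G"
  and relabelF_len2[simp]: "v < length G \<Longrightarrow> length (relabelF s G ! v) = length (G ! v)"
  and relabelF_nth: "v < length G \<Longrightarrow> i < length (G ! v) \<Longrightarrow> relabelF s G ! v ! i = relE s (G ! v ! i)"
  by (simp_all add: relabelF_def)

lemma relabelF_id: "relabelF (\<lambda>i. i) G = G"
proof -
  have "relE (\<lambda>i. i) = id" by (rule ext) (simp add: relE_def split: hend.split)
  then show ?thesis by (simp add: relabelF_def)
qed

lemma half_edges_relabelF[simp]: "half_edges (relabelF s G) = half_edges G"
  by (auto simp: half_edges_def)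

lemma relabelF_isLf: "v < length G \<Longrightarrow> i < length (G ! v) \<Longrightarrow>
    (\<exists>k. relabelF s G ! v ! i = Lf k) = (\<exists>k. G ! v ! i = Lf k)"
  by (cases "G ! v ! i") (simp_all add: relabelF_nth)

lemma relabelF_Ed: "v < length G \<Longrightarrow> i < length (G ! v) \<Longrightarrow>
    (relabelF s G ! v ! i = Ed w j) = (G ! v ! i = Ed w j)"
  by (cases "G ! v ! i") (simp_all add: relabelF_nth)

lemma relabelF_Lf: "v < length G \<Longrightarrow> i < length (G ! v) \<Longrightarrow>
    (relabelF s G ! v ! i = Lf k) = (\<exists>m. G ! v ! i = Lf m \<and> k = s m)"
  by (cases "G ! v ! i") (auto simp: relabelF_nth)

lemma leaf_halfedges_relabelF[simp]: "leaf_halfedges (relabelF s G) = leaf_halfedges G"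
  unfolding leaf_halfedges_def using relabelF_isLf by fastforce

lemma edge_halfedges_relabelF[simp]: "edge_halfedges (relabelF s G) = edge_halfedges G"
  unfolding edge_halfedges_def using relabelF_Ed by fastforce

lemma num_leaves_relabelF[simp]: "num_leaves (relabelF s G) = num_leaves G"
  by (simp add: num_leaves_def)

lemma num_edges_relabelF[simp]: "num_edges (relabelF s G) = num_edges G"
  by (simp add: num_edges_def)

lemma adj_relabelF[simp]: "adj (relabelF s G) a b = adj G a b"
  unfolding adj_iff using relabelF_Ed by fastforce

lemma av_relabelF[simp]: "av (relabelF s G) v = av G v"
  by (simp add: av_def)

lemma conn_relabelF[simp]: "og_connected (relabelF s G) = og_connected G"
  by (simp add: og_connected_def)


lemma wf_relabelF:
  assumes wf: "wf_og G" and inj: "inj_on s {..<num_leaves G}" and sur: "s ` {..<num_leaves G} = {..<num_leaves G}"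
  shows "wf_og (relabelF s G)"
proof -
  let ?H = "relabelF s G"
  have d1: "\<forall>h \<in> half_edges ?H. \<forall>w j. hend_at ?H h = Ed w j \<longrightarrow>
         (w, j) \<in> half_edges ?H \<and> (w, j) \<noteq> h \<and> hend_at ?H (w, j) = Ed (fst h) (snd h)"
  proof (intro ballI allI impI)
    fix h w j assume h: "h \<in> half_edges ?H" "hend_at ?H h = Ed w j"
    obtain v i where hv: "h = (v, i)" by (cases h)
    have vi: "v < length G" "i < length (G ! v)" using h(1) hv by simp_all
    have e: "G ! v ! i = Ed w j" using h(2) hv relabelF_Ed[OF vi] by simp
    have pw: "w < length G" "j < length (G ! w)" "(w, j) \<noteq> (v, i)" "G ! w ! j = Ed v i"
      using wf_partner[OF wf vi e] by blast+
    have "?H ! w ! j = Ed v i" using relabelF_Ed[OF pw(1,2)] pw(4) by simp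
    then show "(w, j) \<in> half_edges ?H \<and> (w, j) \<noteq> h \<and> hend_at ?H (w, j) = Ed (fst h) (snd h)"
      using pw hv by simp
  qed
  have d2: "\<forall>h \<in> half_edges ?H. \<forall>h' \<in> half_edges ?H. \<forall>k.
         hend_at ?H h = Lf k \<and> hend_at ?H h' = Lf k \<longrightarrow> h = h'"
  proof (intro ballI allI impI)
    fix h h' k assume h: "h \<in> half_edges ?H" "h' \<in> half_edges ?H" "hend_at ?H h = Lf k \<and> hend_at ?H h' = Lf k"
    obtain v i where hv: "h = (v, i)" by (cases h)
    obtain v' i' where hv': "h' = (v', i')" by (cases h')
    have vi: "v < length G" "i < length (G ! v)" "v' < length G" "i' < length (G ! v')"
      using h(1,2) hv hv' by simp_all
    obtain m where m: "G ! v ! i = Lf m" "k = s m" using h(3) hv relabelF_Lf[OF vi(1,2)] by auto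
    obtain m' where m': "G ! v' ! i' = Lf m'" "k = s m'" using h(3) hv' relabelF_Lf[OF vi(3,4)] by auto
    have "m < num_leaves G" "m' < num_leaves G" using wf_leaf_lt[OF wf] vi m m' by blast+
    then have "m = m'" using inj m(2) m'(2) unfolding inj_on_def by auto
    then have "v' = v \<and> i' = i" using wf_leaf_unique[OF wf vi(1,2) m(1) vi(3,4)] m' by simp
    then show "h = h'" using hv hv' by simp
  qed
  have d3: "{k. \<exists>h \<in> half_edges ?H. hend_at ?H h = Lf k} = {..<num_leaves ?H}"
  proof -
    have "{k. \<exists>h \<in> half_edges ?H. hend_at ?H h = Lf k} = s ` {k. \<exists>h \<in> half_edges G. hend_at G h = Lf k}"
    proof (intro set_eqI iffI)
      fix k assume "k \<in> {k. \<exists>h \<in> half_edges ?H. hend_at ?H h = Lf k}"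
      then obtain v i where vi: "v < length G" "i < length (G ! v)" "?H ! v ! i = Lf k" by auto
      then obtain m where "G ! v ! i = Lf m" "k = s m" using relabelF_Lf[OF vi(1,2)] by auto
      then show "k \<in> s ` {k. \<exists>h \<in> half_edges G. hend_at G h = Lf k}" using vi
        by (intro image_eqI[of _ _ m] CollectI bexI[of _ "(v, i)"]) simp_all
    next
      fix k assume "k \<in> s ` {k. \<exists>h \<in> half_edges G. hend_at G h = Lf k}"
      then obtain m v i where vi: "v < length G" "i < length (G ! v)" "G ! v ! i = Lf m" "k = s m" by auto
      then have "?H ! v ! i = Lf k" using relabelF_nth[OF vi(1,2)] by simp
      then show "k \<in> {k. \<exists>h \<in> half_edges ?H. hend_at ?H h = Lf k}" using vi
        by (intro CollectI bexI[of _ "(v, i)"]) simp_all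
    qed
    also have "\<dots> = s ` {..<num_leaves G}" using wf unfolding wf_og_def by (elim conjE) simp
    finally show ?thesis using sur by simp
  qed
  show ?thesis unfolding wf_og_def using d1 d2 d3 by (intro conjI)
qed

lemma tree_relabelF:
  assumes T: "is_tree G" and inj: "inj_on s {..<num_leaves G}" and sur: "s ` {..<num_leaves G} = {..<num_leaves G}"
  shows "is_tree (relabelF s G)"
  using T wf_relabelF[OF _ inj sur] unfolding is_tree_def by simp

lemma cyc_tree_relabelF:
  assumes T: "cyc_tree G" and inj: "inj_on s {..<num_leaves G}" and sur: "s ` {..<num_leaves G} = {..<num_leaves G}"
  shows "cyc_tree (relabelF s G)"
  using T tree_relabelF[OF _ inj sur] unfolding cyc_tree_def by simp

lemma leaf_at_relabelF:
  assumes wf: "wf_og G" and inj: "inj_on s {..<num_leaves G}" and sur: "s ` {..<num_leaves G} = {..<num_leaves G}"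
    and m: "m < num_leaves G"
  shows "leaf_at (relabelF s G) (s m) = leaf_at G m"
proof -
  obtain v i where vi: "leaf_at G m = (v, i)" by (cases "leaf_at G m")
  have p: "v < length G" "i < length (G ! v)" "G ! v ! i = Lf m" using leaf_at_props[OF wf m] vi by simp_all
  have "relabelF s G ! v ! i = Lf (s m)" using relabelF_nth[OF p(1,2)] p(3) by simp
  then have "leaf_at (relabelF s G) (s m) = (v, i)"
    using leaf_at_eq[OF wf_relabelF[OF wf inj sur], of v i "s m"] p by simp
  then show ?thesis using vi by simp
qed

lemma bw_inj: "inj_on (bw \<rho>) A"
  by (rule inj_onI) (metis fw_bw)

lemma bw_img: "\<rho> < d \<Longrightarrow> bw \<rho> ` {..<d} = {..<d}"
proof (intro set_eqI iffI)
  fix x assume "\<rho> < d" "x \<in> bw \<rho> ` {..<d}" then show "x \<in> {..<d}" using bw_lt by auto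
next
  fix x assume r: "\<rho> < d" "x \<in> {..<d}"
  then have "fw \<rho> x < d" using fw_lt by simp
  moreover have "x = bw \<rho> (fw \<rho> x)" by simp
  ultimately show "x \<in> bw \<rho> ` {..<d}" by blast
qed

section \<open>Corollas and permuted corollas\<close>

definition PT :: "(nat \<Rightarrow> nat) \<Rightarrow> nat \<Rightarrow> og" where
  "PT s d = [map (\<lambda>i. Lf (s i)) [0..<d]]"

lemma PT_relabel: "PT s d = relabelF s (corolla d)"
  by (simp add: PT_def relabelF_def corolla_def)

lemma corolla_PT: "corolla d = PT (\<lambda>i. i) d"
  by (simp add: PT_def corolla_def)

lemma half_edges_corolla: "half_edges (corolla d) = {0} \<times> {..<d}"
  by (auto simp: half_edges_def corolla_def)

lemma corolla_nth: "i < d \<Longrightarrow> corolla d ! 0 ! i = Lf i"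
  by (simp add: corolla_def)

lemma leaf_halfedges_corolla: "leaf_halfedges (corolla d) = {0} \<times> {..<d}"
  by (auto simp: leaf_halfedges_def half_edges_def corolla_def)

lemma edge_halfedges_corolla: "edge_halfedges (corolla d) = {}"
  by (auto simp: edge_halfedges_def half_edges_def corolla_def)

lemma num_leaves_corolla[simp]: "num_leaves (corolla d) = d"
  by (simp add: num_leaves_def leaf_halfedges_corolla card_cartesian_product)

lemma wf_corolla: "wf_og (corolla d)"
proof -
  have d1: "\<forall>h \<in> half_edges (corolla d). \<forall>w j. hend_at (corolla d) h = Ed w j \<longrightarrow> False"
    by (auto simp: half_edges_corolla corolla_def)
  have d2: "\<forall>h \<in> half_edges (corolla d). \<forall>h' \<in> half_edges (corolla d). \<forall>k.
         hend_at (corolla d) h = Lf k \<and> hend_at (corolla d) h' = Lf k \<longrightarrow> h = h'"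
    by (auto simp: half_edges_corolla corolla_def)
  have d3: "{k. \<exists>h \<in> half_edges (corolla d). hend_at (corolla d) h = Lf k} = {..<num_leaves (corolla d)}"
  proof (intro set_eqI iffI)
    fix k assume "k \<in> {k. \<exists>h \<in> half_edges (corolla d). hend_at (corolla d) h = Lf k}"
    then obtain i where "i < d" "corolla d ! 0 ! i = Lf k" by (auto simp: half_edges_corolla)
    then show "k \<in> {..<num_leaves (corolla d)}" using corolla_nth by simp
  next
    fix k assume "k \<in> {..<num_leaves (corolla d)}"
    then have "k < d" by simp
    then show "k \<in> {k. \<exists>h \<in> half_edges (corolla d). hend_at (corolla d) h = Lf k}"
      using corolla_nth by (intro CollectI bexI[of _ "(0, k)"]) (simp_all add: half_edges_corolla)
  qed
  show ?thesis unfolding wf_og_def using d1 d2 d3 by blast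
qed

lemma cyc_tree_corolla: "d \<ge> 1 \<Longrightarrow> cyc_tree (corolla d)"
  unfolding cyc_tree_def is_tree_def og_connected_def num_edges_def
  by (simp add: wf_corolla edge_halfedges_corolla) (simp add: corolla_def)

lemma leaf_at_corolla: "m < d \<Longrightarrow> leaf_at (corolla d) m = (0, m)"
  by (rule leaf_at_eq[OF wf_corolla]) (simp_all add: corolla_def)

lemma cyc_tree_PT:
  assumes "d \<ge> 1" "inj_on s {..<d}" "s ` {..<d} = {..<d}"
  shows "cyc_tree (PT s d)"
  unfolding PT_relabel using cyc_tree_relabelF[OF cyc_tree_corolla[OF assms(1)]] assms(2,3) by simp

lemma leaf_at_PT:
  assumes "inj_on s {..<d}" "s ` {..<d} = {..<d}" "m < d"
  shows "leaf_at (PT s d) (s m) = (0, m)"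
  unfolding PT_relabel using leaf_at_relabelF[OF wf_corolla[of d], of s m] assms leaf_at_corolla by simp

lemma PT_len[simp]: "length (PT s d) = 1" "length (PT s d ! 0) = d"
  by (simp_all add: PT_def)

lemma PT_nth: "i < d \<Longrightarrow> PT s d ! 0 ! i = Lf (s i)"
  by (simp add: PT_def)


lemma isperm_bij:
  assumes P: "isperm f g X" and v: "v < length X"
  shows "inj_on (f v) {..<length (X ! v)}" "f v ` {..<length (X ! v)} = {..<length (X ! v)}"
    "inj_on (g v) {..<length (X ! v)}" "g v ` {..<length (X ! v)} = {..<length (X ! v)}"
proof -
  note D = isperm_D[OF P v]
  show "inj_on (f v) {..<length (X ! v)}" by (rule inj_onI) (metis D(4) lessThan_iff)
  show "inj_on (g v) {..<length (X ! v)}" by (rule inj_onI) (metis D(3) lessThan_iff)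
  show "f v ` {..<length (X ! v)} = {..<length (X ! v)}"
  proof (intro set_eqI iffI)
    fix x assume "x \<in> f v ` {..<length (X ! v)}" then show "x \<in> {..<length (X ! v)}" using D(1) by auto
  next
    fix x assume x: "x \<in> {..<length (X ! v)}"
    then have "x = f v (g v x)" "g v x \<in> {..<length (X ! v)}" using D(2,3) by auto
    then show "x \<in> f v ` {..<length (X ! v)}" by blast
  qed
  show "g v ` {..<length (X ! v)} = {..<length (X ! v)}"
  proof (intro set_eqI iffI)
    fix x assume "x \<in> g v ` {..<length (X ! v)}" then show "x \<in> {..<length (X ! v)}" using D(2) by auto
  next
    fix x assume x: "x \<in> {..<length (X ! v)}"
    then have "x = g v (f v x)" "f v x \<in> {..<length (X ! v)}" using D(1,4) by auto
    then show "x \<in> g v ` {..<length (X ! v)}" by blast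
  qed
qed

lemma E1:
  assumes wf: "wf_og X" and P: "isperm f g X"
  shows "subst X (map (\<lambda>v. PT (f v) (length (X ! v))) [0..<length X]) [0..<length X] = PG f g X"
    (is "subst X ?qs ?\<sigma> = _")
proof (rule nth_equalityI)
  fix x assume "x < length (subst X ?qs ?\<sigma>)"
  then have x: "x < length X" by simp
  have sx: "?\<sigma> ! x = x" "rank ?\<sigma> x = 0" using x rank_upt by simp_all
  have "subst X ?qs ?\<sigma> ! x = map (tr_hend X ?qs ?\<sigma> x) (PT (f x) (length (X ! x)) ! 0)"
    using subst_nth[of x ?\<sigma>] x sx by simp
  also have "\<dots> = map (\<lambda>i. renE g (X ! x ! f x i)) [0..<length (X ! x)]"
  proof (rule nth_equalityI)
    fix i assume "i < length (map (tr_hend X ?qs ?\<sigma> x) (PT (f x) (length (X ! x)) ! 0))"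
    then have i: "i < length (X ! x)" by simp
    have fi: "f x i < length (X ! x)" using isperm_D[OF P x i] by simp
    have l: "map (tr_hend X ?qs ?\<sigma> x) (PT (f x) (length (X ! x)) ! 0) ! i = tr_hend X ?qs ?\<sigma> x (Lf (f x i))"
      using i PT_nth[OF i] by simp
    show "map (tr_hend X ?qs ?\<sigma> x) (PT (f x) (length (X ! x)) ! 0) ! i = map (\<lambda>i. renE g (X ! x ! f x i)) [0..<length (X ! x)] ! i"
    proof (cases "X ! x ! f x i")
      case (Lf k)
      then show ?thesis using l i tr_hend_Lf_Lf[OF Lf] by simp
    next
      case (Ed l' i')
      have pw: "l' < length X" "i' < length (X ! l')" using wf_partner[OF wf x fi Ed] by blast+
      have gi: "g l' i' < length (X ! l')" "f l' (g l' i') = i'" using isperm_D[OF P pw] by simp_all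
      have "leaf_at (PT (f l') (length (X ! l'))) (f l' (g l' i')) = (0, g l' i')"
        using leaf_at_PT[OF isperm_bij(1,2)[OF P pw(1)] gi(1)] .
      then have la: "leaf_at (?qs ! l') i' = (0, g l' i')" using gi(2) pw(1) by simp
      have "tr_hend X ?qs ?\<sigma> x (Lf (f x i)) = Ed (pos ?\<sigma> l' 0) (g l' i')"
        using tr_hend_Lf_Ed[OF Ed] la by simp
      then show ?thesis using l i Ed pos_upt[OF pw(1)] by simp
    qed
  qed simp
  also have "\<dots> = PG f g X ! x" using x by (simp add: PG_def)
  finally show "subst X ?qs ?\<sigma> ! x = PG f g X ! x" .
qed simp

lemma E3:
  assumes wf: "wf_og T" and lab: "num_leaves T \<le> d"
  shows "subst (PT s d) [T] (replicate (length T) 0) = relabelF s T"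
    (is "subst _ _ ?\<sigma> = _")
proof (rule nth_equalityI)
  fix x assume "x < length (subst (PT s d) [T] ?\<sigma>)"
  then have x: "x < length T" by simp
  have "subst (PT s d) [T] ?\<sigma> ! x = map (tr_hend (PT s d) [T] ?\<sigma> 0) (T ! x)"
    using subst_nth[of x ?\<sigma>] x rank_rep[OF x] by simp
  also have "\<dots> = relabelF s T ! x"
  proof (rule nth_equalityI)
    fix i assume "i < length (map (tr_hend (PT s d) [T] ?\<sigma> 0) (T ! x))"
    then have i: "i < length (T ! x)" by simp
    show "map (tr_hend (PT s d) [T] ?\<sigma> 0) (T ! x) ! i = relabelF s T ! x ! i"
    proof (cases "T ! x ! i")
      case (Lf m)
      have "m < d" using wf_leaf_lt[OF wf x i Lf] lab by simp
      then have "PT s d ! 0 ! m = Lf (s m)" by (rule PT_nth)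
      then show ?thesis using i x Lf tr_hend_Lf_Lf relabelF_nth by simp
    next
      case (Ed w j)
      have "w < length T" using wf_partner[OF wf x i Ed] by blast
      then show ?thesis using i x Ed pos_rep relabelF_nth by simp
    qed
  qed (use x in simp)
  finally show "subst (PT s d) [T] ?\<sigma> ! x = relabelF s T ! x" .
qed simp

lemma PG_id: "PG (\<lambda>v i. i) (\<lambda>v i. i) X = X"
proof (rule nth_equalityI)
  fix v assume "v < length (PG (\<lambda>v i. i) (\<lambda>v i. i) X)"
  then have v: "v < length X" by simp
  show "PG (\<lambda>v i. i) (\<lambda>v i. i) X ! v = X ! v"
  proof (rule nth_equalityI)
    fix i assume "i < length (PG (\<lambda>v i. i) (\<lambda>v i. i) X ! v)"
    then have i: "i < length (X ! v)" using v by simp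
    show "PG (\<lambda>v i. i) (\<lambda>v i. i) X ! v ! i = X ! v ! i"
      using PG_nth[OF v i] by (cases "X ! v ! i") simp_all
  qed (use v in simp)
qed simp

lemma isperm_id: "isperm (\<lambda>v i. i) (\<lambda>v i. i) X"
  by (simp add: isperm_def)

lemma subst_corollas:
  assumes wf: "wf_og X"
  shows "subst X (map (\<lambda>v. corolla (length (X ! v))) [0..<length X]) [0..<length X] = X"
  using E1[OF wf isperm_id] unfolding PG_id corolla_PT .


section \<open>Identity laws\<close>

lemma cyc_tree_D: "cyc_tree G \<Longrightarrow> is_tree G" "cyc_tree G \<Longrightarrow> wf_og G" "cyc_tree G \<Longrightarrow> 0 < num_leaves G"
  unfolding cyc_tree_def is_tree_def by auto

lemma deg_pos:
  assumes "cyc_tree G" "v < length G"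
  shows "0 < length (G ! v)"
  using dir_lt[OF cyc_tree_D(1)[OF assms(1)] assms(2) cyc_tree_D(3)[OF assms(1)]] by linarith

lemma corolla_len[simp]: "length (corolla d) = 1"
  by (simp add: corolla_def)

lemma valid_D:
  assumes "valid_subst p qs \<sigma> q"
  shows "length qs = length p" "subst p qs \<sigma> = q" "set \<sigma> \<subseteq> {..<length p}"
    "\<And>l. l < length p \<Longrightarrow> cyc_tree (qs ! l)"
    "\<And>l. l < length p \<Longrightarrow> qs ! l \<noteq> []"
    "\<And>l. l < length p \<Longrightarrow> num_leaves (qs ! l) = length (p ! l)"
    "\<And>l. l < length p \<Longrightarrow> length (filter (\<lambda>y. \<sigma> ! y = l) [0..<length \<sigma>]) = length (qs ! l)"
  using assms unfolding valid_subst_def by (auto simp: count_eq)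

lemma map_corolla_eq: "map (\<lambda>row. corolla (length row)) p = map (\<lambda>v. corolla (length (p ! v))) [0..<length p]"
  by (rule nth_equalityI) simp_all

lemma ident_valid:
  assumes "cyc_tree p"
  shows "valid_subst p (map (\<lambda>row. corolla (length row)) p) [0..<length p] p"
proof -
  have wf: "wf_og p" using cyc_tree_D(2)[OF assms] .
  have f: "filter (\<lambda>y. y = l) [0..<length p] = [l]" if "l < length p" for l
  proof -
    have "[0..<length p] = [0..<l] @ l # [Suc l..<length p]"
    proof -
      have "[0..<l + (length p - l)] = [0..<l] @ [l..<l + (length p - l)]"
        by (rule upt_add_eq_append) simp
      then show ?thesis using that upt_conv_Cons[OF that] by simp
    qed
    then show ?thesis by (auto simp: filter_empty_conv)
  qed
  have c1: "\<forall>l < length p. cyc_tree (map (\<lambda>row. corolla (length row)) p ! l) \<and> map (\<lambda>row. corolla (length row)) p ! l \<noteq> []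
     \<and> num_leaves (map (\<lambda>row. corolla (length row)) p ! l) = length (p ! l)"
  proof (intro allI impI conjI)
    fix l assume l: "l < length p"
    have "1 \<le> length (p ! l)" using deg_pos[OF assms l] by linarith
    then show "cyc_tree (map (\<lambda>row. corolla (length row)) p ! l)" using cyc_tree_corolla l by simp
    show "map (\<lambda>row. corolla (length row)) p ! l \<noteq> []" using l corolla_len
      by (metis length_0_conv nth_map zero_neq_one)
    show "num_leaves (map (\<lambda>row. corolla (length row)) p ! l) = length (p ! l)" using l by simp
  qed
  have c2: "\<forall>l < length p. length (filter (\<lambda>y. y = l) [0..<length p]) = length (map (\<lambda>row. corolla (length row)) p ! l)"
    using f by simp
  have c3: "subst p (map (\<lambda>row. corolla (length row)) p) [0..<length p] = p"
    using subst_corollas[OF wf] map_corolla_eq[of p] by simp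
  have c4: "set [0..<length p] \<subseteq> {..<length p}" by auto
  show ?thesis unfolding valid_subst_def using c1 c2 c3 c4 by simp
qed

lemma comp_ident_left:
  assumes V: "valid_subst a qs \<sigma> b"
  shows "op_comp (op_ident b) (a, qs, \<sigma>, b) = (a, qs, \<sigma>, b)"
proof -
  note D = valid_D[OF V]
  have lb: "length b = length \<sigma>" using D(2) by auto
  have comp: "subst (qs ! l) (map (\<lambda>r. map (\<lambda>row. corolla (length row)) b ! pos \<sigma> l r) [0..<length (qs ! l)])
      (map (rank \<sigma>) (filter (\<lambda>y. \<sigma> ! y = l) [0..<length b])) = qs ! l" if l: "l < length a" for l
  proof -
    have c: "length (filter (\<lambda>y. \<sigma> ! y = l) [0..<length \<sigma>]) = length (qs ! l)" using D(7)[OF l] .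
    have r1: "map (rank \<sigma>) (filter (\<lambda>y. \<sigma> ! y = l) [0..<length b]) = [0..<length (qs ! l)]"
      using rank_map[of \<sigma> l] c lb by simp
    have r2: "map (\<lambda>r. map (\<lambda>row. corolla (length row)) b ! pos \<sigma> l r) [0..<length (qs ! l)]
        = map (\<lambda>r. corolla (length (qs ! l ! r))) [0..<length (qs ! l)]"
    proof (rule map_cong[OF refl])
      fix r assume "r \<in> set [0..<length (qs ! l)]"
      then have r: "r < length (filter (\<lambda>y. \<sigma> ! y = l) [0..<length \<sigma>])" using c by simp
      note pp = pos_props[OF r]
      have "b ! pos \<sigma> l r = map (tr_hend a qs \<sigma> l) (qs ! l ! r)"
        using subst_nth[of "pos \<sigma> l r" \<sigma> a qs] pp D(2) by simp
      then show "map (\<lambda>row. corolla (length row)) b ! pos \<sigma> l r = corolla (length (qs ! l ! r))"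
        using pp lb by simp
    qed
    show ?thesis unfolding r1 r2 using subst_corollas[OF cyc_tree_D(2)[OF D(4)[OF l]]] .
  qed
  have "map (\<lambda>l. subst (qs ! l) (map (\<lambda>r. map (\<lambda>row. corolla (length row)) b ! pos \<sigma> l r) [0..<length (qs ! l)])
      (map (rank \<sigma>) (filter (\<lambda>y. \<sigma> ! y = l) [0..<length b]))) [0..<length a] = map (\<lambda>l. qs ! l) [0..<length a]"
    using comp by simp
  also have "\<dots> = qs" using D(1) map_nth[of qs] by simp
  finally have e1: "map (\<lambda>l. subst (qs ! l) (map (\<lambda>r. map (\<lambda>row. corolla (length row)) b ! pos \<sigma> l r) [0..<length (qs ! l)])
      (map (rank \<sigma>) (filter (\<lambda>y. \<sigma> ! y = l) [0..<length b]))) [0..<length a] = qs" .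
  have e2: "map ((!) \<sigma>) [0..<length b] = \<sigma>" using lb by (simp add: map_nth)
  show ?thesis unfolding op_ident_def using e1 e2 by simp
qed

lemma comp_ident_right:
  assumes V: "valid_subst a qs \<sigma> b"
  shows "op_comp (a, qs, \<sigma>, b) (op_ident a) = (a, qs, \<sigma>, b)"
proof -
  note D = valid_D[OF V]
  let ?n = "length a"
  have sl: "y < ?n" if "y \<in> set \<sigma>" for y using D(3) that by auto
  have comp: "subst (map (\<lambda>row. corolla (length row)) a ! l)
        (map (\<lambda>r. qs ! pos [0..<?n] l r) [0..<length (map (\<lambda>row. corolla (length row)) a ! l)])
        (map (rank [0..<?n]) (filter (\<lambda>y. [0..<?n] ! y = l) \<sigma>)) = qs ! l" if l: "l < ?n" for l
  proof -
    have c0: "map (\<lambda>row. corolla (length row)) a ! l = corolla (length (a ! l))" using l by simp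
    have c1: "map (\<lambda>r. qs ! pos [0..<?n] l r) [0..<length (corolla (length (a ! l)))] = [qs ! l]"
      using pos_upt[OF l] by (simp add: corolla_def)
    have fe: "filter (\<lambda>y. [0..<?n] ! y = l) \<sigma> = filter (\<lambda>y. y = l) \<sigma>"
      by (rule filter_cong) (use sl in auto)
    have c2: "map (rank [0..<?n]) (filter (\<lambda>y. y = l) \<sigma>) = replicate (length (qs ! l)) 0"
    proof (rule nth_equalityI)
      show "length (map (rank [0..<?n]) (filter (\<lambda>y. y = l) \<sigma>)) = length (replicate (length (qs ! l)) 0)"
        using D(7)[OF l] count_eq[of \<sigma> l] by simp
    next
      fix k assume k: "k < length (map (rank [0..<?n]) (filter (\<lambda>y. y = l) \<sigma>))"
      then have "filter (\<lambda>y. y = l) \<sigma> ! k \<in> set (filter (\<lambda>y. y = l) \<sigma>)" by (intro nth_mem) simp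
      then have "filter (\<lambda>y. y = l) \<sigma> ! k = l" by simp
      then show "map (rank [0..<?n]) (filter (\<lambda>y. y = l) \<sigma>) ! k = replicate (length (qs ! l)) 0 ! k"
        using k rank_upt[OF l] D(7)[OF l] count_eq[of \<sigma> l] by simp
    qed
    have wfq: "wf_og (qs ! l)" using cyc_tree_D(2)[OF D(4)[OF l]] .
    have "subst (corolla (length (a ! l))) [qs ! l] (replicate (length (qs ! l)) 0) = qs ! l"
      using E3[OF wfq, of "length (a ! l)" "\<lambda>i. i"] D(6)[OF l] relabelF_id corolla_PT by simp
    then show ?thesis unfolding c0 c1 fe c2 .
  qed
  have "map (\<lambda>l. subst (map (\<lambda>row. corolla (length row)) a ! l)
        (map (\<lambda>r. qs ! pos [0..<?n] l r) [0..<length (map (\<lambda>row. corolla (length row)) a ! l)])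
        (map (rank [0..<?n]) (filter (\<lambda>y. [0..<?n] ! y = l) \<sigma>))) [0..<?n] = qs"
    using comp D(1) by (intro nth_equalityI) simp_all
  moreover have "map ((!) [0..<?n]) \<sigma> = \<sigma>"
    by (rule nth_equalityI) (use sl in auto)
  ultimately show ?thesis unfolding op_ident_def by simp
qed

locale SB =
  fixes p :: og and qs :: "og list" and \<sigma> :: "nat list"
  assumes Tp: "cyc_tree p"
    and lqs: "length qs = length p"
    and cq: "\<And>l. l < length p \<Longrightarrow> cyc_tree (qs ! l)"
    and nl: "\<And>l. l < length p \<Longrightarrow> num_leaves (qs ! l) = length (p ! l)"
    and s\<sigma>: "set \<sigma> \<subseteq> {..<length p}"
    and cnt: "\<And>l. l < length p \<Longrightarrow> length (filter (\<lambda>y. \<sigma> ! y = l) [0..<length \<sigma>]) = length (qs ! l)"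
begin

abbreviation "q \<equiv> subst p qs \<sigma>"

lemma wfp: "wf_og p" and treep: "is_tree p" and nlp: "0 < num_leaves p"
  using cyc_tree_D[OF Tp] by simp_all

lemma wfq: "l < length p \<Longrightarrow> wf_og (qs ! l)" and treeq: "l < length p \<Longrightarrow> is_tree (qs ! l)"
  using cyc_tree_D[OF cq] by simp_all

lemma connq: "l < length p \<Longrightarrow> og_connected (qs ! l)"
  using treeq unfolding is_tree_def by blast

lemma sig_lt: "x < length \<sigma> \<Longrightarrow> \<sigma> ! x < length p"
  using s\<sigma> nth_mem by blast

lemma rank_lt': "x < length \<sigma> \<Longrightarrow> rank \<sigma> x < length (qs ! (\<sigma> ! x))"
  using rank_lt[of x \<sigma>] cnt[OF sig_lt] by simp

lemma pos_p: assumes "l < length p" "r < length (qs ! l)"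
  shows "pos \<sigma> l r < length \<sigma>" "\<sigma> ! pos \<sigma> l r = l" "rank \<sigma> (pos \<sigma> l r) = r"
  using pos_props[of r \<sigma> l] cnt[OF assms(1)] assms(2) by simp_all

lemma Q_nth: "x < length \<sigma> \<Longrightarrow> q ! x = map (tr_hend p qs \<sigma> (\<sigma> ! x)) (qs ! (\<sigma> ! x) ! rank \<sigma> x)"
  by (rule subst_nth)

lemma Q_len2: "x < length \<sigma> \<Longrightarrow> length (q ! x) = length (qs ! (\<sigma> ! x) ! rank \<sigma> x)"
  by (simp add: Q_nth)

lemma Q_at: "x < length \<sigma> \<Longrightarrow> i < length (q ! x) \<Longrightarrow> q ! x ! i = tr_hend p qs \<sigma> (\<sigma> ! x) (qs ! (\<sigma> ! x) ! rank \<sigma> x ! i)"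
  by (simp add: Q_nth)

lemma leafq_props: assumes "l < length p" "m < length (p ! l)"
  shows "fst (leaf_at (qs ! l) m) < length (qs ! l)" "snd (leaf_at (qs ! l) m) < length (qs ! l ! fst (leaf_at (qs ! l) m))"
    "qs ! l ! fst (leaf_at (qs ! l) m) ! snd (leaf_at (qs ! l) m) = Lf m"
  using leaf_at_props[OF wfq[OF assms(1)]] nl[OF assms(1)] assms(2) by simp_all

lemma lbl_lt: assumes "l < length p" "r < length (qs ! l)" "c < length (qs ! l ! r)" "qs ! l ! r ! c = Lf m"
  shows "m < length (p ! l)"
  using wf_leaf_lt[OF wfq[OF assms(1)] assms(2-4)] nl[OF assms(1)] by simp

lemma ed_lt: assumes "l < length p" "r < length (qs ! l)" "c < length (qs ! l ! r)" "qs ! l ! r ! c = Ed w j"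
  shows "w < length (qs ! l)" "j < length (qs ! l ! w)"
  using wf_partner[OF wfq[OF assms(1)] assms(2-4)] by blast+

lemma adjQ_cases:
  assumes "adj q z z'"
  shows "z < length \<sigma> \<and> z' < length \<sigma> \<and>
     ((\<sigma> ! z' = \<sigma> ! z \<and> adj (qs ! (\<sigma> ! z)) (rank \<sigma> z) (rank \<sigma> z')) \<or>
      (\<exists>m c m' b. c < length (qs ! (\<sigma> ! z) ! rank \<sigma> z) \<and> qs ! (\<sigma> ! z) ! rank \<sigma> z ! c = Lf m
         \<and> m < length (p ! (\<sigma> ! z)) \<and> p ! (\<sigma> ! z) ! m = Ed (\<sigma> ! z') m'
         \<and> b < length (qs ! (\<sigma> ! z') ! rank \<sigma> z') \<and> qs ! (\<sigma> ! z') ! rank \<sigma> z' ! b = Lf m'))"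
proof -
  obtain c e where ce: "z < length q" "c < length (q ! z)" "q ! z ! c = Ed z' e"
    using assms unfolding adj_iff by blast
  have z: "z < length \<sigma>" using ce(1) by simp
  let ?l = "\<sigma> ! z" and ?r = "rank \<sigma> z"
  have l: "?l < length p" using sig_lt[OF z] .
  have r: "?r < length (qs ! ?l)" using rank_lt'[OF z] .
  have c: "c < length (qs ! ?l ! ?r)" using ce(2) Q_len2[OF z] by simp
  have qe: "q ! z ! c = tr_hend p qs \<sigma> ?l (qs ! ?l ! ?r ! c)" using Q_at[OF z ce(2)] .
  show ?thesis
  proof (cases "qs ! ?l ! ?r ! c")
    case (Ed w j)
    have w: "w < length (qs ! ?l)" using ed_lt[OF l r c Ed] by simp
    have z': "z' = pos \<sigma> ?l w" using qe ce(3) Ed by simp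
    note pp = pos_p[OF l w]
    have "adj (qs ! ?l) ?r w" unfolding adj_iff using r c Ed by blast
    then show ?thesis using z z' pp by simp
  next
    case (Lf m)
    have m: "m < length (p ! ?l)" using lbl_lt[OF l r c Lf] .
    show ?thesis
    proof (cases "p ! ?l ! m")
      case (Lf k)
      then show ?thesis using qe ce(3) \<open>qs ! ?l ! ?r ! c = Lf m\<close> tr_hend_Lf_Lf by simp
    next
      case (Ed l2 m')
      have pw: "l2 < length p" "m' < length (p ! l2)" using wf_partner[OF wfp l m Ed] by blast+
      note lp = leafq_props[OF pw]
      have z': "z' = pos \<sigma> l2 (fst (leaf_at (qs ! l2) m'))"
        using qe ce(3) \<open>qs ! ?l ! ?r ! c = Lf m\<close> tr_hend_Lf_Ed[OF Ed] by simp
      note pp = pos_p[OF pw(1) lp(1)]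
      show ?thesis using z z' pp lp c \<open>qs ! ?l ! ?r ! c = Lf m\<close> m Ed
        by (intro conjI disjI2 exI[of _ m] exI[of _ c] exI[of _ m'] exI[of _ "snd (leaf_at (qs ! l2) m')"]) simp_all
    qed
  qed
qed


lemma Q_Ed_int: assumes x: "x < length \<sigma>" and i: "i < length (qs ! (\<sigma> ! x) ! rank \<sigma> x)"
    and e: "qs ! (\<sigma> ! x) ! rank \<sigma> x ! i = Ed w j"
  shows "q ! x ! i = Ed (pos \<sigma> (\<sigma> ! x) w) j"
  using Q_at[OF x] i e Q_len2[OF x] by simp

lemma Q_Lf_Lf: assumes x: "x < length \<sigma>" and i: "i < length (qs ! (\<sigma> ! x) ! rank \<sigma> x)"
    and e: "qs ! (\<sigma> ! x) ! rank \<sigma> x ! i = Lf m" and e2: "p ! (\<sigma> ! x) ! m = Lf k"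
  shows "q ! x ! i = Lf k"
  using Q_at[OF x] i e Q_len2[OF x] tr_hend_Lf_Lf[OF e2] by simp

lemma Q_Lf_Ed: assumes x: "x < length \<sigma>" and i: "i < length (qs ! (\<sigma> ! x) ! rank \<sigma> x)"
    and e: "qs ! (\<sigma> ! x) ! rank \<sigma> x ! i = Lf m" and e2: "p ! (\<sigma> ! x) ! m = Ed l' i'"
  shows "q ! x ! i = Ed (pos \<sigma> l' (fst (leaf_at (qs ! l') i'))) (snd (leaf_at (qs ! l') i'))"
  using Q_at[OF x] i e Q_len2[OF x] tr_hend_Lf_Ed[OF e2] by simp

definition "tt = fst (leaf_at p 0)"
definition "mt = snd (leaf_at p 0)"
definition "at = fst (leaf_at (qs ! tt) mt)"
definition "bt = snd (leaf_at (qs ! tt) mt)"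
definition "TT = pos \<sigma> tt at"

lemma tt_props: "tt < length p" "mt < length (p ! tt)" "p ! tt ! mt = Lf 0"
  using leaf_at_props[OF wfp nlp] unfolding tt_def mt_def by simp_all

lemma at_props: "at < length (qs ! tt)" "bt < length (qs ! tt ! at)" "qs ! tt ! at ! bt = Lf mt"
  using leafq_props[OF tt_props(1,2)] unfolding at_def bt_def by simp_all

lemma TT_props: "TT < length \<sigma>" "\<sigma> ! TT = tt" "rank \<sigma> TT = at"
  using pos_p[OF tt_props(1) at_props(1)] unfolding TT_def by simp_all

lemma leafq0: "leaf_at q 0 = (TT, bt)"
  unfolding leaf_at_def
proof (rule the_equality)
  have "q ! TT ! bt = Lf 0"
    using Q_Lf_Lf[OF TT_props(1), of bt mt 0] TT_props at_props tt_props by simp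
  then show "(TT, bt) \<in> half_edges q \<and> hend_at q (TT, bt) = Lf 0"
    using TT_props at_props Q_len2[OF TT_props(1)] by simp
next
  fix h assume h: "h \<in> half_edges q \<and> hend_at q h = Lf 0"
  obtain x i where hx: "h = (x, i)" by (cases h)
  have x: "x < length \<sigma>" "i < length (q ! x)" "q ! x ! i = Lf 0" using h hx by simp_all
  let ?l = "\<sigma> ! x" and ?r = "rank \<sigma> x"
  have l: "?l < length p" and r: "?r < length (qs ! ?l)" using sig_lt[OF x(1)] rank_lt'[OF x(1)] .
  have i: "i < length (qs ! ?l ! ?r)" using x(2) Q_len2[OF x(1)] by simp
  show "h = (TT, bt)"
  proof (cases "qs ! ?l ! ?r ! i")
    case (Ed w j)
    then show ?thesis using Q_Ed_int[OF x(1) i Ed] x(3) by simp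
  next
    case (Lf m)
    have m: "m < length (p ! ?l)" using lbl_lt[OF l r i Lf] .
    show ?thesis
    proof (cases "p ! ?l ! m")
      case (Ed l' i')
      then show ?thesis using Q_Lf_Ed[OF x(1) i Lf Ed] x(3) by simp
    next
      case (Lf k)
      then have k: "k = 0" using Q_Lf_Lf[OF x(1) i \<open>qs ! ?l ! ?r ! i = Lf m\<close> Lf] x(3) by simp
      have e1: "tt = ?l \<and> mt = m" using wf_leaf_unique[OF wfp l m Lf[unfolded k] tt_props] .
      have e2: "at = ?r \<and> bt = i"
        using wf_leaf_unique[OF wfq[OF l] r i \<open>qs ! ?l ! ?r ! i = Lf m\<close>] at_props e1 by simp
      have "x = TT" unfolding TT_def using e1 e2 pos_rank[OF x(1)] by simp
      then show ?thesis using hx e2 by simp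
    qed
  qed
qed

lemma INTRA:
  assumes m: "m < length p" and path: "(u, u') \<in> {(a, b). pos \<sigma> m a \<noteq> x0 \<and> pos \<sigma> m b \<noteq> x0 \<and> adj (qs ! m) a b}\<^sup>*"
  shows "(pos \<sigma> m u, pos \<sigma> m u') \<in> (av q x0)\<^sup>*"
  using path
proof (induction rule: rtrancl_induct)
  case base then show ?case by simp
next
  case (step b c)
  then have bc: "pos \<sigma> m b \<noteq> x0" "pos \<sigma> m c \<noteq> x0" "adj (qs ! m) b c" by simp_all
  obtain i j where ij: "b < length (qs ! m)" "i < length (qs ! m ! b)" "qs ! m ! b ! i = Ed c j"
    using bc(3) unfolding adj_iff by blast
  note pp = pos_p[OF m ij(1)]
  have "q ! pos \<sigma> m b ! i = Ed (pos \<sigma> m c) j"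
    using Q_Ed_int[OF pp(1), of i c j] pp ij by simp
  moreover have "pos \<sigma> m b < length q" "i < length (q ! pos \<sigma> m b)"
    using pp ij Q_len2[OF pp(1)] by simp_all
  ultimately have "adj q (pos \<sigma> m b) (pos \<sigma> m c)" unfolding adj_iff by blast
  then have "(pos \<sigma> m b, pos \<sigma> m c) \<in> av q x0" using bc unfolding av_def by simp
  from step.IH this show ?case by (rule rtrancl_into_rtrancl)
qed

lemma INTRA_other:
  assumes m: "m < length p" and mx: "m \<noteq> \<sigma> ! x0" and u: "u < length (qs ! m)" "u' < length (qs ! m)"
  shows "(pos \<sigma> m u, pos \<sigma> m u') \<in> (av q x0)\<^sup>*"
proof -
  have "(u, u') \<in> {(a, b). adj (qs ! m) a b}\<^sup>*" using connq[OF m] u unfolding og_connected_def by blast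
  moreover have "{(a, b). adj (qs ! m) a b} \<subseteq> {(a, b). pos \<sigma> m a \<noteq> x0 \<and> pos \<sigma> m b \<noteq> x0 \<and> adj (qs ! m) a b}"
  proof (rule subsetI)
    fix pr assume "pr \<in> {(a, b). adj (qs ! m) a b}"
    then obtain a b where pr: "pr = (a, b)" and ab: "adj (qs ! m) a b" by blast
    have "a < length (qs ! m)" "b < length (qs ! m)" using adj_lt[OF wfq[OF m] ab] by simp_all
    then have "\<sigma> ! pos \<sigma> m a = m" "\<sigma> ! pos \<sigma> m b = m" using pos_p[OF m] by simp_all
    then have "pos \<sigma> m a \<noteq> x0" "pos \<sigma> m b \<noteq> x0" using mx by auto
    then show "pr \<in> {(a, b). pos \<sigma> m a \<noteq> x0 \<and> pos \<sigma> m b \<noteq> x0 \<and> adj (qs ! m) a b}"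
      using pr ab by simp
  qed
  ultimately have "(u, u') \<in> {(a, b). pos \<sigma> m a \<noteq> x0 \<and> pos \<sigma> m b \<noteq> x0 \<and> adj (qs ! m) a b}\<^sup>*"
    using rtrancl_mono by blast
  then show ?thesis by (rule INTRA[OF m])
qed

lemma EXT:
  assumes x0: "x0 < length \<sigma>" and path: "(a, b) \<in> (av p (\<sigma> ! x0))\<^sup>*" and a: "a < length p" "a \<noteq> \<sigma> ! x0"
    and u: "u < length (qs ! a)"
  shows "u' < length (qs ! b) \<Longrightarrow> (pos \<sigma> a u, pos \<sigma> b u') \<in> (av q x0)\<^sup>*"
  using path
proof (induction arbitrary: u' rule: rtrancl_induct)
  case base
  then show ?case using INTRA_other[OF a(1) a(2) u] by simp
next
  case (step b c)
  have bc: "b \<noteq> \<sigma> ! x0" "c \<noteq> \<sigma> ! x0" "adj p b c" using step.hyps(2) unfolding av_def by simp_all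
  obtain mm m' where mm: "b < length p" "mm < length (p ! b)" "p ! b ! mm = Ed c m'"
    using bc(3) unfolding adj_iff by blast
  have pw: "c < length p" "m' < length (p ! c)" using wf_partner[OF wfp mm] by blast+
  note l1 = leafq_props[OF mm(1,2)]
  note l2 = leafq_props[OF pw]
  let ?u1 = "fst (leaf_at (qs ! b) mm)" and ?c1 = "snd (leaf_at (qs ! b) mm)"
  let ?u2 = "fst (leaf_at (qs ! c) m')"
  note pp1 = pos_p[OF mm(1) l1(1)]
  note pp2 = pos_p[OF pw(1) l2(1)]
  have "q ! pos \<sigma> b ?u1 ! ?c1 = Ed (pos \<sigma> c ?u2) (snd (leaf_at (qs ! c) m'))"
    using Q_Lf_Ed[OF pp1(1), of ?c1 mm c m'] pp1 l1 mm(3) by simp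
  moreover have "pos \<sigma> b ?u1 < length q" "?c1 < length (q ! pos \<sigma> b ?u1)"
    using pp1 l1 Q_len2[OF pp1(1)] by simp_all
  ultimately have "adj q (pos \<sigma> b ?u1) (pos \<sigma> c ?u2)" unfolding adj_iff by blast
  moreover have "pos \<sigma> b ?u1 \<noteq> x0" "pos \<sigma> c ?u2 \<noteq> x0" using pp1 pp2 bc by auto
  ultimately have st: "(pos \<sigma> b ?u1, pos \<sigma> c ?u2) \<in> av q x0" unfolding av_def by simp
  have "(pos \<sigma> a u, pos \<sigma> b ?u1) \<in> (av q x0)\<^sup>*" using step.IH l1(1) by simp
  from rtrancl_into_rtrancl[OF this st]
  have "(pos \<sigma> a u, pos \<sigma> c ?u2) \<in> (av q x0)\<^sup>*" .
  moreover have "(pos \<sigma> c ?u2, pos \<sigma> c u') \<in> (av q x0)\<^sup>*" using INTRA_other[OF pw(1) bc(2) l2(1) step.prems] .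
  ultimately show ?case by (rule rtrancl_trans)
qed


lemma rho_facts:
  assumes l: "l < length p"
  shows "leads p 0 l (dir p 0 l)" "dir p 0 l < length (p ! l)" "\<And>i. leads p 0 l i \<Longrightarrow> i = dir p 0 l"
proof -
  show "leads p 0 l (dir p 0 l)" by (rule dir_leads[OF treep l nlp])
  show "dir p 0 l < length (p ! l)" by (rule dir_lt[OF treep l nlp])
  fix i assume "leads p 0 l i"
  then show "i = dir p 0 l" by (rule sym[OF dir_eq[OF treep l nlp]])
qed

lemma av_into_R:
  assumes x0: "x0 < length \<sigma>"
  shows "(av (qs ! (\<sigma> ! x0)) (rank \<sigma> x0))\<^sup>* \<subseteq>
    {(a, b). pos \<sigma> (\<sigma> ! x0) a \<noteq> x0 \<and> pos \<sigma> (\<sigma> ! x0) b \<noteq> x0 \<and> adj (qs ! (\<sigma> ! x0)) a b}\<^sup>*"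
proof (rule rtrancl_mono, rule subsetI)
  let ?l = "\<sigma> ! x0"
  have l: "?l < length p" using sig_lt[OF x0] .
  fix pr assume "pr \<in> av (qs ! ?l) (rank \<sigma> x0)"
  then obtain a b where pr: "pr = (a, b)" and ab: "a \<noteq> rank \<sigma> x0" "b \<noteq> rank \<sigma> x0" "adj (qs ! ?l) a b"
    unfolding av_def by blast
  have "a < length (qs ! ?l)" "b < length (qs ! ?l)" using adj_lt[OF wfq[OF l] ab(3)] by simp_all
  then have "rank \<sigma> (pos \<sigma> ?l a) = a" "rank \<sigma> (pos \<sigma> ?l b) = b" using pos_p[OF l] by simp_all
  then have "pos \<sigma> ?l a \<noteq> x0" "pos \<sigma> ?l b \<noteq> x0" using ab by auto
  then show "pr \<in> {(a, b). pos \<sigma> ?l a \<noteq> x0 \<and> pos \<sigma> ?l b \<noteq> x0 \<and> adj (qs ! ?l) a b}"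
    using pr ab(3) by simp
qed

lemma lift:
  assumes x0: "x0 < length \<sigma>" and L: "leads (qs ! (\<sigma> ! x0)) (dir p 0 (\<sigma> ! x0)) (rank \<sigma> x0) i"
  shows "leads q 0 x0 i"
proof -
  let ?l = "\<sigma> ! x0" and ?r = "rank \<sigma> x0" and ?\<rho> = "dir p 0 (\<sigma> ! x0)"
  have l: "?l < length p" and r: "?r < length (qs ! ?l)" using sig_lt[OF x0] rank_lt'[OF x0] .
  note RF = rho_facts[OF l]
  let ?y = "fst (leaf_at (qs ! ?l) ?\<rho>)" and ?c = "snd (leaf_at (qs ! ?l) ?\<rho>)"
  note lp = leafq_props[OF l RF(2)]
  let ?Y = "pos \<sigma> ?l ?y"
  note pY = pos_p[OF l lp(1)]
  have C: "(q ! ?Y ! ?c = Lf 0 \<and> ?Y = TT) \<or> (\<exists>z e. q ! ?Y ! ?c = Ed z e \<and> z \<noteq> x0 \<and> (z, TT) \<in> (av q x0)\<^sup>*)"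
  proof (cases "p ! ?l ! ?\<rho> = Lf 0")
    case True
    have "q ! ?Y ! ?c = Lf 0" using Q_Lf_Lf[OF pY(1), of ?c ?\<rho> 0] pY lp True by simp
    moreover have "leaf_at p 0 = (?l, ?\<rho>)" using leaf_at_eq[OF wfp l RF(2) True] .
    then have "tt = ?l" "mt = ?\<rho>" unfolding tt_def mt_def by simp_all
    then have "?Y = TT" unfolding TT_def at_def by simp
    ultimately show ?thesis by simp
  next
    case False
    have "p ! ?l ! ?\<rho> = Lf 0 \<or> (\<exists>w j. p ! ?l ! ?\<rho> = Ed w j \<and> (w, fst (leaf_at p 0)) \<in> (av p ?l)\<^sup>*)"
      using RF(1) unfolding leads_def by (rule conjunct2)
    then have "\<exists>w j. p ! ?l ! ?\<rho> = Ed w j \<and> (w, tt) \<in> (av p ?l)\<^sup>*"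
      using False unfolding tt_def by (elim disjE) simp_all
    then obtain l' i' where e: "p ! ?l ! ?\<rho> = Ed l' i'" "(l', tt) \<in> (av p ?l)\<^sup>*" by blast
    have pw: "l' < length p" "i' < length (p ! l')" using wf_partner[OF wfp l RF(2) e(1)] by blast+
    have ll: "l' \<noteq> ?l" using no_loop[OF treep l RF(2) e(1)] .
    note lp' = leafq_props[OF pw]
    have qe: "q ! ?Y ! ?c = Ed (pos \<sigma> l' (fst (leaf_at (qs ! l') i'))) (snd (leaf_at (qs ! l') i'))"
      using Q_Lf_Ed[OF pY(1), of ?c ?\<rho> l' i'] pY lp e(1) by simp
    have "(pos \<sigma> l' (fst (leaf_at (qs ! l') i')), pos \<sigma> tt at) \<in> (av q x0)\<^sup>*"
      using EXT[OF x0 e(2) pw(1) ll lp'(1) at_props(1)] .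
    moreover have "pos \<sigma> l' (fst (leaf_at (qs ! l') i')) \<noteq> x0" using pos_p[OF pw(1) lp'(1)] ll by auto
    ultimately show ?thesis using qe unfolding TT_def by blast
  qed
  have i: "i < length (qs ! ?l ! ?r)" using L unfolding leads_def by (rule conjunct1)
  have L2: "qs ! ?l ! ?r ! i = Lf ?\<rho> \<or> (\<exists>w j. qs ! ?l ! ?r ! i = Ed w j \<and> (w, ?y) \<in> (av (qs ! ?l) ?r)\<^sup>*)"
    using L unfolding leads_def by (rule conjunct2)
  have iq: "i < length (q ! x0)" using i Q_len2[OF x0] by simp
  have lq: "fst (leaf_at q 0) = TT" using leafq0 by simp
  show ?thesis
  proof (cases "qs ! ?l ! ?r ! i = Lf ?\<rho>")
    case True
    have "leaf_at (qs ! ?l) ?\<rho> = (?r, i)" using leaf_at_eq[OF wfq[OF l] r i True] .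
    then have "?Y = x0" "?c = i" using pos_rank[OF x0] by simp_all
    show ?thesis
    proof (cases "q ! ?Y ! ?c = Lf 0 \<and> ?Y = TT")
      case True
      from conjunct1[OF True] have "q ! x0 ! i = Lf 0" unfolding \<open>?Y = x0\<close> \<open>?c = i\<close> .
      then show ?thesis using iq unfolding leads_def by simp
    next
      case False
      then obtain z e where ze: "q ! ?Y ! ?c = Ed z e" "(z, TT) \<in> (av q x0)\<^sup>*" using C by blast
      have "q ! x0 ! i = Ed z e" using ze(1) \<open>?Y = x0\<close> \<open>?c = i\<close> by simp
      moreover have "(z, fst (leaf_at q 0)) \<in> (av q x0)\<^sup>*" using ze(2) lq by simp
      ultimately show ?thesis using iq unfolding leads_def by blast
    qed
  next
    case False
    then have "\<exists>w j. qs ! ?l ! ?r ! i = Ed w j \<and> (w, ?y) \<in> (av (qs ! ?l) ?r)\<^sup>*"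
      using L2 by (elim disjE) simp_all
    then obtain w j where wj: "qs ! ?l ! ?r ! i = Ed w j" "(w, ?y) \<in> (av (qs ! ?l) ?r)\<^sup>*"
      by blast
    have qx: "q ! x0 ! i = Ed (pos \<sigma> ?l w) j" using Q_Ed_int[OF x0 i wj(1)] .
    have wr: "w \<noteq> ?r" using no_loop[OF treeq[OF l] r i wj(1)] .
    have yr: "?y \<noteq> ?r" using av_ne[OF wj(2) wr] .
    have "(w, ?y) \<in> {(a, b). pos \<sigma> ?l a \<noteq> x0 \<and> pos \<sigma> ?l b \<noteq> x0 \<and> adj (qs ! ?l) a b}\<^sup>*"
      using av_into_R[OF x0] wj(2) by (rule subsetD)
    from INTRA[OF l this] have p1: "(pos \<sigma> ?l w, ?Y) \<in> (av q x0)\<^sup>*" .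
    have Yx: "?Y \<noteq> x0" using pY(3) yr by auto
    have "(pos \<sigma> ?l w, TT) \<in> (av q x0)\<^sup>*"
    proof (cases "q ! ?Y ! ?c = Lf 0 \<and> ?Y = TT")
      case True then show ?thesis using p1 by simp
    next
      case False
      then obtain z e where ze: "q ! ?Y ! ?c = Ed z e" "z \<noteq> x0" "(z, TT) \<in> (av q x0)\<^sup>*" using C by blast
      have "?Y < length q" "?c < length (q ! ?Y)" using pY lp Q_len2[OF pY(1)] by simp_all
      then have "adj q ?Y z" using ze(1) unfolding adj_iff by blast
      then have "(?Y, z) \<in> av q x0" using Yx ze(2) unfolding av_def by simp
      from converse_rtrancl_into_rtrancl[OF this ze(3)]
      show ?thesis by (rule rtrancl_trans[OF p1])
    qed
    then have "(pos \<sigma> ?l w, fst (leaf_at q 0)) \<in> (av q x0)\<^sup>*" using lq by simp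
    then show ?thesis using qx iq unfolding leads_def by blast
  qed
qed


definition good :: "nat \<Rightarrow> nat \<Rightarrow> nat \<Rightarrow> bool" where
  "good l m1 m \<longleftrightarrow> m1 < length (p ! l) \<and> (\<exists>w j. p ! l ! m1 = Ed w j \<and> (w, m) \<in> (av p l)\<^sup>*)"

lemma good_unique:
  assumes l: "l < length p" and g1: "good l m1 m" and g2: "good l m2 m"
  shows "m1 = m2"
proof (rule ccontr)
  assume ne: "m1 \<noteq> m2"
  obtain w1 j1 where a: "m1 < length (p ! l)" "p ! l ! m1 = Ed w1 j1" "(w1, m) \<in> (av p l)\<^sup>*"
    using g1 unfolding good_def by blast
  obtain w2 j2 where b: "m2 < length (p ! l)" "p ! l ! m2 = Ed w2 j2" "(w2, m) \<in> (av p l)\<^sup>*"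
    using g2 unfolding good_def by blast
  have "(w1, w2) \<in> (av p l)\<^sup>*" using a(3) av_rtrancl_sym[OF wfp b(3)] by (rule rtrancl_trans)
  then show False using tree_no_cycle[OF treep l a(1) b(1) ne a(2) b(2)] by simp
qed

lemma good_step: "good l m1 a \<Longrightarrow> (a, b) \<in> av p l \<Longrightarrow> good l m1 b"
  unfolding good_def by (meson rtrancl_into_rtrancl)

lemma good_direct: "m1 < length (p ! l) \<Longrightarrow> p ! l ! m1 = Ed a j \<Longrightarrow> good l m1 a"
  unfolding good_def by blast

definition Inv :: "nat \<Rightarrow> nat set \<Rightarrow> nat set \<Rightarrow> nat \<Rightarrow> bool" where
  "Inv x0 A Lbl z \<longleftrightarrow> z < length \<sigma> \<and> (\<sigma> ! z = \<sigma> ! x0 \<longrightarrow> rank \<sigma> z \<in> A)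
     \<and> (\<sigma> ! z \<noteq> \<sigma> ! x0 \<longrightarrow> (\<exists>m1 \<in> Lbl. good (\<sigma> ! x0) m1 (\<sigma> ! z)))"

lemma rank_ne: "x0 < length \<sigma> \<Longrightarrow> z < length \<sigma> \<Longrightarrow> z \<noteq> x0 \<Longrightarrow> \<sigma> ! z = \<sigma> ! x0 \<Longrightarrow> rank \<sigma> z \<noteq> rank \<sigma> x0"
  using rank_inj by blast

lemma inv_step:
  assumes x0: "x0 < length \<sigma>"
    and c1: "\<And>y y'. y \<in> A \<Longrightarrow> (y, y') \<in> av (qs ! (\<sigma> ! x0)) (rank \<sigma> x0) \<Longrightarrow> y' \<in> A"
    and c2: "\<And>y c m. y \<in> A \<Longrightarrow> c < length (qs ! (\<sigma> ! x0) ! y) \<Longrightarrow> qs ! (\<sigma> ! x0) ! y ! c = Lf m \<Longrightarrow> m \<in> Lbl"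
    and c3: "\<And>m y c. m \<in> Lbl \<Longrightarrow> y < length (qs ! (\<sigma> ! x0)) \<Longrightarrow> c < length (qs ! (\<sigma> ! x0) ! y)
        \<Longrightarrow> qs ! (\<sigma> ! x0) ! y ! c = Lf m \<Longrightarrow> y \<noteq> rank \<sigma> x0 \<Longrightarrow> y \<in> A"
    and I: "Inv x0 A Lbl z" and st: "(z, z') \<in> av q x0"
  shows "Inv x0 A Lbl z'"
proof -
  let ?l = "\<sigma> ! x0" and ?r = "rank \<sigma> x0"
  have l: "?l < length p" using sig_lt[OF x0] .
  have zz: "z \<noteq> x0" "z' \<noteq> x0" "adj q z z'" using st unfolding av_def by simp_all
  note AC = adjQ_cases[OF zz(3)]
  have z: "z < length \<sigma>" "z' < length \<sigma>" using AC by simp_all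
  let ?l1 = "\<sigma> ! z" and ?r1 = "rank \<sigma> z" and ?l2 = "\<sigma> ! z'" and ?r2 = "rank \<sigma> z'"
  have l1: "?l1 < length p" and l2: "?l2 < length p" using sig_lt z by simp_all
  have r2: "?r2 < length (qs ! ?l2)" using rank_lt'[OF z(2)] .
  have Iz: "?l1 = ?l \<longrightarrow> ?r1 \<in> A" "?l1 \<noteq> ?l \<longrightarrow> (\<exists>m1 \<in> Lbl. good ?l m1 ?l1)"
    using I unfolding Inv_def by simp_all
  show ?thesis
  proof (cases "?l2 = ?l1 \<and> adj (qs ! ?l1) ?r1 ?r2")
    case True
    show ?thesis
    proof (cases "?l1 = ?l")
      case l1l: True
      have "?r1 \<noteq> ?r" using rank_ne[OF x0 z(1) zz(1)] l1l by simp
      moreover have "?r2 \<noteq> ?r" using rank_ne[OF x0 z(2) zz(2)] l1l True by simp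
      ultimately have "(?r1, ?r2) \<in> av (qs ! ?l) ?r" using True l1l unfolding av_def by simp
      then have "?r2 \<in> A" using c1 Iz(1) l1l by blast
      then show ?thesis unfolding Inv_def using z(2) True l1l by simp
    next
      case False
      then show ?thesis unfolding Inv_def using z(2) True Iz(2) by simp
    qed
  next
    case False
    then obtain m c m' b where e: "c < length (qs ! ?l1 ! ?r1)" "qs ! ?l1 ! ?r1 ! c = Lf m"
       "m < length (p ! ?l1)" "p ! ?l1 ! m = Ed ?l2 m'"
       "b < length (qs ! ?l2 ! ?r2)" "qs ! ?l2 ! ?r2 ! b = Lf m'"
      using AC by blast
    have pw: "m' < length (p ! ?l2)" "p ! ?l2 ! m' = Ed ?l1 m" using wf_partner[OF wfp l1 e(3,4)] by blast+
    show ?thesis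
    proof (cases "?l1 = ?l")
      case l1l: True
      have l2l: "?l2 \<noteq> ?l" using no_loop[OF treep l1 e(3,4)] l1l by simp
      have "m \<in> Lbl" using c2[of ?r1 c m] Iz(1) l1l e(1,2) by simp
      moreover have "good ?l m ?l2" using good_direct[of m ?l ?l2 m'] e(3,4) l1l by simp
      ultimately show ?thesis unfolding Inv_def using z(2) l2l by blast
    next
      case l1l: False
      obtain m1 where m1: "m1 \<in> Lbl" "good ?l m1 ?l1" using Iz(2) l1l by blast
      show ?thesis
      proof (cases "?l2 = ?l")
        case l2l: True
        have "good ?l m' ?l1" using good_direct[OF pw] l2l by simp
        then have "m1 = m'" using good_unique[OF l m1(2)] by simp
        then have "m' \<in> Lbl" using m1(1) by simp
        moreover have "?r2 \<noteq> ?r" using rank_ne[OF x0 z(2) zz(2)] l2l by simp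
        ultimately have "?r2 \<in> A" using c3[of m' ?r2 b] r2 e(5,6) l2l by simp
        then show ?thesis unfolding Inv_def using z(2) l2l by simp
      next
        case l2l: False
        have "adj p ?l1 ?l2" unfolding adj_iff using l1 e(3,4) by blast
        then have "(?l1, ?l2) \<in> av p ?l" using l1l l2l unfolding av_def by simp
        then have "good ?l m1 ?l2" using good_step[OF m1(2)] by simp
        then show ?thesis unfolding Inv_def using z(2) l2l m1(1) by blast
      qed
    qed
  qed
qed

lemma inv_path:
  assumes x0: "x0 < length \<sigma>"
    and c1: "\<And>y y'. y \<in> A \<Longrightarrow> (y, y') \<in> av (qs ! (\<sigma> ! x0)) (rank \<sigma> x0) \<Longrightarrow> y' \<in> A"
    and c2: "\<And>y c m. y \<in> A \<Longrightarrow> c < length (qs ! (\<sigma> ! x0) ! y) \<Longrightarrow> qs ! (\<sigma> ! x0) ! y ! c = Lf m \<Longrightarrow> m \<in> Lbl"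
    and c3: "\<And>m y c. m \<in> Lbl \<Longrightarrow> y < length (qs ! (\<sigma> ! x0)) \<Longrightarrow> c < length (qs ! (\<sigma> ! x0) ! y)
        \<Longrightarrow> qs ! (\<sigma> ! x0) ! y ! c = Lf m \<Longrightarrow> y \<noteq> rank \<sigma> x0 \<Longrightarrow> y \<in> A"
    and I: "Inv x0 A Lbl z0" and path: "(z0, z) \<in> (av q x0)\<^sup>*"
  shows "Inv x0 A Lbl z"
  using path
proof (induction rule: rtrancl_induct)
  case base then show ?case using I .
next
  case (step y z)
  show ?case by (rule inv_step[OF x0 c1 c2 c3 step.IH step.hyps(2)])
qed


lemma rho_good:
  assumes l: "l < length p" and tl: "tt \<noteq> l"
  shows "good l (dir p 0 l) tt"
proof -
  note RF = rho_facts[OF l]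
  have d: "p ! l ! dir p 0 l = Lf 0 \<or> (\<exists>w j. p ! l ! dir p 0 l = Ed w j \<and> (w, fst (leaf_at p 0)) \<in> (av p l)\<^sup>*)"
    using RF(1) unfolding leads_def by (rule conjunct2)
  have "p ! l ! dir p 0 l \<noteq> Lf 0"
  proof
    assume "p ! l ! dir p 0 l = Lf 0"
    then have "leaf_at p 0 = (l, dir p 0 l)" using leaf_at_eq[OF wfp l RF(2)] by simp
    then show False using tl unfolding tt_def by simp
  qed
  then have "\<exists>w j. p ! l ! dir p 0 l = Ed w j \<and> (w, tt) \<in> (av p l)\<^sup>*"
    using d unfolding tt_def by (elim disjE) simp_all
  then show ?thesis unfolding good_def using RF(2) by blast
qed

lemma mt_rho:
  assumes "tt = l"
  shows "mt = dir p 0 l"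
proof -
  have "leads p 0 l mt" unfolding leads_def using tt_props assms by simp
  then show ?thesis using rho_facts(3)[of l] tt_props(1) assms by simp
qed

lemma project:
  assumes x0: "x0 < length \<sigma>" and L: "leads q 0 x0 i"
  shows "leads (qs ! (\<sigma> ! x0)) (dir p 0 (\<sigma> ! x0)) (rank \<sigma> x0) i"
proof -
  let ?l = "\<sigma> ! x0" and ?r = "rank \<sigma> x0" and ?\<rho> = "dir p 0 (\<sigma> ! x0)"
  have l: "?l < length p" and r: "?r < length (qs ! ?l)" using sig_lt[OF x0] rank_lt'[OF x0] .
  note RF = rho_facts[OF l]
  have iq: "i < length (q ! x0)" using L unfolding leads_def by (rule conjunct1)
  have i: "i < length (qs ! ?l ! ?r)" using iq Q_len2[OF x0] by simp
  have lq: "fst (leaf_at q 0) = TT" using leafq0 by simp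
  have L2: "q ! x0 ! i = Lf 0 \<or> (\<exists>z0 j0. q ! x0 ! i = Ed z0 j0 \<and> (z0, TT) \<in> (av q x0)\<^sup>*)"
    using L lq unfolding leads_def by simp
  have goalLf: "leads (qs ! ?l) ?\<rho> ?r i" if "qs ! ?l ! ?r ! i = Lf ?\<rho>"
    unfolding leads_def using i that by simp
  have goalEd: "leads (qs ! ?l) ?\<rho> ?r i" if "qs ! ?l ! ?r ! i = Ed w j" "(w, fst (leaf_at (qs ! ?l) ?\<rho>)) \<in> (av (qs ! ?l) ?r)\<^sup>*" for w j
    unfolding leads_def using i that by blast
  show ?thesis
  proof (cases "qs ! ?l ! ?r ! i")
    case (Ed w0 j)
    have w0: "w0 < length (qs ! ?l)" using ed_lt[OF l r i Ed] by simp
    have qx: "q ! x0 ! i = Ed (pos \<sigma> ?l w0) j" using Q_Ed_int[OF x0 i Ed] .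
    then have path: "(pos \<sigma> ?l w0, TT) \<in> (av q x0)\<^sup>*" using L2 by simp
    define A where "A = {y. (w0, y) \<in> (av (qs ! ?l) ?r)\<^sup>*}"
    define Lbl where "Lbl = {m. \<exists>y \<in> A. \<exists>c < length (qs ! ?l ! y). qs ! ?l ! y ! c = Lf m}"
    have Alt: "y < length (qs ! ?l)" if "y \<in> A" for y
    proof -
      have "(w0, y) \<in> (av (qs ! ?l) ?r)\<^sup>*" using that unfolding A_def by simp
      then show ?thesis
      proof (induction rule: rtrancl_induct)
        case base then show ?case using w0 .
      next
        case (step a b) then show ?case using adj_lt[OF wfq[OF l]] unfolding av_def by blast
      qed
    qed
    have c1: "y' \<in> A" if "y \<in> A" "(y, y') \<in> av (qs ! ?l) ?r" for y y'
      using that unfolding A_def by (simp add: rtrancl_into_rtrancl)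
    have c2: "m \<in> Lbl" if "y \<in> A" "c < length (qs ! ?l ! y)" "qs ! ?l ! y ! c = Lf m" for y c m
      using that unfolding Lbl_def by blast
    have c3: "y \<in> A" if h: "m \<in> Lbl" "y < length (qs ! ?l)" "c < length (qs ! ?l ! y)" "qs ! ?l ! y ! c = Lf m"
      "y \<noteq> ?r" for m y c
    proof -
      obtain y' c' where y': "y' \<in> A" "c' < length (qs ! ?l ! y')" "qs ! ?l ! y' ! c' = Lf m"
        using h(1) unfolding Lbl_def by blast
      have "y = y'" using wf_leaf_unique[OF wfq[OF l] Alt[OF y'(1)] y'(2,3) h(2-4)] by simp
      then show ?thesis using y'(1) by simp
    qed
    have I0: "Inv x0 A Lbl (pos \<sigma> ?l w0)"
      unfolding Inv_def using pos_p[OF l w0] unfolding A_def by simp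
    have IT: "Inv x0 A Lbl TT" using inv_path[OF x0 c1 c2 c3 I0 path] .
    show ?thesis
    proof (cases "tt = ?l")
      case True
      have "at \<in> A" using IT TT_props True unfolding Inv_def by simp
      have "mt = ?\<rho>" using mt_rho[OF True] .
      then have "leaf_at (qs ! ?l) ?\<rho> = (at, bt)" using leaf_at_eq[OF wfq[OF l]] at_props True by simp
      then show ?thesis using goalEd[OF Ed] \<open>at \<in> A\<close> unfolding A_def by simp
    next
      case False
      obtain m1 where m1: "m1 \<in> Lbl" "good ?l m1 tt" using IT TT_props False unfolding Inv_def by auto
      have "m1 = ?\<rho>" using good_unique[OF l m1(2) rho_good[OF l False]] .
      then obtain y c where yc: "y \<in> A" "c < length (qs ! ?l ! y)" "qs ! ?l ! y ! c = Lf ?\<rho>"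
        using m1(1) unfolding Lbl_def by blast
      have "leaf_at (qs ! ?l) ?\<rho> = (y, c)" using leaf_at_eq[OF wfq[OF l] Alt[OF yc(1)] yc(2,3)] .
      then show ?thesis using goalEd[OF Ed] yc(1) unfolding A_def by simp
    qed
  next
    case (Lf m0)
    have m0: "m0 < length (p ! ?l)" using lbl_lt[OF l r i Lf] .
    show ?thesis
    proof (cases "p ! ?l ! m0")
      case (Lf k)
      have "q ! x0 ! i = Lf k" using Q_Lf_Lf[OF x0 i \<open>qs ! ?l ! ?r ! i = Lf m0\<close> Lf] .
      then have "k = 0" using L2 by simp
      then have "leads p 0 ?l m0" unfolding leads_def using m0 Lf by simp
      then have "m0 = ?\<rho>" using RF(3) by simp
      then show ?thesis using goalLf \<open>qs ! ?l ! ?r ! i = Lf m0\<close> by simp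
    next
      case (Ed l0 j0)
      have pw: "l0 < length p" "j0 < length (p ! l0)" using wf_partner[OF wfp l m0 Ed] by blast+
      have l0l: "l0 \<noteq> ?l" using no_loop[OF treep l m0 Ed] .
      note lp = leafq_props[OF pw]
      let ?z0 = "pos \<sigma> l0 (fst (leaf_at (qs ! l0) j0))"
      have qx: "q ! x0 ! i = Ed ?z0 (snd (leaf_at (qs ! l0) j0))"
        using Q_Lf_Ed[OF x0 i \<open>qs ! ?l ! ?r ! i = Lf m0\<close> Ed] .
      then have path: "(?z0, TT) \<in> (av q x0)\<^sup>*" using L2 by simp
      define A :: "nat set" where "A = {}"
      define Lbl where "Lbl = {m0}"
      have c1: "y' \<in> A" if "y \<in> A" "(y, y') \<in> av (qs ! ?l) ?r" for y y'
        using that unfolding A_def by simp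
      have c2: "m \<in> Lbl" if "y \<in> A" "c < length (qs ! ?l ! y)" "qs ! ?l ! y ! c = Lf m" for y c m
        using that unfolding A_def by simp
      have c3: "y \<in> A" if "m \<in> Lbl" "y < length (qs ! ?l)" "c < length (qs ! ?l ! y)" "qs ! ?l ! y ! c = Lf m"
        "y \<noteq> ?r" for m y c
      proof -
        have "m = m0" using that(1) unfolding Lbl_def by simp
        then have "?r = y" using wf_leaf_unique[OF wfq[OF l] that(2-4) r i] \<open>qs ! ?l ! ?r ! i = Lf m0\<close> by simp
        then show ?thesis using that(5) by simp
      qed
      have g0: "good ?l m0 l0" using good_direct[OF m0 Ed] .
      have I0: "Inv x0 A Lbl ?z0"
        unfolding Inv_def using pos_p[OF pw(1) lp(1)] l0l g0 unfolding Lbl_def by simp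
      have IT: "Inv x0 A Lbl TT" using inv_path[OF x0 c1 c2 c3 I0 path] .
      have tl: "tt \<noteq> ?l"
      proof
        assume "tt = ?l"
        then show False using IT TT_props unfolding Inv_def A_def by simp
      qed
      obtain m1 where m1: "m1 \<in> Lbl" "good ?l m1 tt" using IT TT_props tl unfolding Inv_def by auto
      have "m1 = ?\<rho>" using good_unique[OF l m1(2) rho_good[OF l tl]] .
      then have "m0 = ?\<rho>" using m1(1) unfolding Lbl_def by simp
      then show ?thesis using goalLf \<open>qs ! ?l ! ?r ! i = Lf m0\<close> by simp
    qed
  qed
qed

lemma KEY:
  assumes x0: "x0 < length \<sigma>"
  shows "dir q 0 x0 = dir (qs ! (\<sigma> ! x0)) (dir p 0 (\<sigma> ! x0)) (rank \<sigma> x0)"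
proof -
  have "leads q 0 x0 = leads (qs ! (\<sigma> ! x0)) (dir p 0 (\<sigma> ! x0)) (rank \<sigma> x0)"
    using lift[OF x0] project[OF x0] by blast
  then show ?thesis
    unfolding dir_def[of q 0 x0] dir_def[of "qs ! (\<sigma> ! x0)" "dir p 0 (\<sigma> ! x0)" "rank \<sigma> x0"] by auto
qed

end

definition Rt :: "og \<Rightarrow> og" where
  "Rt G = PG (\<lambda>v. fw (dir G 0 v)) (\<lambda>v. bw (dir G 0 v)) G"

lemma dir_bound: "i < length (G ! v) \<Longrightarrow> dir G k v < length (G ! v)"
proof -
  assume i: "i < length (G ! v)"
  show ?thesis
  proof (cases "\<exists>i. leads G k v i")
    case True
    then have "leads G k v (LEAST i. leads G k v i)" by (rule LeastI_ex)
    then show ?thesis using True unfolding dir_def leads_def by simp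
  next
    case False
    then have "dir G k v = 0" unfolding dir_def by auto
    then show ?thesis using i by linarith
  qed
qed

lemma isperm_Rt: "isperm (\<lambda>v. fw (dir G 0 v)) (\<lambda>v. bw (dir G 0 v)) G"
  unfolding isperm_def using dir_bound fw_lt bw_lt by simp

lemma leaf_at_relabel_bw: "leaf_at (relabelF (bw \<rho>) G) 0 = leaf_at G \<rho>"
proof -
  have "(\<lambda>h. h \<in> half_edges (relabelF (bw \<rho>) G) \<and> hend_at (relabelF (bw \<rho>) G) h = Lf 0)
      = (\<lambda>h. h \<in> half_edges G \<and> hend_at G h = Lf \<rho>)"
  proof (rule ext)
    fix h :: "nat \<times> nat"
    obtain v i where h: "h = (v, i)" by (cases h)
    show "(h \<in> half_edges (relabelF (bw \<rho>) G) \<and> hend_at (relabelF (bw \<rho>) G) h = Lf 0)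
      = (h \<in> half_edges G \<and> hend_at G h = Lf \<rho>)"
    proof (cases "v < length G \<and> i < length (G ! v)")
      case True
      then show ?thesis using h relabelF_Lf[of v G i "bw \<rho>" 0] bw_eq0 by auto
    next
      case False then show ?thesis using h by auto
    qed
  qed
  then show ?thesis unfolding leaf_at_def by simp
qed

lemma leads_relabel:
  assumes v: "v < length G"
  shows "leads (relabelF (bw \<rho>) G) 0 v = leads G \<rho> v"
proof (rule ext)
  fix i
  show "leads (relabelF (bw \<rho>) G) 0 v i = leads G \<rho> v i"
  proof (cases "i < length (G ! v)")
    case True
    have a: "(relabelF (bw \<rho>) G ! v ! i = Lf 0) = (G ! v ! i = Lf \<rho>)"
      using relabelF_Lf[OF v True, of "bw \<rho>" 0] bw_eq0 by auto
    have b: "\<And>w j. (relabelF (bw \<rho>) G ! v ! i = Ed w j) = (G ! v ! i = Ed w j)"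
      using relabelF_Ed[OF v True] .
    show ?thesis unfolding leads_def using a b v True leaf_at_relabel_bw by simp
  next
    case False then show ?thesis unfolding leads_def using v by simp
  qed
qed

lemma dir_relabel: assumes "v < length G" shows "dir (relabelF (bw \<rho>) G) 0 v = dir G \<rho> v"
  unfolding dir_def using leads_relabel[OF assms] by auto

context SB
begin

definition Gqs :: "og list" where
  "Gqs = map (\<lambda>l. Rt (relabelF (bw (dir p 0 l)) (qs ! l))) [0..<length p]"

lemma KEY2:
  assumes x0: "x0 < length \<sigma>"
  shows "dir q 0 x0 = dir (relabelF (bw (dir p 0 (\<sigma> ! x0))) (qs ! (\<sigma> ! x0))) 0 (rank \<sigma> x0)"
  using KEY[OF x0] dir_relabel[OF rank_lt'[OF x0]] by simp


lemma G'_props: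
  assumes l: "l < length p"
  shows "cyc_tree (relabelF (bw (dir p 0 l)) (qs ! l))" "wf_og (relabelF (bw (dir p 0 l)) (qs ! l))"
    "inj_on (bw (dir p 0 l)) {..<num_leaves (qs ! l)}" "bw (dir p 0 l) ` {..<num_leaves (qs ! l)} = {..<num_leaves (qs ! l)}"
proof -
  have r: "dir p 0 l < num_leaves (qs ! l)" using rho_facts(2)[OF l] nl[OF l] by simp
  show i: "inj_on (bw (dir p 0 l)) {..<num_leaves (qs ! l)}" by (rule bw_inj)
  show s: "bw (dir p 0 l) ` {..<num_leaves (qs ! l)} = {..<num_leaves (qs ! l)}" by (rule bw_img[OF r])
  show c: "cyc_tree (relabelF (bw (dir p 0 l)) (qs ! l))" by (rule cyc_tree_relabelF[OF cq[OF l] i s])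
  show "wf_og (relabelF (bw (dir p 0 l)) (qs ! l))" using cyc_tree_D(2)[OF c] .
qed

lemma Gqs_nth: "l < length p \<Longrightarrow> Gqs ! l = Rt (relabelF (bw (dir p 0 l)) (qs ! l))"
  by (simp add: Gqs_def)

lemma master: "Rt q = subst (Rt p) Gqs \<sigma>"
proof (rule nth_equalityI)
  show "length (Rt q) = length (subst (Rt p) Gqs \<sigma>)" by (simp add: Rt_def)
next
  fix x assume "x < length (Rt q)"
  then have x: "x < length \<sigma>" by (simp add: Rt_def)
  let ?l = "\<sigma> ! x" and ?r = "rank \<sigma> x"
  let ?\<rho> = "dir p 0 ?l"
  let ?G = "relabelF (bw ?\<rho>) (qs ! ?l)"
  have l: "?l < length p" and r: "?r < length (qs ! ?l)" using sig_lt[OF x] rank_lt'[OF x] .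
  note GP = G'_props[OF l]
  let ?\<delta> = "dir q 0 x"
  have \<delta>: "?\<delta> = dir ?G 0 ?r" using KEY2[OF x] .
  let ?d = "length (qs ! ?l ! ?r)"
  have lenq: "length (q ! x) = ?d" using Q_len2[OF x] .
  have Rq: "Rt q ! x = map (\<lambda>i. renE (\<lambda>v. bw (dir q 0 v)) (q ! x ! fw ?\<delta> i)) [0..<?d]"
    using x lenq by (simp add: Rt_def PG_def)
  have RG: "Rt ?G ! ?r = map (\<lambda>i. renE (\<lambda>v. bw (dir ?G 0 v)) (?G ! ?r ! fw (dir ?G 0 ?r) i)) [0..<?d]"
    using r by (simp add: Rt_def PG_def)
  have Rs: "subst (Rt p) Gqs \<sigma> ! x = map (tr_hend (Rt p) Gqs \<sigma> ?l) (Rt ?G ! ?r)"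
    using subst_nth[OF x] Gqs_nth[OF l] by simp
  show "Rt q ! x = subst (Rt p) Gqs \<sigma> ! x"
  proof (rule nth_equalityI)
    show "length (Rt q ! x) = length (subst (Rt p) Gqs \<sigma> ! x)" using Rq Rs RG by simp
  next
    fix i assume "i < length (Rt q ! x)"
    then have i: "i < ?d" using Rq by simp
    have "?\<delta> < ?d" using dir_bound[of i q x 0] i lenq by simp
    then have fi: "fw ?\<delta> i < ?d" using fw_lt i by blast
    let ?e = "qs ! ?l ! ?r ! fw ?\<delta> i"
    have L: "Rt q ! x ! i = renE (\<lambda>v. bw (dir q 0 v)) (tr_hend p qs \<sigma> ?l ?e)"
      using Rq i Q_at[OF x] fi lenq by simp
    have R: "subst (Rt p) Gqs \<sigma> ! x ! i = tr_hend (Rt p) Gqs \<sigma> ?l (renE (\<lambda>v. bw (dir ?G 0 v)) (relE (bw ?\<rho>) ?e))"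
      using Rs RG i fi \<delta> r relabelF_nth[OF r fi] by simp
    show "Rt q ! x ! i = subst (Rt p) Gqs \<sigma> ! x ! i"
    proof (cases ?e)
      case (Ed w j)
      have w: "w < length (qs ! ?l)" using ed_lt[OF l r fi Ed] by simp
      note pw = pos_p[OF l w]
      have "dir q 0 (pos \<sigma> ?l w) = dir ?G 0 w" using KEY2[OF pw(1)] pw by simp
      then show ?thesis using L R Ed by simp
    next
      case (Lf m)
      have m: "m < length (p ! ?l)" using lbl_lt[OF l r fi Lf] .
      have \<rho>: "?\<rho> < length (p ! ?l)" using rho_facts(2)[OF l] .
      have bm: "bw ?\<rho> m < length (p ! ?l)" using bw_lt[OF \<rho> m] .
      have Rp: "Rt p ! ?l ! bw ?\<rho> m = renE (\<lambda>v. bw (dir p 0 v)) (p ! ?l ! m)"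
        using PG_nth[OF l bm, of "\<lambda>v. fw (dir p 0 v)" "\<lambda>v. bw (dir p 0 v)"] unfolding Rt_def by simp
      show ?thesis
      proof (cases "p ! ?l ! m")
        case (Lf k)
        have "tr_hend p qs \<sigma> ?l ?e = Lf k" using \<open>?e = Lf m\<close> tr_hend_Lf_Lf[OF Lf] by simp
        moreover have "tr_hend (Rt p) Gqs \<sigma> ?l (Lf (bw ?\<rho> m)) = Lf k"
          using tr_hend_Lf_Lf[of "Rt p" ?l "bw ?\<rho> m" k] Rp Lf by simp
        ultimately show ?thesis using L R \<open>?e = Lf m\<close> by simp
      next
        case (Ed l' i')
        have pw: "l' < length p" "i' < length (p ! l')" using wf_partner[OF wfp l m Ed] by blast+
        note lp = leafq_props[OF pw]
        let ?a = "fst (leaf_at (qs ! l') i')" and ?b = "snd (leaf_at (qs ! l') i')"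
        let ?\<rho>' = "dir p 0 l'"
        let ?G' = "relabelF (bw ?\<rho>') (qs ! l')"
        note GP' = G'_props[OF pw(1)]
        have lL: "tr_hend p qs \<sigma> ?l ?e = Ed (pos \<sigma> l' ?a) ?b" using \<open>?e = Lf m\<close> tr_hend_Lf_Ed[OF Ed] by simp
        have i'N: "i' < num_leaves (qs ! l')" using pw(2) nl[OF pw(1)] by simp
        have "leaf_at ?G' (bw ?\<rho>' i') = leaf_at (qs ! l') i'"
          using leaf_at_relabelF[OF wfq[OF pw(1)] GP'(3,4) i'N] .
        moreover have "bw ?\<rho>' i' < num_leaves ?G'" using bw_lt[OF _ i'N] rho_facts(2)[OF pw(1)] nl[OF pw(1)] by simp
        ultimately have la: "leaf_at (Rt ?G') (bw ?\<rho>' i') = (?a, bw (dir ?G' 0 ?a) ?b)"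
          using leaf_at_PG[OF isperm_Rt GP'(2), of "bw ?\<rho>' i'"] unfolding Rt_def by simp
        have Rp2: "Rt p ! ?l ! bw ?\<rho> m = Ed l' (bw ?\<rho>' i')" using Rp Ed by simp
        have rR: "tr_hend (Rt p) Gqs \<sigma> ?l (Lf (bw ?\<rho> m)) = Ed (pos \<sigma> l' ?a) (bw (dir ?G' 0 ?a) ?b)"
          using tr_hend_Lf_Ed[OF Rp2, of Gqs \<sigma>] Gqs_nth[OF pw(1)] la by simp
        note pa = pos_p[OF pw(1) lp(1)]
        have "dir q 0 (pos \<sigma> l' ?a) = dir ?G' 0 ?a" using KEY2[OF pa(1)] pa by simp
        then show ?thesis using L R \<open>?e = Lf m\<close> lL rR by simp
      qed
    qed
  qed
qed

end

lemma Rt_len[simp]: "length (Rt G) = length G"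
  by (simp add: Rt_def)

lemma Rt_len2[simp]: "v < length G \<Longrightarrow> length (Rt G ! v) = length (G ! v)"
  by (simp add: Rt_def)

lemma cyc_tree_Rt: "cyc_tree G \<Longrightarrow> cyc_tree (Rt G)"
  unfolding Rt_def by (rule cyc_tree_PG[OF isperm_Rt])

lemma rooted_Rt:
  assumes T: "cyc_tree G"
  shows "rooted (Rt G)"
proof -
  have tr: "is_tree G" and wf: "wf_og G" and nl0: "0 < num_leaves G" using cyc_tree_D[OF T] by simp_all
  have avR: "av (Rt G) v = av G v" for v unfolding Rt_def by (rule av_PG[OF isperm_Rt])
  have laR: "fst (leaf_at (Rt G) 0) = fst (leaf_at G 0)"
    unfolding Rt_def using leaf_at_PG[OF isperm_Rt wf nl0] by simp
  have "Rt G ! v \<noteq> [] \<and> (Rt G ! v ! 0 = Lf 0 \<or>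
         (\<exists>w j. Rt G ! v ! 0 = Ed w j \<and> (w, fst (leaf_at (Rt G) 0)) \<in> (av (Rt G) v)\<^sup>*))"
    if v: "v < length (Rt G)" for v
  proof -
    have v': "v < length G" using v by simp
    let ?\<delta> = "dir G 0 v"
    have ld: "leads G 0 v ?\<delta>" using dir_leads[OF tr v' nl0] .
    have dl: "?\<delta> < length (G ! v)" using ld unfolding leads_def by (rule conjunct1)
    have ne: "0 < length (G ! v)" using dl by linarith
    have e0: "Rt G ! v ! 0 = renE (\<lambda>w. bw (dir G 0 w)) (G ! v ! ?\<delta>)"
      unfolding Rt_def using PG_nth[OF v' ne] by (simp add: fw_def)
    have d: "G ! v ! ?\<delta> = Lf 0 \<or> (\<exists>w j. G ! v ! ?\<delta> = Ed w j \<and> (w, fst (leaf_at G 0)) \<in> (av G v)\<^sup>*)"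
      using ld unfolding leads_def by (rule conjunct2)
    have "Rt G ! v ! 0 = Lf 0 \<or> (\<exists>w j. Rt G ! v ! 0 = Ed w j \<and> (w, fst (leaf_at (Rt G) 0)) \<in> (av (Rt G) v)\<^sup>*)"
      using d
    proof
      assume "G ! v ! ?\<delta> = Lf 0" then show ?thesis using e0 by simp
    next
      assume "\<exists>w j. G ! v ! ?\<delta> = Ed w j \<and> (w, fst (leaf_at G 0)) \<in> (av G v)\<^sup>*"
      then obtain w j where "G ! v ! ?\<delta> = Ed w j" "(w, fst (leaf_at G 0)) \<in> (av G v)\<^sup>*" by blast
      then show ?thesis using e0 avR laR by simp
    qed
    moreover have "Rt G ! v \<noteq> []" using ne v' by (metis Rt_len2 length_greater_0_conv)
    ultimately show ?thesis by simp
  qed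
  then show ?thesis unfolding rooted_alt using cyc_tree_Rt[OF T] by blast
qed

lemma rooted_dir0:
  assumes R: "rooted G" and v: "v < length G"
  shows "dir G 0 v = 0"
proof -
  have T: "cyc_tree G" using R unfolding rooted_def by blast
  have "G ! v \<noteq> [] \<and> (G ! v ! 0 = Lf 0 \<or> (\<exists>w j. G ! v ! 0 = Ed w j \<and> (w, fst (leaf_at G 0)) \<in> (av G v)\<^sup>*))"
    using R v unfolding rooted_alt by blast
  then have "leads G 0 v 0" unfolding leads_def by simp
  then show ?thesis using dir_eq[OF cyc_tree_D(1)[OF T] v cyc_tree_D(3)[OF T]] by simp
qed

lemma Rt_rooted:
  assumes R: "rooted G"
  shows "Rt G = G"
proof (rule nth_equalityI)
  show "length (Rt G) = length G" by simp
next
  have T: "cyc_tree G" using R unfolding rooted_def by blast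
  have wf: "wf_og G" using cyc_tree_D(2)[OF T] .
  fix v assume "v < length (Rt G)"
  then have v: "v < length G" by simp
  show "Rt G ! v = G ! v"
  proof (rule nth_equalityI)
    show "length (Rt G ! v) = length (G ! v)" using v by simp
  next
    fix i assume "i < length (Rt G ! v)"
    then have i: "i < length (G ! v)" using v by simp
    have "Rt G ! v ! i = renE (\<lambda>w. bw (dir G 0 w)) (G ! v ! i)"
      unfolding Rt_def using PG_nth[OF v i] rooted_dir0[OF R v] by simp
    also have "\<dots> = G ! v ! i"
    proof (cases "G ! v ! i")
      case (Ed w j)
      have "w < length G" using wf_partner[OF wf v i Ed] by blast
      then show ?thesis using Ed rooted_dir0[OF R] by simp
    qed simp
    finally show "Rt G ! v ! i = G ! v ! i" .
  qed
qed

lemma relabelF_bw0: "relabelF (bw 0) G = G"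
proof -
  have "bw 0 = (\<lambda>i. i)" by (rule ext) simp
  then show ?thesis using relabelF_id by simp
qed

definition GQ :: "og \<Rightarrow> og list \<Rightarrow> og list" where
  "GQ a qs = map (\<lambda>l. Rt (relabelF (bw (dir a 0 l)) (qs ! l))) [0..<length a]"

definition Gm :: "opmor \<Rightarrow> opmor" where
  "Gm f = (Rt (fst f), GQ (fst f) (fst (snd f)), fst (snd (snd f)), Rt (snd (snd (snd f))))"

lemma Gm_simp[simp]: "Gm (a, qs, \<sigma>, b) = (Rt a, GQ a qs, \<sigma>, Rt b)"
  by (simp add: Gm_def)

lemma SB_Gqs: "SB p qs \<sigma> \<Longrightarrow> SB.Gqs p qs = GQ p qs"
  by (simp add: SB.Gqs_def GQ_def)

lemma SB_of_valid:
  assumes "valid_subst p qs \<sigma> q" "cyc_tree p"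
  shows "SB p qs \<sigma>"
  using valid_D[OF assms(1)] assms(2) by unfold_locales auto


context SB
begin

lemma relabel_subst: "relabelF s q = subst (relabelF s p) qs \<sigma>"
proof (rule nth_equalityI)
  show "length (relabelF s q) = length (subst (relabelF s p) qs \<sigma>)" by simp
next
  fix x assume "x < length (relabelF s q)"
  then have x: "x < length \<sigma>" by simp
  let ?l = "\<sigma> ! x" and ?r = "rank \<sigma> x"
  have l: "?l < length p" and r: "?r < length (qs ! ?l)" using sig_lt[OF x] rank_lt'[OF x] .
  show "relabelF s q ! x = subst (relabelF s p) qs \<sigma> ! x"
  proof (rule nth_equalityI)
    show "length (relabelF s q ! x) = length (subst (relabelF s p) qs \<sigma> ! x)"
      using x subst_nth[OF x] Q_len2[OF x] by simp
  next
    fix i assume "i < length (relabelF s q ! x)"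
    then have i: "i < length (qs ! ?l ! ?r)" using x Q_len2[OF x] by simp
    have iq: "i < length (q ! x)" using i Q_len2[OF x] by simp
    have L: "relabelF s q ! x ! i = relE s (tr_hend p qs \<sigma> ?l (qs ! ?l ! ?r ! i))"
      using relabelF_nth[of x q i s] x iq Q_at[OF x iq] by simp
    have R: "subst (relabelF s p) qs \<sigma> ! x ! i = tr_hend (relabelF s p) qs \<sigma> ?l (qs ! ?l ! ?r ! i)"
      using subst_nth[OF x] i by simp
    show "relabelF s q ! x ! i = subst (relabelF s p) qs \<sigma> ! x ! i"
    proof (cases "qs ! ?l ! ?r ! i")
      case (Ed w j) then show ?thesis using L R by simp
    next
      case (Lf m)
      have m: "m < length (p ! ?l)" using lbl_lt[OF l r i Lf] .
      have rp: "relabelF s p ! ?l ! m = relE s (p ! ?l ! m)" using relabelF_nth[OF l m] .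
      show ?thesis
      proof (cases "p ! ?l ! m")
        case (Lf k)
        then show ?thesis using L R \<open>qs ! ?l ! ?r ! i = Lf m\<close> rp tr_hend_Lf_Lf by simp
      next
        case (Ed l' i')
        then show ?thesis using L R \<open>qs ! ?l ! ?r ! i = Lf m\<close> rp tr_hend_Lf_Ed by simp
      qed
    qed
  qed
qed

lemma SB_relabel:
  assumes "cyc_tree (relabelF s p)"
  shows "SB (relabelF s p) qs \<sigma>"
  using assms lqs cq nl s\<sigma> cnt by unfold_locales simp_all

end

lemma comp_count:
  assumes st: "set \<tau> \<subseteq> {..<length \<sigma>}" and r: "r < length (filter (\<lambda>y. \<sigma> ! y = l) [0..<length \<sigma>])"
  shows "length (filter (\<lambda>y. y = r) (map (rank \<sigma>) (filter (\<lambda>y. \<sigma> ! y = l) \<tau>)))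
       = length (filter (\<lambda>y. y = pos \<sigma> l r) \<tau>)"
proof -
  have "filter (\<lambda>y. y = r) (map (rank \<sigma>) (filter (\<lambda>y. \<sigma> ! y = l) \<tau>))
      = map (rank \<sigma>) (filter (\<lambda>y. rank \<sigma> y = r) (filter (\<lambda>y. \<sigma> ! y = l) \<tau>))"
    by (simp add: filter_map o_def)
  also have "filter (\<lambda>y. rank \<sigma> y = r) (filter (\<lambda>y. \<sigma> ! y = l) \<tau>) = filter (\<lambda>y. \<sigma> ! y = l \<and> rank \<sigma> y = r) \<tau>"
    by (simp add: conj_commute)
  also have "\<dots> = filter (\<lambda>y. y = pos \<sigma> l r) \<tau>"
  proof (rule filter_cong[OF refl])
    fix y assume "y \<in> set \<tau>"
    then have y: "y < length \<sigma>" using st by auto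
    note pp = pos_props[OF r]
    show "(\<sigma> ! y = l \<and> rank \<sigma> y = r) = (y = pos \<sigma> l r)"
      using pos_rank[OF y] pp by auto
  qed
  finally show ?thesis by simp
qed


lemma Gm_hom:
  assumes V: "valid_subst a qs \<sigma> b" and Ta: "cyc_tree a"
  shows "valid_subst (Rt a) (GQ a qs) \<sigma> (Rt b)" "\<And>l. l < length (Rt a) \<Longrightarrow> rooted (GQ a qs ! l)"
proof -
  interpret SB a qs \<sigma> by (rule SB_of_valid[OF V Ta])
  note D = valid_D[OF V]
  have GQl: "GQ a qs ! l = Rt (relabelF (bw (dir a 0 l)) (qs ! l))" if "l < length a" for l
    using that by (simp add: GQ_def)
  show "valid_subst (Rt a) (GQ a qs) \<sigma> (Rt b)"
    unfolding valid_subst_def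
  proof (intro conjI allI impI)
    show "length (GQ a qs) = length (Rt a)" by (simp add: GQ_def)
  next
    fix l assume "l < length (Rt a)"
    then have l: "l < length a" by simp
    note GP = G'_props[OF l]
    show "cyc_tree (GQ a qs ! l)" using GQl[OF l] cyc_tree_Rt[OF GP(1)] by simp
    show "GQ a qs ! l \<noteq> []" using GQl[OF l] D(5)[OF l] by (simp add: Rt_def PG_def)
    have "num_leaves (GQ a qs ! l) = num_leaves (relabelF (bw (dir a 0 l)) (qs ! l))"
      using GQl[OF l] num_leaves_PG[OF isperm_Rt] unfolding Rt_def by simp
    then show "num_leaves (GQ a qs ! l) = length (Rt a ! l)" using nl[OF l] l by simp
  next
    show "set \<sigma> \<subseteq> {..<length (Rt a)}" using D(3) by simp
  next
    fix l assume "l < length (Rt a)"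
    then have l: "l < length a" by simp
    have "length (GQ a qs ! l) = length (qs ! l)" using GQl[OF l] by (simp add: Rt_def PG_def)
    then show "length (filter (\<lambda>y. y = l) \<sigma>) = length (GQ a qs ! l)" using D(7)[OF l] count_eq[of \<sigma> l] by simp
  next
    show "subst (Rt a) (GQ a qs) \<sigma> = Rt b" using master D(2) SB_Gqs[OF SB_axioms] by simp
  qed
  fix l assume "l < length (Rt a)"
  then have l: "l < length a" by simp
  show "rooted (GQ a qs ! l)" using GQl[OF l] rooted_Rt[OF G'_props(1)[OF l]] by simp
qed


lemma Gm_comp:
  assumes Vf: "valid_subst a qs \<sigma> b" and Vg: "valid_subst b rs \<tau> c" and Ta: "cyc_tree a"
  shows "Gm (op_comp (b, rs, \<tau>, c) (a, qs, \<sigma>, b)) = op_comp (Gm (b, rs, \<tau>, c)) (Gm (a, qs, \<sigma>, b))"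
proof -
  interpret SB a qs \<sigma> by (rule SB_of_valid[OF Vf Ta])
  note Df = valid_D[OF Vf] and Dg = valid_D[OF Vg]
  have lb: "length b = length \<sigma>" using Df(2) by auto
  define \<tau>l where "\<tau>l l = map (rank \<sigma>) (filter (\<lambda>y. \<sigma> ! y = l) \<tau>)" for l
  define RS where "RS l = map (\<lambda>r. rs ! pos \<sigma> l r) [0..<length (qs ! l)]" for l
  have st: "set \<tau> \<subseteq> {..<length \<sigma>}" using Dg(3) lb by simp
  have key: "Rt (relabelF (bw (dir a 0 l)) (subst (qs ! l) (RS l) (\<tau>l l)))
      = subst (GQ a qs ! l) (map (\<lambda>r. GQ b rs ! pos \<sigma> l r) [0..<length (GQ a qs ! l)]) (\<tau>l l)"
    if l: "l < length a" for l
  proof -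
    note GP = G'_props[OF l]
    let ?G = "relabelF (bw (dir a 0 l)) (qs ! l)"
    have pl: "pos \<sigma> l r < length \<sigma>" "\<sigma> ! pos \<sigma> l r = l" "rank \<sigma> (pos \<sigma> l r) = r"
      if "r < length (qs ! l)" for r using pos_p[OF l that] by simp_all
    have RSr: "RS l ! r = rs ! pos \<sigma> l r" if "r < length (qs ! l)" for r using that by (simp add: RS_def)
    have SBl: "SB (qs ! l) (RS l) (\<tau>l l)"
    proof (unfold_locales)
      show "cyc_tree (qs ! l)" using Df(4)[OF l] .
      show "length (RS l) = length (qs ! l)" by (simp add: RS_def)
    next
      fix r assume r: "r < length (qs ! l)"
      have pb: "pos \<sigma> l r < length b" using pl(1)[OF r] lb by simp
      show "cyc_tree (RS l ! r)" using RSr[OF r] Dg(4)[OF pb] by simp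
      have "length (b ! pos \<sigma> l r) = length (qs ! l ! r)"
        using Q_len2[OF pl(1)[OF r]] pl(2,3)[OF r] Df(2) by simp
      then show "num_leaves (RS l ! r) = length (qs ! l ! r)" using RSr[OF r] Dg(6)[OF pb] by simp
      have "length (filter (\<lambda>y. \<tau>l l ! y = r) [0..<length (\<tau>l l)]) = length (filter (\<lambda>y. y = r) (\<tau>l l))"
        by (rule count_eq)
      also have "\<dots> = length (filter (\<lambda>y. y = pos \<sigma> l r) \<tau>)"
        unfolding \<tau>l_def using comp_count[OF st] r cnt[OF l] by simp
      also have "\<dots> = length (filter (\<lambda>y. \<tau> ! y = pos \<sigma> l r) [0..<length \<tau>])" by (rule count_eq[symmetric])
      also have "\<dots> = length (rs ! pos \<sigma> l r)" using Dg(7)[OF pb] .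
      finally show "length (filter (\<lambda>y. \<tau>l l ! y = r) [0..<length (\<tau>l l)]) = length (RS l ! r)"
        using RSr[OF r] by simp
    next
      show "set (\<tau>l l) \<subseteq> {..<length (qs ! l)}"
      proof
        fix z assume "z \<in> set (\<tau>l l)"
        then obtain y where y: "y \<in> set \<tau>" "\<sigma> ! y = l" "z = rank \<sigma> y" unfolding \<tau>l_def by auto
        have "y < length \<sigma>" using y(1) st by auto
        then show "z \<in> {..<length (qs ! l)}" using rank_lt'[of y] y by simp
      qed
    qed
    interpret L: SB "qs ! l" "RS l" "\<tau>l l" by (rule SBl)
    have r1: "relabelF (bw (dir a 0 l)) (subst (qs ! l) (RS l) (\<tau>l l)) = subst ?G (RS l) (\<tau>l l)"
      by (rule L.relabel_subst)
    interpret L2: SB ?G "RS l" "\<tau>l l" by (rule L.SB_relabel[OF GP(1)])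
    have r2: "Rt (subst ?G (RS l) (\<tau>l l)) = subst (Rt ?G) (GQ ?G (RS l)) (\<tau>l l)"
      using L2.master SB_Gqs[OF L2.SB_axioms] by simp
    have r3: "GQ ?G (RS l) = map (\<lambda>r. GQ b rs ! pos \<sigma> l r) [0..<length (GQ a qs ! l)]"
    proof (rule nth_equalityI)
      show "length (GQ ?G (RS l)) = length (map (\<lambda>r. GQ b rs ! pos \<sigma> l r) [0..<length (GQ a qs ! l)])"
        using l by (simp add: GQ_def Rt_def PG_def)
    next
      fix r assume "r < length (GQ ?G (RS l))"
      then have r: "r < length (qs ! l)" by (simp add: GQ_def)
      have pb: "pos \<sigma> l r < length b" using pl(1)[OF r] lb by simp
      have "dir q 0 (pos \<sigma> l r) = dir ?G 0 r" using KEY2[OF pl(1)[OF r]] pl(2,3)[OF r] by simp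
      then have dd: "dir b 0 (pos \<sigma> l r) = dir ?G 0 r" using Df(2) by simp
      have lGa: "length (GQ a qs ! l) = length (qs ! l)" using l by (simp add: GQ_def Rt_def PG_def)
      show "GQ ?G (RS l) ! r = map (\<lambda>r. GQ b rs ! pos \<sigma> l r) [0..<length (GQ a qs ! l)] ! r"
        using r lGa RSr[OF r] pb dd l by (simp add: GQ_def)
    qed
    have r4: "GQ a qs ! l = Rt ?G" using l by (simp add: GQ_def)
    show ?thesis using r1 r2 r3 r4 by simp
  qed
  have e1: "GQ a (map (\<lambda>l. subst (qs ! l) (map (\<lambda>r. rs ! pos \<sigma> l r) [0..<length (qs ! l)])
              (map (rank \<sigma>) (filter (\<lambda>y. \<sigma> ! y = l) \<tau>))) [0..<length a])
     = map (\<lambda>l. subst (GQ a qs ! l) (map (\<lambda>r. GQ b rs ! pos \<sigma> l r) [0..<length (GQ a qs ! l)])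
              (map (rank \<sigma>) (filter (\<lambda>y. \<sigma> ! y = l) \<tau>))) [0..<length (Rt a)]"
  proof (rule nth_equalityI)
    fix l assume "l < length (GQ a (map (\<lambda>l. subst (qs ! l) (map (\<lambda>r. rs ! pos \<sigma> l r) [0..<length (qs ! l)])
              (map (rank \<sigma>) (filter (\<lambda>y. \<sigma> ! y = l) \<tau>))) [0..<length a]))"
    then have l: "l < length a" by (simp add: GQ_def)
    show "GQ a (map (\<lambda>l. subst (qs ! l) (map (\<lambda>r. rs ! pos \<sigma> l r) [0..<length (qs ! l)])
              (map (rank \<sigma>) (filter (\<lambda>y. \<sigma> ! y = l) \<tau>))) [0..<length a]) ! l
     = map (\<lambda>l. subst (GQ a qs ! l) (map (\<lambda>r. GQ b rs ! pos \<sigma> l r) [0..<length (GQ a qs ! l)])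
              (map (rank \<sigma>) (filter (\<lambda>y. \<sigma> ! y = l) \<tau>))) [0..<length (Rt a)] ! l"
      using key[OF l] l unfolding \<tau>l_def RS_def by (simp add: GQ_def)
  qed (simp add: GQ_def)
  show ?thesis using e1 by simp
qed

lemma fw_inj: "inj_on (fw \<rho>) A"
  by (rule inj_onI) (metis bw_fw)

lemma fw_img: "\<rho> < d \<Longrightarrow> fw \<rho> ` {..<d} = {..<d}"
proof (intro set_eqI iffI)
  fix x assume "\<rho> < d" "x \<in> fw \<rho> ` {..<d}" then show "x \<in> {..<d}" using fw_lt by auto
next
  fix x assume r: "\<rho> < d" "x \<in> {..<d}"
  then have "bw \<rho> x < d" using bw_lt by simp
  moreover have "x = fw \<rho> (bw \<rho> x)" by simp
  ultimately show "x \<in> fw \<rho> ` {..<d}" by blast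
qed

lemma cyc_tree_PT_bw: "\<rho> < d \<Longrightarrow> cyc_tree (PT (bw \<rho>) d)"
  by (rule cyc_tree_PT) (simp_all add: bw_inj bw_img)

lemma cyc_tree_PT_fw: "\<rho> < d \<Longrightarrow> cyc_tree (PT (fw \<rho>) d)"
  by (rule cyc_tree_PT) (simp_all add: fw_inj fw_img)

lemma num_leaves_PT: "num_leaves (PT s d) = d"
  by (simp add: PT_relabel)

lemma PT_comp: assumes "\<And>i. i < d \<Longrightarrow> s (t i) = i" shows "relabelF s (PT t d) = corolla d"
  using assms by (simp add: PT_def relabelF_def corolla_def)

lemma Rt_relcor:
  assumes r: "\<rho> < d"
  shows "Rt (relabelF (bw \<rho>) (corolla d)) = corolla d"
proof -
  let ?P = "PT (bw \<rho>) d"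
  have P: "relabelF (bw \<rho>) (corolla d) = ?P" by (simp add: PT_relabel)
  have T: "cyc_tree ?P" using cyc_tree_PT_bw[OF r] .
  have "leads ?P 0 0 \<rho>" unfolding leads_def using r by (simp add: PT_nth bw_eq0)
  then have d: "dir ?P 0 0 = \<rho>" using dir_eq[OF cyc_tree_D(1)[OF T] _ cyc_tree_D(3)[OF T]] by simp
  have "Rt ?P = corolla d"
  proof (rule nth_equalityI)
    show "length (Rt ?P) = length (corolla d)" by simp
  next
    fix v assume "v < length (Rt ?P)"
    then have v: "v = 0" by simp
    show "Rt ?P ! v = corolla d ! v"
    proof (rule nth_equalityI)
      show "length (Rt ?P ! v) = length (corolla d ! v)" using v by (simp add: corolla_def)
    next
      fix i assume "i < length (Rt ?P ! v)"
      then have i: "i < d" using v by simp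
      have "Rt ?P ! 0 ! i = renE (\<lambda>w. bw (dir ?P 0 w)) (?P ! 0 ! fw \<rho> i)"
        unfolding Rt_def using PG_nth[of 0 ?P i] i d by simp
      also have "\<dots> = Lf i" using PT_nth[OF fw_lt[OF r i]] by simp
      finally show "Rt ?P ! v ! i = corolla d ! v ! i" using v i by (simp add: corolla_def)
    qed
  qed
  then show ?thesis using P by simp
qed

lemma Gm_ident:
  assumes T: "cyc_tree a"
  shows "Gm (op_ident a) = op_ident (Rt a)"
proof -
  have "GQ a (map (\<lambda>row. corolla (length row)) a) = map (\<lambda>row. corolla (length row)) (Rt a)"
  proof (rule nth_equalityI)
    show "length (GQ a (map (\<lambda>row. corolla (length row)) a)) = length (map (\<lambda>row. corolla (length row)) (Rt a))"
      by (simp add: GQ_def)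
  next
    fix l assume "l < length (GQ a (map (\<lambda>row. corolla (length row)) a))"
    then have l: "l < length a" by (simp add: GQ_def)
    have r: "dir a 0 l < length (a ! l)" using dir_lt[OF cyc_tree_D(1)[OF T] l cyc_tree_D(3)[OF T]] .
    show "GQ a (map (\<lambda>row. corolla (length row)) a) ! l = map (\<lambda>row. corolla (length row)) (Rt a) ! l"
      using l Rt_relcor[OF r] by (simp add: GQ_def)
  qed
  then show ?thesis unfolding op_ident_def by simp
qed


lemma filter_upt_single: "l < n \<Longrightarrow> filter (\<lambda>y. y = l) [0..<n] = [l]"
proof -
  assume l: "l < n"
  have "[0..<n] = [0..<l] @ l # [Suc l..<n]"
  proof -
    have "[0..<l + (n - l)] = [0..<l] @ [l..<l + (n - l)]" by (rule upt_add_eq_append) simp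
    then show ?thesis using l upt_conv_Cons[OF l] by simp
  qed
  then show ?thesis by (auto simp: filter_empty_conv)
qed

lemma filter_upt_single': "l < n \<Longrightarrow> filter (\<lambda>y. [0..<n] ! y = l) [0..<n] = [l]"
proof -
  assume l: "l < n"
  have "filter (\<lambda>y. [0..<n] ! y = l) [0..<n] = filter (\<lambda>y. y = l) [0..<n]" by (rule filter_cong) auto
  then show ?thesis using filter_upt_single[OF l] by simp
qed

lemma map_nth_upt: "set \<sigma> \<subseteq> {..<n} \<Longrightarrow> map ((!) [0..<n]) \<sigma> = \<sigma>"
  by (rule nth_equalityI) (auto simp: subset_iff)

lemma comp_PT:
  assumes n: "length X = n" "length E1 = n"
    and e1: "\<And>l. l < n \<Longrightarrow> E1 ! l = PT (s l) (d l)" and e2: "\<And>l. l < n \<Longrightarrow> E2 ! l = PT (t l) (d l)"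
    and st: "\<And>l i. l < n \<Longrightarrow> i < d l \<Longrightarrow> s l (t l i) = i"
    and cy: "\<And>l. l < n \<Longrightarrow> cyc_tree (PT (t l) (d l))"
  shows "op_comp (Y, E2, [0..<n], Z) (X, E1, [0..<n], Y) = (X, map (\<lambda>l. corolla (d l)) [0..<n], [0..<n], Z)"
proof -
  have comp: "subst (E1 ! l) (map (\<lambda>r. E2 ! pos [0..<n] l r) [0..<length (E1 ! l)])
      (map (rank [0..<n]) (filter (\<lambda>y. [0..<n] ! y = l) [0..<n])) = corolla (d l)" if l: "l < n" for l
  proof -
    have a: "map (\<lambda>r. E2 ! pos [0..<n] l r) [0..<length (E1 ! l)] = [PT (t l) (d l)]"
      using e1[OF l] e2[OF l] pos_upt[OF l] by simp
    have b: "map (rank [0..<n]) (filter (\<lambda>y. [0..<n] ! y = l) [0..<n]) = replicate (length (PT (t l) (d l))) 0"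
      using filter_upt_single'[OF l] rank_upt[OF l] by simp
    have "subst (PT (s l) (d l)) [PT (t l) (d l)] (replicate (length (PT (t l) (d l))) 0) = relabelF (s l) (PT (t l) (d l))"
      using E3[OF cyc_tree_D(2)[OF cy[OF l]]] num_leaves_PT by simp
    also have "\<dots> = corolla (d l)" using PT_comp st[OF l] by simp
    finally show ?thesis using a b e1[OF l] by simp
  qed
  have "map (\<lambda>l. subst (E1 ! l) (map (\<lambda>r. E2 ! pos [0..<n] l r) [0..<length (E1 ! l)])
      (map (rank [0..<n]) (filter (\<lambda>y. [0..<n] ! y = l) [0..<n]))) [0..<length X] = map (\<lambda>l. corolla (d l)) [0..<n]"
    using comp n(1) by simp
  moreover have "map ((!) [0..<n]) [0..<n] = [0..<n]" by (rule map_nth_upt) auto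
  ultimately show ?thesis by simp
qed

definition Eps :: "og \<Rightarrow> opmor" where
  "Eps a = (Rt a, map (\<lambda>l. PT (bw (dir a 0 l)) (length (a ! l))) [0..<length a], [0..<length a], a)"

definition Epsi :: "og \<Rightarrow> opmor" where
  "Epsi a = (a, map (\<lambda>l. PT (fw (dir a 0 l)) (length (a ! l))) [0..<length a], [0..<length a], Rt a)"

lemma subst_Rt_fwd:
  assumes wf: "wf_og X"
  shows "subst X (map (\<lambda>v. PT (fw (dir X 0 v)) (length (X ! v))) [0..<length X]) [0..<length X] = Rt X"
  unfolding Rt_def using E1[OF wf isperm_Rt] by simp

lemma subst_Rt_back:
  assumes wf: "wf_og X"
  shows "subst (Rt X) (map (\<lambda>v. PT (bw (dir X 0 v)) (length (X ! v))) [0..<length X]) [0..<length X] = X"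
proof -
  have P: "isperm (\<lambda>v. bw (dir X 0 v)) (\<lambda>v. fw (dir X 0 v)) (Rt X)"
    unfolding Rt_def by (rule isperm_swap[OF isperm_Rt])
  have "subst (Rt X) (map (\<lambda>v. PT (bw (dir X 0 v)) (length (Rt X ! v))) [0..<length (Rt X)]) [0..<length (Rt X)]
      = PG (\<lambda>v. bw (dir X 0 v)) (\<lambda>v. fw (dir X 0 v)) (Rt X)"
    by (rule E1[OF wf_PG[OF isperm_Rt wf, folded Rt_def] P])
  also have "\<dots> = X" unfolding Rt_def by (rule PG_PG[OF isperm_Rt wf])
  finally have e: "subst (Rt X) (map (\<lambda>v. PT (bw (dir X 0 v)) (length (Rt X ! v))) [0..<length (Rt X)]) [0..<length (Rt X)] = X" .
  have me: "map (\<lambda>v. PT (bw (dir X 0 v)) (length (Rt X ! v))) [0..<length X] = map (\<lambda>v. PT (bw (dir X 0 v)) (length (X ! v))) [0..<length X]"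
    by (rule map_cong) simp_all
  from e have "subst (Rt X) (map (\<lambda>v. PT (bw (dir X 0 v)) (length (Rt X ! v))) [0..<length X]) [0..<length X] = X"
    by (simp only: Rt_len)
  then show ?thesis unfolding me .
qed

lemma valid_PTs:
  assumes T: "cyc_tree a" and Y: "length Y = length a" "\<And>l. l < length a \<Longrightarrow> length (Y ! l) = length (a ! l)"
    and cy: "\<And>l. l < length a \<Longrightarrow> cyc_tree (E ! l)" and lE: "length E = length a"
    and E: "\<And>l. l < length a \<Longrightarrow> E ! l = PT (s l) (length (a ! l))"
    and S: "subst Y E [0..<length a] = Z"
  shows "valid_subst Y E [0..<length a] Z"
  unfolding valid_subst_def
proof (intro conjI allI impI)
  show "length E = length Y" using lE Y by simp
next
  fix l assume "l < length Y"
  then have l: "l < length a" using Y by simp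
  show "cyc_tree (E ! l)" using cy[OF l] .
  show "E ! l \<noteq> []" using E[OF l] by (simp add: PT_def)
  show "num_leaves (E ! l) = length (Y ! l)" using E[OF l] num_leaves_PT Y(2)[OF l] by simp
next
  show "set [0..<length a] \<subseteq> {..<length Y}" using Y by auto
next
  fix l assume "l < length Y"
  then have l: "l < length a" using Y by simp
  show "length (filter (\<lambda>y. y = l) [0..<length a]) = length (E ! l)"
    using filter_upt_single[OF l] E[OF l] by simp
next
  show "subst Y E [0..<length a] = Z" using S .
qed

lemma Eps_valid:
  assumes T: "cyc_tree a"
  shows "valid_subst (Rt a) (fst (snd (Eps a))) [0..<length a] a"
proof -
  have r: "dir a 0 l < length (a ! l)" if "l < length a" for l
    using dir_lt[OF cyc_tree_D(1)[OF T] that cyc_tree_D(3)[OF T]] .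
  show ?thesis unfolding Eps_def
    using valid_PTs[OF T, of "Rt a" "map (\<lambda>l. PT (bw (dir a 0 l)) (length (a ! l))) [0..<length a]" "\<lambda>l. bw (dir a 0 l)" a]
      cyc_tree_PT_bw[OF r] subst_Rt_back[OF cyc_tree_D(2)[OF T]] by simp
qed

lemma Epsi_valid:
  assumes T: "cyc_tree a"
  shows "valid_subst a (fst (snd (Epsi a))) [0..<length a] (Rt a)"
proof -
  have r: "dir a 0 l < length (a ! l)" if "l < length a" for l
    using dir_lt[OF cyc_tree_D(1)[OF T] that cyc_tree_D(3)[OF T]] .
  show ?thesis unfolding Epsi_def
    using valid_PTs[OF T, of a "map (\<lambda>l. PT (fw (dir a 0 l)) (length (a ! l))) [0..<length a]" "\<lambda>l. fw (dir a 0 l)" "Rt a"]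
      cyc_tree_PT_fw[OF r] subst_Rt_fwd[OF cyc_tree_D(2)[OF T]] by simp
qed

lemma map_corolla_Rt: "map (\<lambda>row. corolla (length row)) (Rt a) = map (\<lambda>l. corolla (length (a ! l))) [0..<length a]"
  by (rule nth_equalityI) simp_all

lemma Eps_inv:
  assumes T: "cyc_tree a"
  shows "op_comp (Epsi a) (Eps a) = op_ident (Rt a)" "op_comp (Eps a) (Epsi a) = op_ident a"
proof -
  have r: "dir a 0 l < length (a ! l)" if "l < length a" for l
    using dir_lt[OF cyc_tree_D(1)[OF T] that cyc_tree_D(3)[OF T]] .
  have "op_comp (a, map (\<lambda>l. PT (fw (dir a 0 l)) (length (a ! l))) [0..<length a], [0..<length a], Rt a)
      (Rt a, map (\<lambda>l. PT (bw (dir a 0 l)) (length (a ! l))) [0..<length a], [0..<length a], a)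
      = (Rt a, map (\<lambda>l. corolla (length (a ! l))) [0..<length a], [0..<length a], Rt a)"
    by (rule comp_PT[where s="\<lambda>l. bw (dir a 0 l)" and t="\<lambda>l. fw (dir a 0 l)" and d="\<lambda>l. length (a ! l)"])
      (simp_all add: cyc_tree_PT_fw r)
  then show "op_comp (Epsi a) (Eps a) = op_ident (Rt a)"
    unfolding Eps_def Epsi_def op_ident_def map_corolla_Rt by simp
  have "op_comp (Rt a, map (\<lambda>l. PT (bw (dir a 0 l)) (length (a ! l))) [0..<length a], [0..<length a], a)
      (a, map (\<lambda>l. PT (fw (dir a 0 l)) (length (a ! l))) [0..<length a], [0..<length a], Rt a)
      = (a, map (\<lambda>l. corolla (length (a ! l))) [0..<length a], [0..<length a], a)"
    by (rule comp_PT[where s="\<lambda>l. fw (dir a 0 l)" and t="\<lambda>l. bw (dir a 0 l)" and d="\<lambda>l. length (a ! l)"])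
      (simp_all add: cyc_tree_PT_bw r)
  then show "op_comp (Eps a) (Epsi a) = op_ident a"
    unfolding Eps_def Epsi_def op_ident_def using map_corolla_eq[of a] by simp
qed


lemma rank_filter_rep:
  assumes st: "set \<sigma> \<subseteq> {..<n}" and l: "l < n"
  shows "map (rank [0..<n]) (filter (\<lambda>y. [0..<n] ! y = l) \<sigma>) = replicate (length (filter (\<lambda>y. y = l) \<sigma>)) 0"
proof -
  have fe: "filter (\<lambda>y. [0..<n] ! y = l) \<sigma> = filter (\<lambda>y. y = l) \<sigma>"
    by (rule filter_cong) (use st in auto)
  show ?thesis unfolding fe
  proof (rule nth_equalityI)
    fix k assume k: "k < length (map (rank [0..<n]) (filter (\<lambda>y. y = l) \<sigma>))"
    then have "filter (\<lambda>y. y = l) \<sigma> ! k \<in> set (filter (\<lambda>y. y = l) \<sigma>)" by (intro nth_mem) simp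
    then have "filter (\<lambda>y. y = l) \<sigma> ! k = l" by simp
    then show "map (rank [0..<n]) (filter (\<lambda>y. y = l) \<sigma>) ! k = replicate (length (filter (\<lambda>y. y = l) \<sigma>)) 0 ! k"
      using k rank_upt[OF l] by simp
  qed simp
qed

lemma Eps_nat:
  assumes V: "valid_subst a qs \<sigma> b" and Ta: "cyc_tree a"
  shows "op_comp (Eps b) (Gm (a, qs, \<sigma>, b)) = op_comp (a, qs, \<sigma>, b) (Eps a)"
proof -
  interpret SB a qs \<sigma> by (rule SB_of_valid[OF V Ta])
  note D = valid_D[OF V]
  have lb: "length b = length \<sigma>" using D(2) by auto
  let ?Eb = "map (\<lambda>l. PT (bw (dir b 0 l)) (length (b ! l))) [0..<length b]"
  let ?Ea = "map (\<lambda>l. PT (bw (dir a 0 l)) (length (a ! l))) [0..<length a]"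
  have L: "subst (GQ a qs ! l) (map (\<lambda>r. ?Eb ! pos \<sigma> l r) [0..<length (GQ a qs ! l)])
      (map (rank \<sigma>) (filter (\<lambda>y. \<sigma> ! y = l) [0..<length b])) = relabelF (bw (dir a 0 l)) (qs ! l)"
    if l: "l < length a" for l
  proof -
    let ?G = "relabelF (bw (dir a 0 l)) (qs ! l)"
    note GP = G'_props[OF l]
    have g1: "GQ a qs ! l = Rt ?G" using l by (simp add: GQ_def)
    have g2: "length (GQ a qs ! l) = length ?G" using g1 by simp
    have g3: "map (rank \<sigma>) (filter (\<lambda>y. \<sigma> ! y = l) [0..<length b]) = [0..<length ?G]"
      using rank_map[of \<sigma> l] cnt[OF l] lb by simp
    have g4: "map (\<lambda>r. ?Eb ! pos \<sigma> l r) [0..<length ?G] = map (\<lambda>v. PT (bw (dir ?G 0 v)) (length (?G ! v))) [0..<length ?G]"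
    proof (rule map_cong[OF refl])
      fix r assume "r \<in> set [0..<length ?G]"
      then have r: "r < length (qs ! l)" by simp
      note pp = pos_p[OF l r]
      have pb: "pos \<sigma> l r < length b" using pp(1) lb by simp
      have "dir b 0 (pos \<sigma> l r) = dir ?G 0 r" using KEY2[OF pp(1)] pp D(2) by simp
      moreover have "length (b ! pos \<sigma> l r) = length (?G ! r)" using Q_len2[OF pp(1)] pp D(2) r by simp
      ultimately show "?Eb ! pos \<sigma> l r = PT (bw (dir ?G 0 r)) (length (?G ! r))" using pb by simp
    qed
    show ?thesis unfolding g1 g2[unfolded g1] g3 g4 using subst_Rt_back[OF GP(2)] g2 by simp
  qed
  have R: "subst (?Ea ! l) (map (\<lambda>r. qs ! pos [0..<length a] l r) [0..<length (?Ea ! l)])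
      (map (rank [0..<length a]) (filter (\<lambda>y. [0..<length a] ! y = l) \<sigma>)) = relabelF (bw (dir a 0 l)) (qs ! l)"
    if l: "l < length a" for l
  proof -
    have e1: "map (\<lambda>r. qs ! pos [0..<length a] l r) [0..<length (?Ea ! l)] = [qs ! l]"
      using l pos_upt[OF l] by (simp add: PT_def)
    have e2: "map (rank [0..<length a]) (filter (\<lambda>y. [0..<length a] ! y = l) \<sigma>) = replicate (length (qs ! l)) 0"
      using rank_filter_rep[OF D(3) l] D(7)[OF l] count_eq[of \<sigma> l] by simp
    have "subst (PT (bw (dir a 0 l)) (length (a ! l))) [qs ! l] (replicate (length (qs ! l)) 0) = relabelF (bw (dir a 0 l)) (qs ! l)"
      using E3[OF wfq[OF l]] nl[OF l] by simp
    then show ?thesis using e1 e2 l by simp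
  qed
  have mL: "map (\<lambda>l. subst (GQ a qs ! l) (map (\<lambda>r. ?Eb ! pos \<sigma> l r) [0..<length (GQ a qs ! l)])
      (map (rank \<sigma>) (filter (\<lambda>y. \<sigma> ! y = l) [0..<length b]))) [0..<length (Rt a)]
    = map (\<lambda>l. relabelF (bw (dir a 0 l)) (qs ! l)) [0..<length a]"
    using L by simp
  have mR: "map (\<lambda>l. subst (?Ea ! l) (map (\<lambda>r. qs ! pos [0..<length a] l r) [0..<length (?Ea ! l)])
      (map (rank [0..<length a]) (filter (\<lambda>y. [0..<length a] ! y = l) \<sigma>))) [0..<length (Rt a)]
    = map (\<lambda>l. relabelF (bw (dir a 0 l)) (qs ! l)) [0..<length a]"
    using R by simp
  have s1: "map ((!) \<sigma>) [0..<length b] = \<sigma>" using lb map_nth[of \<sigma>] by simp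
  have s2: "map ((!) [0..<length a]) \<sigma> = \<sigma>" using map_nth_upt[OF D(3)] .
  show ?thesis unfolding Eps_def Gm_simp op_comp.simps using mL mR s1 s2 by simp
qed


lemma rooted_cyc: "rooted G \<Longrightarrow> cyc_tree G"
  unfolding rooted_def by blast

lemma Gm_rooted:
  assumes V: "valid_subst a qs \<sigma> b" and Ra: "rooted a" and Rb: "rooted b" and Rq: "\<And>l. l < length a \<Longrightarrow> rooted (qs ! l)"
  shows "Gm (a, qs, \<sigma>, b) = (a, qs, \<sigma>, b)"
proof -
  note D = valid_D[OF V]
  have "GQ a qs = qs"
  proof (rule nth_equalityI)
    show "length (GQ a qs) = length qs" using D(1) by (simp add: GQ_def)
  next
    fix l assume "l < length (GQ a qs)"
    then have l: "l < length a" by (simp add: GQ_def)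
    show "GQ a qs ! l = qs ! l"
      using l rooted_dir0[OF Ra l] relabelF_bw0 Rt_rooted[OF Rq[OF l]] by (simp add: GQ_def)
  qed
  then show ?thesis using Rt_rooted[OF Ra] Rt_rooted[OF Rb] by simp
qed

lemma rooted_corolla: "1 \<le> d \<Longrightarrow> rooted (corolla d)"
  unfolding rooted_alt using cyc_tree_corolla by (simp add: corolla_def)

lemma hom_nuc: "f \<in> Hom nucOp_op a b \<longleftrightarrow> (\<exists>qs \<sigma>. f = (a, qs, \<sigma>, b) \<and> valid_subst a qs \<sigma> b)"
  unfolding nucOp_op_def by auto

lemma hom_nus: "f \<in> Hom nusOp_op a b \<longleftrightarrow> (\<exists>qs \<sigma>. f = (a, qs, \<sigma>, b) \<and> valid_subst a qs \<sigma> b \<and> (\<forall>l < length a. rooted (qs ! l)))"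
  unfolding nusOp_op_def by auto

lemma cat_simps[simp]:
  "Ob nucOp_op = {p. cyc_tree p \<and> p \<noteq> []}" "Ob nusOp_op = {p. rooted p \<and> p \<noteq> []}"
  "comp nucOp_op = op_comp" "comp nusOp_op = op_comp" "ident nucOp_op = op_ident" "ident nusOp_op = op_ident"
  by (simp_all add: nucOp_op_def nusOp_op_def)

lemma ident_nus:
  assumes R: "rooted a"
  shows "op_ident a \<in> Hom nusOp_op a a"
proof -
  have T: "cyc_tree a" using rooted_cyc[OF R] .
  have "rooted (map (\<lambda>row. corolla (length row)) a ! l)" if l: "l < length a" for l
  proof -
    have "1 \<le> length (a ! l)" using deg_pos[OF T l] by linarith
    then show ?thesis using rooted_corolla l by simp
  qed
  then show ?thesis unfolding hom_nus op_ident_def using ident_valid[OF T] by auto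
qed

lemma ident_nuc:
  assumes T: "cyc_tree a"
  shows "op_ident a \<in> Hom nucOp_op a a"
  unfolding hom_nuc op_ident_def using ident_valid[OF T] by auto

theorem proposition3p11:
  shows "cat_equivalence nusOp_op nucOp_op id id"
proof -
  have F1: "is_functor nusOp_op nucOp_op id id"
    unfolding is_functor_def
  proof (intro conjI ballI)
    fix a assume "a \<in> Ob nusOp_op"
    then show "id a \<in> Ob nucOp_op" using rooted_cyc by simp
  next
    fix a b f assume "a \<in> Ob nusOp_op" "b \<in> Ob nusOp_op" "f \<in> Hom nusOp_op a b"
    then show "id f \<in> Hom nucOp_op (id a) (id b)" unfolding hom_nus hom_nuc by auto
  next
    fix a assume "a \<in> Ob nusOp_op"
    then show "id (ident nusOp_op a) = ident nucOp_op (id a)" by simp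
  next
    fix a b c f g assume "f \<in> Hom nusOp_op a b" "g \<in> Hom nusOp_op b c"
    then show "id (comp nusOp_op g f) = comp nucOp_op (id g) (id f)" by simp
  qed
  have F2: "is_functor nucOp_op nusOp_op Rt Gm"
    unfolding is_functor_def
  proof (intro conjI ballI)
    fix a assume "a \<in> Ob nucOp_op"
    then have "cyc_tree a" "a \<noteq> []" by simp_all
    then show "Rt a \<in> Ob nusOp_op" using rooted_Rt by (simp add: Rt_def PG_def)
  next
    fix a b f assume ab: "a \<in> Ob nucOp_op" "b \<in> Ob nucOp_op" and "f \<in> Hom nucOp_op a b"
    then obtain qs \<sigma> where f: "f = (a, qs, \<sigma>, b)" "valid_subst a qs \<sigma> b" unfolding hom_nuc by blast
    have Ta: "cyc_tree a" using ab by simp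
    show "Gm f \<in> Hom nusOp_op (Rt a) (Rt b)"
      unfolding hom_nus using f Gm_hom[OF f(2) Ta] by simp
  next
    fix a assume "a \<in> Ob nucOp_op"
    then show "Gm (ident nucOp_op a) = ident nusOp_op (Rt a)" using Gm_ident by simp
  next
    fix a b c f g assume a: "a \<in> Ob nucOp_op" and "f \<in> Hom nucOp_op a b" "g \<in> Hom nucOp_op b c"
    then obtain qs \<sigma> rs \<tau> where f: "f = (a, qs, \<sigma>, b)" "valid_subst a qs \<sigma> b"
      and g: "g = (b, rs, \<tau>, c)" "valid_subst b rs \<tau> c" unfolding hom_nuc by blast
    show "Gm (comp nucOp_op g f) = comp nusOp_op (Gm g) (Gm f)"
      using Gm_comp[OF f(2) g(2)] a f(1) g(1) by simp
  qed
  have N1: "nat_iso nusOp_op nusOp_op id id (Rt \<circ> id) (Gm \<circ> id) op_ident"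
    unfolding nat_iso_def
  proof (intro conjI ballI)
    fix a assume "a \<in> Ob nusOp_op"
    then have R: "rooted a" by simp
    have I: "op_ident a \<in> Hom nusOp_op a a" by (rule ident_nus[OF R])
    have V: "valid_subst a (map (\<lambda>row. corolla (length row)) a) [0..<length a] a"
      using ident_valid[OF rooted_cyc[OF R]] .
    have c: "op_comp (op_ident a) (op_ident a) = op_ident a"
      using comp_ident_left[OF V] unfolding op_ident_def by simp
    show "is_iso nusOp_op (id a) ((Rt \<circ> id) a) (op_ident a)"
      unfolding is_iso_def using I c Rt_rooted[OF R] by auto
  next
    fix a b f assume ab: "a \<in> Ob nusOp_op" "b \<in> Ob nusOp_op" and "f \<in> Hom nusOp_op a b"
    then obtain qs \<sigma> where f: "f = (a, qs, \<sigma>, b)" "valid_subst a qs \<sigma> b" "\<forall>l < length a. rooted (qs ! l)"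
      unfolding hom_nus by blast
    have "Gm f = f" using Gm_rooted[OF f(2)] ab f(1,3) by simp
    then show "comp nusOp_op (op_ident b) (id f) = comp nusOp_op ((Gm \<circ> id) f) (op_ident a)"
      using comp_ident_left[OF f(2)] comp_ident_right[OF f(2)] f(1) by simp
  qed
  have N2: "nat_iso nucOp_op nucOp_op (id \<circ> Rt) (id \<circ> Gm) id id Eps"
    unfolding nat_iso_def
  proof (intro conjI ballI)
    fix a assume "a \<in> Ob nucOp_op"
    then have T: "cyc_tree a" by simp
    have E1: "Eps a \<in> Hom nucOp_op (Rt a) a"
      unfolding hom_nuc using Eps_valid[OF T] by (simp add: Eps_def)
    have E2: "Epsi a \<in> Hom nucOp_op a (Rt a)"
      unfolding hom_nuc using Epsi_valid[OF T] by (simp add: Epsi_def)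
    show "is_iso nucOp_op ((id \<circ> Rt) a) (id a) (Eps a)"
      unfolding is_iso_def using E1 E2 Eps_inv[OF T] by auto
  next
    fix a b f assume ab: "a \<in> Ob nucOp_op" "b \<in> Ob nucOp_op" and "f \<in> Hom nucOp_op a b"
    then obtain qs \<sigma> where f: "f = (a, qs, \<sigma>, b)" "valid_subst a qs \<sigma> b" unfolding hom_nuc by blast
    have Ta: "cyc_tree a" using ab by simp
    show "comp nucOp_op (Eps b) ((id \<circ> Gm) f) = comp nucOp_op (id f) (Eps a)"
      using Eps_nat[OF f(2) Ta] f(1) by simp
  qed
  show ?thesis unfolding cat_equivalence_def using F1 F2 N1 N2 by blast
qed

end
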